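(* Let $\langle\mathcal{P},\mathcal{S}\rangle$ be an ADP problem. For a set $\mathcal{J}$ of dependency pairs and an ADP $\alpha=\ell\to\{p_1:r_1,\dots,p_k:r_k\}^m\in\mathcal{P}$ let $\alpha|_{\mathcal{J}}=\ell\to\{p_1:\sharp_{\Phi_1}(r_1),\dots,p_k:\sharp_{\Phi_k}(r_k)\}^m$, where for $1\le j\le k$, $\pi\in\Phi_j$ iff there is a dependency pair $\ell^\sharp\to t^\sharp\in\mathcal{J}$ with $t\trianglelefteq_\sharp^\pi r_j$. Let $\mathcal{P}|_{\mathcal{J}}=\{\alpha|_{\mathcal{J}}\mid\alpha\in\mathcal{P}\}$ and $\mathcal{S}|_{\mathcal{J}}=\{\alpha|_{\mathcal{J}}\mid\alpha\in\mathcal{S}\}$. Then the processor \[\mathrm{Proc}_{\mathtt{DG}}(\langle\mathcal{P},\mathcal{S}\rangle)=(\mathrm{Pol}_0,\{\langle\mathcal{P}|_{\mathcal{J}},\mathcal{S}|_{\mathcal{J}}\rangle\mid\mathcal{J}\text{ is an SCC-prefix of the }\mathcal{P}\text{-dependency graph}\})\] is sound.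
   Context: Annotated dependency pairs (ADPs): over a finite signature $\Sigma$ with fresh annotated copies $f^\sharp$ of the defined symbols, an ADP is $\ell\to\{p_1:r_1,\dots,p_k:r_k\}^m$ with $\ell$ a non-variable unannotated term, $r_j$ possibly annotated, $\mathcal{V}(r_j)\subseteq\mathcal{V}(\ell)$, $0<p_j\le1$, $\sum p_j=1$, flag $m\in\{\mathsf{true},\mathsf{false}\}$. For a set $\mathcal{P}$, defined symbols are roots of left-hand sides; basic terms are $f(t_1,\dots,t_k)$ with $f$ defined and $t_i$ free of defined symbols; $|t|$ term size; $\flat$ removes all annotations; $t^\sharp$ annotates the root; $\sharp_\Phi(t)$ is the term $t$ with exactly the (defined or annotated) symbols at positions in $\Phi$ annotated and all other annotations removed; $\flat^\uparrow_\pi$ removes annotations strictly above $\pi$; $t\trianglelefteq_\sharp^\pi s$ means $s$ has an annotated symbol at $\pi$ and $t=\flat(s|_\pi)$; $t\trianglelefteq_\sharp s$ means this holds for some $\pi$. Rewriting with $\mathcal{P}$ (innermost): at a position $\pi$ with defined or annotated symbol, ADP $\ell\to\{p_j:r_j\}^m\in\mathcal{P}$, $\sigma$ with $\flat(s|_\pi)=\ell\sigma$ whose proper subterms are normal forms: $t_j=s[r_j\sigma]_\pi$ (at: $m=\mathsf{true}$, $\pi$ annotated), $s[\flat(r_j)\sigma]_\pi$ (nt), $\flat^\uparrow_\pi(s[r_j\sigma]_\pi)$ (af), $\flat^\uparrow_\pi(s[\flat(r_j)\sigma]_\pi)$ (nf). A term is in argument normal form w.r.t. $\mathcal{P}$ if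 all its proper subterms are normal forms. $\mathcal{P}$-chain trees: possibly infinite finitely-branching trees with nodes $(p_v:t_v)$, root probability 1, $t_v$ rewriting to $\{\tfrac{p_w}{p_v}:t_w\}_w$ at inner nodes. For $\mathcal{S}\subseteq\mathcal{P}$, $\operatorname{edl}_{\langle\mathcal{P},\mathcal{S}\rangle}(\mathfrak{T})$ sums $p_v$ over inner nodes rewritten by (at)/(af)-steps with ADPs in $\mathcal{S}$; $\operatorname{edh}_{\langle\mathcal{P},\mathcal{S}\rangle}(t)$ = sup over chain trees rooted at $t^\sharp$; $\iota_{\langle\mathcal{P},\mathcal{S}\rangle}=\iota(n\mapsto\sup\{\operatorname{edh}_{\langle\mathcal{P},\mathcal{S}\rangle}(t)\mid t\text{ basic},|t|\le n\})$; complexities $\mathfrak{C}=\{\mathrm{Pol}_0,\mathrm{Pol}_1,\dots,\mathrm{Exp},\mathrm{2\text{-}Exp},\mathrm{Fin},\omega\}$ ordered in that order, $\oplus$ = maximum, $\iota(f)=\mathrm{Pol}_a$ for least $a$ with $f\in O(n^a)$, else $\mathrm{Exp}$ if $f\in O(2^{\mathrm{pol}(n)})$, else $\mathrm{2\text{-}Exp}$ if $f\in O(2^{2^{\mathrm{pol}(n)}})$, else $\mathrm{Fin}$ if $f$ never equals $\omega$, else $\omega$. Dependency graph: $\mathrm{np}(\mathcal{P})=\{\ell\to\flat(r_j)\mid\ell\to\{p_1:r_1,\dots,p_k:r_k\}^{\mathsf{true}}\in\mathcal{P},1\le j\le k\}$ (an ordinary TRS). For an ADP $\alpha=\ell\to\{p_1:r_1,\dots,p_k:r_k\}^m$,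 $\mathrm{dp}(\alpha)=\{\ell^\sharp\to t^\sharp\mid1\le j\le k,t\trianglelefteq_\sharp r_j\}$; $\mathrm{dp}^\bot(\alpha)=\{\ell^\sharp\to\bot\}$ ($\bot$ a fresh symbol) if $\mathrm{dp}(\alpha)=\emptyset$ and $\mathrm{dp}(\alpha)$ otherwise; $\mathrm{dp}(\mathcal{P})=\bigcup_{\alpha\in\mathcal{P}}\mathrm{dp}^\bot(\alpha)$. The $\mathcal{P}$-dependency graph has nodes $\mathrm{dp}(\mathcal{P})$ and an edge from $\ell_1^\sharp\to t_1^\sharp$ to $\ell_2^\sharp\to\dots$ iff there are substitutions $\sigma_1,\sigma_2$ with $t_1^\sharp\sigma_1$ reducing in zero or more innermost $\mathrm{np}(\mathcal{P})$-steps to $\ell_2^\sharp\sigma_2$ and $\ell_1^\sharp\sigma_1,\ell_2^\sharp\sigma_2$ in argument normal form w.r.t. $\mathcal{P}$. An SCC is a maximal set $\mathcal{G}$ of nodes such that for all $\alpha,\alpha'\in\mathcal{G}$ there is a non-empty path from $\alpha$ to $\alpha'$ traversing only nodes of $\mathcal{G}$. A node reaches $\mathcal{G}$ if there is a path of length $\ge0$ to it. $\mathcal{J}\subseteq\mathrm{dp}(\mathcal{P})$ is an SCC-prefix if there is an SCC $\mathcal{G}\subseteq\mathcal{J}$ such that $\mathcal{J}$ is a maximal set in which all elements reach $\mathcal{G}$ and for all $\alpha,\beta\in\mathcal{J}$, $\alpha$ reaches $\beta$ or $\beta$ reaches $\alpha$. ADP problems, proof trees, soundness: ADP problem $\langle\mathcal{P},\mathcal{S}\rangle$,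 $\mathcal{P}$ finite, $\mathcal{S}\subseteq\mathcal{P}$, solved iff $\mathcal{S}=\emptyset$. A processor maps an ADP problem to $(c,\{\langle\mathcal{P}_1,\mathcal{S}_1\rangle,\dots,\langle\mathcal{P}_n,\mathcal{S}_n\rangle\})$, $c\in\mathfrak{C}$. A proof tree is a finite tree with labels $L_{\mathcal{A}}$ (ADP problems), $L_{\mathcal{C}}$ (complexities) where each inner node and its children arise by a processor application and leaves carry $\mathrm{Pol}_0$ if solved, $\omega$ otherwise; it is well formed if for each node $v$ with $L_{\mathcal{A}}(v)=\langle\mathcal{P},\mathcal{S}\rangle$ and root path $v_1,\dots,v_k=v$: $\iota_{\langle\mathcal{P},\mathcal{S}\rangle}\sqsubseteq L_{\mathcal{C}}(v_1)\oplus\dots\oplus L_{\mathcal{C}}(v_{k-1})\oplus\max\{L'_{\mathcal{C}}(w)\mid w$ reachable from $v$, incl. $v\}$ and $\iota_{\langle\mathcal{P},\mathcal{P}\setminus\mathcal{S}\rangle}\sqsubseteq L_{\mathcal{C}}(v_1)\oplus\dots\oplus L_{\mathcal{C}}(v_{k-1})$ ($L'_{\mathcal{C}}=L_{\mathcal{C}}$ on inner nodes, $\iota_{L_{\mathcal{A}}(w)}$ on leaves). A processor with output $(c,\{\langle\mathcal{P}_i,\mathcal{S}_i\rangle\}_{i\le n})$ on $\langle\mathcal{P},\mathcal{S}\rangle$ is sound if for every well-formed proof tree and node $v$ labeled $\langle\mathcal{P},\mathcal{S}\rangle$ with root path $v_1,\dots,v_k=v$: $\iota_{\langle\mathcal{P},\mathcal{S}\rangle}\sqsubseteq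 L_{\mathcal{C}}(v_1)\oplus\dots\oplus L_{\mathcal{C}}(v_{k-1})\oplus c\oplus\iota_{\langle\mathcal{P}_1,\mathcal{S}_1\rangle}\oplus\dots\oplus\iota_{\langle\mathcal{P}_n,\mathcal{S}_n\rangle}$ and $\iota_{\langle\mathcal{P}_i,\mathcal{P}_i\setminus\mathcal{S}_i\rangle}\sqsubseteq L_{\mathcal{C}}(v_1)\oplus\dots\oplus L_{\mathcal{C}}(v_{k-1})\oplus c$ for all $i$. *)

theory Defs
  imports Complex_Main "HOL-Library.Extended_Nonnegative_Real" "HOL-Library.Multiset"
    "HOL-Computational_Algebra.Polynomial"
begin

section \<open>Terms with annotations\<close>

text \<open>Terms over function symbols of type 'f and variables of type 'v.
  The Boolean flag of a function node records whether the symbol is annotated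
  (i.e. is the annotated copy f-sharp of f).\<close>

datatype ('f,'v) aterm = Var 'v | Fun 'f bool "('f,'v) aterm list"

type_synonym pos = "nat list"

lemma size_nth_aterm_less: "i < length ts \<Longrightarrow> size (ts ! i) < Suc (size_list size ts)"
  using size_list_estimation'[OF nth_mem[of i ts], of "size (ts ! i)" size] by simp

function poss :: "('f,'v) aterm \<Rightarrow> pos set" where
  "poss (Var x) = {[]}"
| "poss (Fun f b ts) = insert [] (\<Union>i \<in> {..<length ts}. (Cons i) ` poss (ts ! i))"
  by pat_completeness auto
termination
  by (relation "measure size") (auto simp: size_nth_aterm_less)

fun subt_at :: "('f,'v) aterm \<Rightarrow> pos \<Rightarrow> ('f,'v) aterm" where
  "subt_at t [] = t"
| "subt_at (Fun f b ts) (i # p) = subt_at (ts ! i) p"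
| "subt_at (Var x) (i # p) = Var x"

fun replace_at :: "('f,'v) aterm \<Rightarrow> pos \<Rightarrow> ('f,'v) aterm \<Rightarrow> ('f,'v) aterm" where
  "replace_at t [] s = s"
| "replace_at (Fun f b ts) (i # p) s = Fun f b (ts[i := replace_at (ts ! i) p s])"
| "replace_at (Var x) (i # p) s = Var x"

fun tsubst :: "('f,'v) aterm \<Rightarrow> ('v \<Rightarrow> ('f,'v) aterm) \<Rightarrow> ('f,'v) aterm" where
  "tsubst (Var x) \<sigma> = \<sigma> x"
| "tsubst (Fun f b ts) \<sigma> = Fun f b (map (\<lambda>t. tsubst t \<sigma>) ts)"

fun vars :: "('f,'v) aterm \<Rightarrow> 'v set" where
  "vars (Var x) = {x}"
| "vars (Fun f b ts) = (\<Union>t \<in> set ts. vars t)"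

fun funs :: "('f,'v) aterm \<Rightarrow> 'f set" where
  "funs (Var x) = {}"
| "funs (Fun f b ts) = insert f (\<Union>t \<in> set ts. funs t)"

fun annfuns :: "('f,'v) aterm \<Rightarrow> 'f set" where
  "annfuns (Var x) = {}"
| "annfuns (Fun f b ts) = (if b then {f} else {}) \<union> (\<Union>t \<in> set ts. annfuns t)"

fun tsize :: "('f,'v) aterm \<Rightarrow> nat" where
  "tsize (Var x) = 1"
| "tsize (Fun f b ts) = Suc (sum_list (map tsize ts))"

fun flat :: "('f,'v) aterm \<Rightarrow> ('f,'v) aterm" where
  "flat (Var x) = Var x"
| "flat (Fun f b ts) = Fun f False (map flat ts)"

fun sharp_root :: "('f,'v) aterm \<Rightarrow> ('f,'v) aterm" where
  "sharp_root (Var x) = Var x"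
| "sharp_root (Fun f b ts) = Fun f True ts"

fun flat_above :: "pos \<Rightarrow> ('f,'v) aterm \<Rightarrow> ('f,'v) aterm" where
  "flat_above [] t = t"
| "flat_above (i # p) (Fun f b ts) = Fun f False (ts[i := flat_above p (ts ! i)])"
| "flat_above (i # p) (Var x) = Var x"

fun root_annotated :: "('f,'v) aterm \<Rightarrow> bool" where
  "root_annotated (Var x) = False"
| "root_annotated (Fun f b ts) = b"

definition annotated_at :: "('f,'v) aterm \<Rightarrow> pos \<Rightarrow> bool" where
  "annotated_at s \<pi> \<longleftrightarrow> \<pi> \<in> poss s \<and> root_annotated (subt_at s \<pi>)"

definition unannotated :: "('f,'v) aterm \<Rightarrow> bool" where
  "unannotated t \<longleftrightarrow> flat t = t"

text \<open>D is the set of defined symbols;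
  the extra position argument is the position of the current subterm.\<close>
function sharp_Phi_at :: "'f set \<Rightarrow> pos set \<Rightarrow> pos \<Rightarrow> ('f,'v) aterm \<Rightarrow> ('f,'v) aterm" where
  "sharp_Phi_at D \<Phi> p (Var x) = Var x"
| "sharp_Phi_at D \<Phi> p (Fun f b ts) =
     Fun f (p \<in> \<Phi> \<and> (f \<in> D \<or> b))
       (map (\<lambda>i. sharp_Phi_at D \<Phi> (p @ [i]) (ts ! i)) [0..<length ts])"
  by pat_completeness auto
termination
  by (relation "measure (\<lambda>(D,\<Phi>,p,t). size t)") (auto simp: size_nth_aterm_less)

definition sharp_Phi :: "'f set \<Rightarrow> pos set \<Rightarrow> ('f,'v) aterm \<Rightarrow> ('f,'v) aterm" where
  "sharp_Phi D \<Phi> t = sharp_Phi_at D \<Phi> [] t"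

definition sharp_sub :: "('f,'v) aterm \<Rightarrow> pos \<Rightarrow> ('f,'v) aterm \<Rightarrow> bool" where
  "sharp_sub t \<pi> s \<longleftrightarrow> annotated_at s \<pi> \<and> t = flat (subt_at s \<pi>)"

definition proper_subterm :: "('f,'v) aterm \<Rightarrow> ('f,'v) aterm \<Rightarrow> bool" where
  "proper_subterm u t \<longleftrightarrow> (\<exists>\<pi> \<in> poss t. \<pi> \<noteq> [] \<and> subt_at t \<pi> = u)"

section \<open>Annotated dependency pairs\<close>

datatype ('f,'v) adp =
  ADP (lhs: "('f,'v) aterm") (rhs: "(real \<times> ('f,'v) aterm) multiset") (flag: bool)

type_synonym ('f,'v) problem = "('f,'v) adp set \<times> ('f,'v) adp set"

definition defs :: "('f,'v) adp set \<Rightarrow> 'f set" where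
  "defs P = {f. \<exists>\<alpha> \<in> P. \<exists>b ts. lhs \<alpha> = Fun f b ts}"

definition valid_adp :: "'f set \<Rightarrow> ('f,'v) adp \<Rightarrow> bool" where
  "valid_adp D \<alpha> \<longleftrightarrow>
     (\<exists>f ts. lhs \<alpha> = Fun f False ts) \<and> unannotated (lhs \<alpha>) \<and>
     (\<forall>(p, r) \<in># rhs \<alpha>. vars r \<subseteq> vars (lhs \<alpha>) \<and> 0 < p \<and> p \<le> 1 \<and> annfuns r \<subseteq> D) \<and>
     sum_mset (image_mset fst (rhs \<alpha>)) = 1"

definition adp_problem :: "('f,'v) problem \<Rightarrow> bool" where
  "adp_problem PS \<longleftrightarrow> (case PS of (P, S) \<Rightarrow>
     finite P \<and> S \<subseteq> P \<and> (\<forall>\<alpha> \<in> P. valid_adp (defs P) \<alpha>))"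

section \<open>Innermost rewriting with ADPs\<close>

definition NF :: "('f,'v) adp set \<Rightarrow> ('f,'v) aterm \<Rightarrow> bool" where
  "NF P t \<longleftrightarrow> \<not> (\<exists>\<pi> \<in> poss t. \<exists>\<alpha> \<in> P. \<exists>\<sigma>. flat (subt_at t \<pi>) = tsubst (lhs \<alpha>) \<sigma>)"

definition ANF :: "('f,'v) adp set \<Rightarrow> ('f,'v) aterm \<Rightarrow> bool" where
  "ANF P t \<longleftrightarrow> (\<forall>u. proper_subterm u t \<longrightarrow> NF P u)"

definition adp_redex :: "('f,'v) adp set \<Rightarrow> ('f,'v) aterm \<Rightarrow> pos \<Rightarrow> ('f,'v) adp
    \<Rightarrow> ('v \<Rightarrow> ('f,'v) aterm) \<Rightarrow> bool" where
  "adp_redex P s \<pi> \<alpha> \<sigma> \<longleftrightarrow> \<pi> \<in> poss s \<and> \<alpha> \<in> P \<and>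
     flat (subt_at s \<pi>) = tsubst (lhs \<alpha>) \<sigma> \<and>
     (\<forall>u. proper_subterm u (tsubst (lhs \<alpha>) \<sigma>) \<longrightarrow> NF P u)"

definition adp_result :: "('f,'v) aterm \<Rightarrow> pos \<Rightarrow> ('f,'v) adp
    \<Rightarrow> ('v \<Rightarrow> ('f,'v) aterm) \<Rightarrow> (real \<times> ('f,'v) aterm) multiset" where
  "adp_result s \<pi> \<alpha> \<sigma> = image_mset (\<lambda>(p, r). (p,
      if flag \<alpha> \<and> annotated_at s \<pi> then replace_at s \<pi> (tsubst r \<sigma>)
      else if flag \<alpha> \<and> \<not> annotated_at s \<pi> then replace_at s \<pi> (tsubst (flat r) \<sigma>)
      else if \<not> flag \<alpha> \<and> annotated_at s \<pi> then flat_above \<pi> (replace_at s \<pi> (tsubst r \<sigma>))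
      else flat_above \<pi> (replace_at s \<pi> (tsubst (flat r) \<sigma>)))) (rhs \<alpha>)"

section \<open>Chain trees and expected derivation length\<close>

text \<open>Nodes are addresses (lists of child indices); nch v is the number of children of v
  (0 for leaves); for inner nodes the rewrite step used is recorded (ADP, position,
  substitution).\<close>
record ('f,'v) ctree =
  cnodes :: "nat list set"
  cprob :: "nat list \<Rightarrow> real"
  cterm :: "nat list \<Rightarrow> ('f,'v) aterm"
  nch :: "nat list \<Rightarrow> nat"
  crule :: "nat list \<Rightarrow> ('f,'v) adp"
  cpos :: "nat list \<Rightarrow> pos"
  csub :: "nat list \<Rightarrow> 'v \<Rightarrow> ('f,'v) aterm"

definition chain_tree :: "('f,'v) adp set \<Rightarrow> ('f,'v) ctree \<Rightarrow> bool" where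
  "chain_tree P T \<longleftrightarrow>
     [] \<in> cnodes T \<and> cprob T [] = 1 \<and>
     (\<forall>w \<in> cnodes T. w \<noteq> [] \<longrightarrow> butlast w \<in> cnodes T) \<and>
     (\<forall>v \<in> cnodes T. \<forall>i. v @ [i] \<in> cnodes T \<longleftrightarrow> i < nch T v) \<and>
     (\<forall>v \<in> cnodes T. 0 < nch T v \<longrightarrow>
        adp_redex P (cterm T v) (cpos T v) (crule T v) (csub T v) \<and>
        mset (map (\<lambda>i. (cprob T (v @ [i]) / cprob T v, cterm T (v @ [i]))) [0..<nch T v])
          = adp_result (cterm T v) (cpos T v) (crule T v) (csub T v))"

definition counted_nodes :: "('f,'v) adp set \<Rightarrow> ('f,'v) ctree \<Rightarrow> nat list set" where
  "counted_nodes S T = {v \<in> cnodes T. 0 < nch T v \<and> crule T v \<in> S \<and>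
                                      annotated_at (cterm T v) (cpos T v)}"

definition edl :: "('f,'v) adp set \<Rightarrow> ('f,'v) ctree \<Rightarrow> ennreal" where
  "edl S T = (SUP F \<in> {F. finite F \<and> F \<subseteq> counted_nodes S T}. \<Sum>v\<in>F. ennreal (cprob T v))"

definition edh :: "('f,'v) adp set \<Rightarrow> ('f,'v) adp set \<Rightarrow> ('f,'v) aterm \<Rightarrow> ennreal" where
  "edh P S t = (SUP T \<in> {T. chain_tree P T \<and> cterm T [] = sharp_root t}. edl S T)"

definition basic :: "('f,'v) adp set \<Rightarrow> ('f,'v) aterm \<Rightarrow> bool" where
  "basic P t \<longleftrightarrow> (\<exists>f ts. t = Fun f False ts \<and> f \<in> defs P \<and>
      (\<forall>u \<in> set ts. funs u \<inter> defs P = {} \<and> unannotated u))"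

section \<open>Complexities\<close>

datatype cplx = Pol nat | Exp | TwoExp | Fin | Omega

fun cidx :: "cplx \<Rightarrow> nat" where
  "cidx (Pol a) = 0" | "cidx Exp = 1" | "cidx TwoExp = 2" | "cidx Fin = 3" | "cidx Omega = 4"

fun cdeg :: "cplx \<Rightarrow> nat" where
  "cdeg (Pol a) = a" | "cdeg Exp = 0" | "cdeg TwoExp = 0" | "cdeg Fin = 0" | "cdeg Omega = 0"

instantiation cplx :: linorder
begin
definition less_eq_cplx :: "cplx \<Rightarrow> cplx \<Rightarrow> bool" where
  "less_eq_cplx x y \<longleftrightarrow> cidx x < cidx y \<or> (cidx x = cidx y \<and> cdeg x \<le> cdeg y)"
definition less_cplx :: "cplx \<Rightarrow> cplx \<Rightarrow> bool" where
  "less_cplx x y \<longleftrightarrow> x \<le> y \<and> \<not> y \<le> x"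
instance
proof
  fix x y z :: cplx
  show "x < y \<longleftrightarrow> x \<le> y \<and> \<not> y \<le> x" by (simp add: less_cplx_def)
  show "x \<le> x" by (simp add: less_eq_cplx_def)
  show "x \<le> y \<Longrightarrow> y \<le> z \<Longrightarrow> x \<le> z" by (auto simp: less_eq_cplx_def)
  show "x \<le> y \<Longrightarrow> y \<le> x \<Longrightarrow> x = y"
    by (cases x; cases y) (auto simp: less_eq_cplx_def)
  show "x \<le> y \<or> y \<le> x" by (auto simp: less_eq_cplx_def)
qed
end

definition bigO :: "(nat \<Rightarrow> ennreal) \<Rightarrow> (nat \<Rightarrow> ennreal) \<Rightarrow> bool" where
  "bigO f g \<longleftrightarrow> (\<exists>c::real. \<exists>N. \<forall>n \<ge> N. f n \<le> ennreal c * g n)"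

definition cls :: "(nat \<Rightarrow> ennreal) \<Rightarrow> cplx" where
  "cls f = (if \<exists>a. bigO f (\<lambda>n. ennreal (real n ^ a))
            then Pol (LEAST a. bigO f (\<lambda>n. ennreal (real n ^ a)))
            else if \<exists>q :: real poly. bigO f (\<lambda>n. ennreal (2 powr poly q (real n))) then Exp
            else if \<exists>q :: real poly. bigO f (\<lambda>n. ennreal (2 powr (2 powr poly q (real n))))
              then TwoExp
            else if \<forall>n. f n \<noteq> \<infinity> then Fin
            else Omega)"

definition iota :: "('f,'v) adp set \<Rightarrow> ('f,'v) adp set \<Rightarrow> cplx" where
  "iota P S = cls (\<lambda>n. SUP t \<in> {t. basic P t \<and> tsize t \<le> n}. edh P S t)"

definition iota_p :: "('f,'v) problem \<Rightarrow> cplx" where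
  "iota_p PS = iota (fst PS) (snd PS)"

definition cMax :: "cplx set \<Rightarrow> cplx" where
  "cMax X = Max (insert (Pol 0) X)"

section \<open>Dependency graph\<close>

text \<open>A dependency pair l^sharp -> t^sharp is represented as (l, Some t), and
  l^sharp -> bot as (l, None).\<close>
type_synonym ('f,'v) dpair = "('f,'v) aterm \<times> ('f,'v) aterm option"

definition np :: "('f,'v) adp set \<Rightarrow> (('f,'v) aterm \<times> ('f,'v) aterm) set" where
  "np P = {(lhs \<alpha>, flat r) | \<alpha> p r. \<alpha> \<in> P \<and> flag \<alpha> \<and> (p, r) \<in># rhs \<alpha>}"

definition dp :: "('f,'v) adp \<Rightarrow> ('f,'v) dpair set" where
  "dp \<alpha> = {(lhs \<alpha>, Some t) | t. \<exists>p r \<pi>. (p, r) \<in># rhs \<alpha> \<and> sharp_sub t \<pi> r}"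

definition dp_bot :: "('f,'v) adp \<Rightarrow> ('f,'v) dpair set" where
  "dp_bot \<alpha> = (if dp \<alpha> = {} then {(lhs \<alpha>, None)} else dp \<alpha>)"

definition dpP :: "('f,'v) adp set \<Rightarrow> ('f,'v) dpair set" where
  "dpP P = (\<Union>\<alpha> \<in> P. dp_bot \<alpha>)"

definition NF_trs :: "(('f,'v) aterm \<times> ('f,'v) aterm) set \<Rightarrow> ('f,'v) aterm \<Rightarrow> bool" where
  "NF_trs R u \<longleftrightarrow> \<not> (\<exists>\<pi> \<in> poss u. \<exists>(l, r) \<in> R. \<exists>\<sigma>. subt_at u \<pi> = tsubst l \<sigma>)"

definition istep :: "(('f,'v) aterm \<times> ('f,'v) aterm) set \<Rightarrow> (('f,'v) aterm \<times> ('f,'v) aterm) set" where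
  "istep R = {(s, t). \<exists>\<pi> \<in> poss s. \<exists>(l, r) \<in> R. \<exists>\<sigma>.
      subt_at s \<pi> = tsubst l \<sigma> \<and>
      (\<forall>u. proper_subterm u (tsubst l \<sigma>) \<longrightarrow> NF_trs R u) \<and>
      t = replace_at s \<pi> (tsubst r \<sigma>)}"

text \<open>Edges of the P-dependency graph.  A node l^sharp -> bot has no outgoing edges, since
  bot sigma = bot is an np(P)-normal form different from any l2^sharp sigma2.\<close>
definition dg_edge :: "('f,'v) adp set \<Rightarrow> ('f,'v) dpair \<Rightarrow> ('f,'v) dpair \<Rightarrow> bool" where
  "dg_edge P d1 d2 \<longleftrightarrow> d1 \<in> dpP P \<and> d2 \<in> dpP P \<and>
     (case snd d1 of
        None \<Rightarrow> False
      | Some t1 \<Rightarrow> \<exists>\<sigma>1 \<sigma>2.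
          (tsubst (sharp_root t1) \<sigma>1, tsubst (sharp_root (fst d2)) \<sigma>2) \<in> (istep (np P))\<^sup>* \<and>
          ANF P (tsubst (sharp_root (fst d1)) \<sigma>1) \<and> ANF P (tsubst (sharp_root (fst d2)) \<sigma>2))"

definition dg_edges :: "('f,'v) adp set \<Rightarrow> (('f,'v) dpair \<times> ('f,'v) dpair) set" where
  "dg_edges P = {(d1, d2). dg_edge P d1 d2}"

definition strongly_conn :: "('f,'v) adp set \<Rightarrow> ('f,'v) dpair set \<Rightarrow> bool" where
  "strongly_conn P G \<longleftrightarrow> G \<subseteq> dpP P \<and>
     (\<forall>a \<in> G. \<forall>b \<in> G. (a, b) \<in> (dg_edges P \<inter> G \<times> G)\<^sup>+)"

definition is_SCC :: "('f,'v) adp set \<Rightarrow> ('f,'v) dpair set \<Rightarrow> bool" where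
  "is_SCC P G \<longleftrightarrow> strongly_conn P G \<and> \<not> (\<exists>G'. G \<subset> G' \<and> strongly_conn P G')"

definition reaches :: "('f,'v) adp set \<Rightarrow> ('f,'v) dpair \<Rightarrow> ('f,'v) dpair \<Rightarrow> bool" where
  "reaches P a b \<longleftrightarrow> (a, b) \<in> (dg_edges P)\<^sup>*"

definition prefix_prop :: "('f,'v) adp set \<Rightarrow> ('f,'v) dpair set \<Rightarrow> ('f,'v) dpair set \<Rightarrow> bool" where
  "prefix_prop P G J \<longleftrightarrow> J \<subseteq> dpP P \<and> (\<forall>a \<in> J. \<exists>b \<in> G. reaches P a b) \<and>
     (\<forall>a \<in> J. \<forall>b \<in> J. reaches P a b \<or> reaches P b a)"

definition SCC_prefix :: "('f,'v) adp set \<Rightarrow> ('f,'v) dpair set \<Rightarrow> bool" where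
  "SCC_prefix P J \<longleftrightarrow> (\<exists>G. is_SCC P G \<and> G \<subseteq> J \<and> prefix_prop P G J \<and>
                           \<not> (\<exists>J'. J \<subset> J' \<and> prefix_prop P G J'))"

section \<open>Restriction of ADPs to a set of dependency pairs\<close>

definition Phi :: "('f,'v) dpair set \<Rightarrow> ('f,'v) aterm \<Rightarrow> ('f,'v) aterm \<Rightarrow> pos set" where
  "Phi J l r = {\<pi>. \<exists>t. (l, Some t) \<in> J \<and> sharp_sub t \<pi> r}"

definition restr :: "('f,'v) adp set \<Rightarrow> ('f,'v) dpair set \<Rightarrow> ('f,'v) adp \<Rightarrow> ('f,'v) adp" where
  "restr P J \<alpha> = ADP (lhs \<alpha>)
     (image_mset (\<lambda>(p, r). (p, sharp_Phi (defs P) (Phi J (lhs \<alpha>) r) r)) (rhs \<alpha>)) (flag \<alpha>)"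

definition proc_DG :: "('f,'v) problem \<Rightarrow> cplx \<times> ('f,'v) problem set" where
  "proc_DG PS = (case PS of (P, S) \<Rightarrow>
     (Pol 0, {(restr P J ` P, restr P J ` S) | J. SCC_prefix P J}))"

section \<open>Proof trees and soundness of processors\<close>

record ('f,'v) ptree =
  pnodes :: "nat list set"
  LA :: "nat list \<Rightarrow> ('f,'v) problem"
  LC :: "nat list \<Rightarrow> cplx"

definition pchildren :: "('f,'v) ptree \<Rightarrow> nat list \<Rightarrow> nat list set" where
  "pchildren T v = {w \<in> pnodes T. \<exists>i. w = v @ [i]}"

definition pleaf :: "('f,'v) ptree \<Rightarrow> nat list \<Rightarrow> bool" where
  "pleaf T v \<longleftrightarrow> pchildren T v = {}"

definition proof_tree :: "('f,'v) ptree \<Rightarrow> bool" where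
  "proof_tree T \<longleftrightarrow> finite (pnodes T) \<and> [] \<in> pnodes T \<and>
     (\<forall>w \<in> pnodes T. w \<noteq> [] \<longrightarrow> butlast w \<in> pnodes T) \<and>
     (\<forall>v \<in> pnodes T. adp_problem (LA T v)) \<and>
     (\<forall>v \<in> pnodes T. \<not> pleaf T v \<longrightarrow>
        (\<exists>Proc :: ('f,'v) problem \<Rightarrow> cplx \<times> ('f,'v) problem set.
            Proc (LA T v) = (LC T v, LA T ` pchildren T v))) \<and>
     (\<forall>v \<in> pnodes T. pleaf T v \<longrightarrow> LC T v = (if snd (LA T v) = {} then Pol 0 else Omega))"

text \<open>L_C(v_1) (+) ... (+) L_C(v_{k-1}) for the root path v_1, ..., v_k = v.\<close>
definition path_sum :: "('f,'v) ptree \<Rightarrow> nat list \<Rightarrow> cplx" where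
  "path_sum T v = foldr max (map (\<lambda>i. LC T (take i v)) [0..<length v]) (Pol 0)"

definition LC' :: "('f,'v) ptree \<Rightarrow> nat list \<Rightarrow> cplx" where
  "LC' T w = (if pleaf T w then iota_p (LA T w) else LC T w)"

definition reach_max :: "('f,'v) ptree \<Rightarrow> nat list \<Rightarrow> cplx" where
  "reach_max T v = Max {LC' T w | w. w \<in> pnodes T \<and> (\<exists>u. w = v @ u)}"

definition wf_proof_tree :: "('f,'v) ptree \<Rightarrow> bool" where
  "wf_proof_tree T \<longleftrightarrow> proof_tree T \<and>
     (\<forall>v \<in> pnodes T. iota (fst (LA T v)) (snd (LA T v)) \<le> max (path_sum T v) (reach_max T v) \<and>
                      iota (fst (LA T v)) (fst (LA T v) - snd (LA T v)) \<le> path_sum T v)"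

definition sound_output :: "('f,'v) problem \<Rightarrow> cplx \<times> ('f,'v) problem set \<Rightarrow> bool" where
  "sound_output PS out \<longleftrightarrow>
     (\<forall>T v. wf_proof_tree T \<and> v \<in> pnodes T \<and> LA T v = PS \<longrightarrow>
        iota (fst PS) (snd PS) \<le> max (max (path_sum T v) (fst out)) (cMax (iota_p ` snd out)) \<and>
        (\<forall>Q \<in> snd out. iota (fst Q) (fst Q - snd Q) \<le> max (path_sum T v) (fst out)))"

definition sound_processor :: "(('f,'v) problem \<Rightarrow> cplx \<times> ('f,'v) problem set) \<Rightarrow> bool" where
  "sound_processor Proc \<longleftrightarrow> (\<forall>PS. adp_problem PS \<longrightarrow> sound_output PS (Proc PS))"

end

theory Submission
  imports Defs
begin



lemma poss_Nil[simp]: "[] \<in> poss t"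
  by (cases t) auto

lemma poss_Var_iff[simp]: "p \<in> poss (Var x) \<longleftrightarrow> p = []"
  by simp

lemma poss_Fun_Cons[simp]: "(i # q) \<in> poss (Fun f b ts) \<longleftrightarrow> i < length ts \<and> q \<in> poss (ts ! i)"
  by auto

declare poss.simps[simp del]

lemma annotated_at_Nil[simp]: "annotated_at t [] \<longleftrightarrow> root_annotated t"
  by (simp add: annotated_at_def)

lemma annotated_at_Var[simp]: "\<not> annotated_at (Var x) q"
  by (cases q) (auto simp: annotated_at_def poss.simps)

lemma annotated_at_Fun_Cons[simp]:
  "annotated_at (Fun f b ts) (i # q) \<longleftrightarrow> i < length ts \<and> annotated_at (ts ! i) q"
  by (auto simp: annotated_at_def)

lemma annotated_at_poss: "annotated_at t p \<Longrightarrow> p \<in> poss t"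
  by (simp add: annotated_at_def)

lemma finite_poss[simp]: "finite (poss t)"
proof (induction t)
  case (Var x) then show ?case by (simp add: poss.simps)
next
  case (Fun f b ts)
  have "poss (Fun f b ts) = insert [] (\<Union>i \<in> {..<length ts}. (Cons i) ` poss (ts ! i))"
    by (simp add: poss.simps)
  then show ?case using Fun by auto
qed

lemma poss_flat[simp]: "poss (flat t) = poss t"
  by (induction t) (auto simp: poss.simps)

lemma flat_flat[simp]: "flat (flat t) = flat t"
  by (induction t) auto

lemma subt_at_flat: "p \<in> poss t \<Longrightarrow> subt_at (flat t) p = flat (subt_at t p)"
proof (induction p arbitrary: t)
  case Nil then show ?case by simp
next
  case (Cons i p) then show ?case by (cases t) auto
qed

lemma flat_replace_at: "flat (replace_at s p u) = replace_at (flat s) p (flat u)"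
proof (induction p arbitrary: s)
  case Nil then show ?case by simp
next
  case (Cons i p) then show ?case
  proof (cases s)
    case (Fun f b ts)
    show ?thesis
    proof (cases "i < length ts")
      case True then show ?thesis using Fun Cons by (simp add: map_update)
    next
      case False then show ?thesis using Fun by (simp add: list_update_beyond)
    qed
  qed simp
qed

lemma flat_flat_above[simp]: "flat (flat_above p t) = flat t"
proof (induction p arbitrary: t)
  case Nil then show ?case by simp
next
  case (Cons i p) then show ?case
  proof (cases t)
    case (Fun f b ts)
    show ?thesis
    proof (cases "i < length ts")
      case True
      then have "(map flat ts)[i := flat (ts ! i)] = map flat ts"
        by (metis list_update_id nth_map)
      then show ?thesis using Fun Cons by (simp add: map_update)
    next
      case False then show ?thesis using Fun by (simp add: list_update_beyond)
    qed
  qed simp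
qed

lemma flat_tsubst: "flat (tsubst t \<sigma>) = tsubst (flat t) (flat \<circ> \<sigma>)"
  by (induction t) auto

lemma unannotated_flat_iff: "flat t = t \<longleftrightarrow> (\<forall>p. \<not> annotated_at t p)"
proof (induction t)
  case (Var x) then show ?case by simp
next
  case (Fun f b ts)
  show ?case
  proof
    assume a: "flat (Fun f b ts) = Fun f b ts"
    then have b: "\<not> b" and c: "\<forall>t\<in>set ts. flat t = t" by (auto simp: map_idI map_eq_conv[symmetric] list_eq_iff_nth_eq)
    show "\<forall>p. \<not> annotated_at (Fun f b ts) p"
    proof
      fix p show "\<not> annotated_at (Fun f b ts) p"
        using b c Fun.IH by (cases p) auto
    qed
  next
    assume a: "\<forall>p. \<not> annotated_at (Fun f b ts) p"
    then have "\<not> b" using a[rule_format, of "[]"] by simp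
    moreover have "\<forall>t\<in>set ts. flat t = t"
    proof
      fix t assume t: "t \<in> set ts"
      then obtain i where i: "i < length ts" "ts ! i = t" by (auto simp: in_set_conv_nth)
      have "\<forall>q. \<not> annotated_at t q" using a i by (metis annotated_at_Fun_Cons)
      then show "flat t = t" using Fun.IH t by blast
    qed
    ultimately show "flat (Fun f b ts) = Fun f b ts" by (simp add: map_idI)
  qed
qed

lemma flat_not_annotated: "\<not> annotated_at (flat t) p"
  using unannotated_flat_iff[of "flat t"] by simp

lemma poss_append: "(p @ q) \<in> poss t \<longleftrightarrow> p \<in> poss t \<and> q \<in> poss (subt_at t p)"
proof (induction p arbitrary: t)
  case Nil then show ?case by simp
next
  case (Cons i p) then show ?case by (cases t) auto
qed

lemma subt_at_append: "p \<in> poss t \<Longrightarrow> subt_at t (p @ q) = subt_at (subt_at t p) q"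
proof (induction p arbitrary: t)
  case Nil then show ?case by simp
next
  case (Cons i p) then show ?case by (cases t) auto
qed

lemma annotated_at_append: "p \<in> poss t \<Longrightarrow> annotated_at t (p @ q) \<longleftrightarrow> annotated_at (subt_at t p) q"
  by (simp add: annotated_at_def poss_append subt_at_append)

lemma poss_tsubst: "p \<in> poss t \<Longrightarrow> p \<in> poss (tsubst t \<sigma>)"
proof (induction p arbitrary: t)
  case Nil then show ?case by simp
next
  case (Cons i p) then show ?case by (cases t) auto
qed

lemma subt_at_tsubst: "p \<in> poss t \<Longrightarrow> subt_at (tsubst t \<sigma>) p = tsubst (subt_at t p) \<sigma>"
proof (induction p arbitrary: t)
  case Nil then show ?case by simp
next
  case (Cons i p) then show ?case by (cases t) auto
qed

lemma annotated_at_tsubst: "annotated_at t p \<Longrightarrow> annotated_at (tsubst t \<sigma>) p"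
proof (induction p arbitrary: t)
  case Nil then show ?case by (cases t) auto
next
  case (Cons i p) then show ?case by (cases t) auto
qed

lemma vars_subt_at: "p \<in> poss t \<Longrightarrow> vars (subt_at t p) \<subseteq> vars t"
proof (induction p arbitrary: t)
  case Nil then show ?case by simp
next
  case (Cons i p) then show ?case by (cases t) force+
qed

lemma annotated_at_tsubst_rev:
  "annotated_at (tsubst t \<sigma>) p \<Longrightarrow> (\<forall>x \<in> vars t. flat (\<sigma> x) = \<sigma> x) \<Longrightarrow> annotated_at t p"
proof (induction p arbitrary: t)
  case Nil then show ?case
    by (cases t) (auto, metis aterm.distinct(1) annotated_at_Nil flat_not_annotated)
next
  case (Cons i p) then show ?case
    by (cases t) (auto dest: unannotated_flat_iff[THEN iffD1], meson nth_mem)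
qed

lemma flat_tsubst_vars:
  assumes "flat (tsubst t \<sigma>) = tsubst t \<sigma>" "x \<in> vars t"
  shows "flat (\<sigma> x) = \<sigma> x"
  using assms
proof (induction t)
  case (Var y) then show ?case by simp
next
  case (Fun f b ts)
  then obtain t where "t \<in> set ts" "x \<in> vars t" by auto
  moreover have "flat (tsubst t \<sigma>) = tsubst t \<sigma>"
    using Fun.prems(1) \<open>t \<in> set ts\<close> by (auto simp: map_eq_conv)
  ultimately show ?case using Fun.IH by blast
qed

lemma tsubst_flat_comp:
  assumes "flat (tsubst t \<sigma>) = tsubst t \<sigma>" "flat t = t"
  shows "tsubst t (flat \<circ> \<sigma>) = tsubst t \<sigma>"
  using assms flat_tsubst[of t \<sigma>] by simp

lemma poss_replace_at_above:
  "p \<in> poss s \<Longrightarrow> (p @ w) \<in> poss (replace_at s p u) \<longleftrightarrow> w \<in> poss u"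
proof (induction p arbitrary: s)
  case Nil then show ?case by simp
next
  case (Cons i p) then show ?case by (cases s) auto
qed

lemma subt_at_replace_at_above:
  "p \<in> poss s \<Longrightarrow> subt_at (replace_at s p u) (p @ w) = subt_at u w"
proof (induction p arbitrary: s)
  case Nil then show ?case by simp
next
  case (Cons i p) then show ?case by (cases s) auto
qed

lemma annotated_at_replace_at_above:
  "p \<in> poss s \<Longrightarrow> annotated_at (replace_at s p u) (p @ w) \<longleftrightarrow> annotated_at u w"
  by (simp add: annotated_at_def poss_replace_at_above subt_at_replace_at_above)

lemma poss_replace_at_other:
  "p \<in> poss s \<Longrightarrow> \<not> (\<exists>w. q = p @ w) \<Longrightarrow> q \<in> poss (replace_at s p u) \<longleftrightarrow> q \<in> poss s"
proof (induction p arbitrary: s q)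
  case Nil then show ?case by simp
next
  case (Cons i p)
  then obtain f b ts where s: "s = Fun f b ts" and i: "i < length ts" "p \<in> poss (ts ! i)" by (cases s) auto
  show ?case
  proof (cases q)
    case Nil then show ?thesis by simp
  next
    case (Cons j q')
    show ?thesis
    proof (cases "j = i")
      case True
      then have "\<not> (\<exists>w. q' = p @ w)" using Cons Cons.prems by auto
      then show ?thesis using Cons.IH[OF i(2)] s i Cons True by auto
    next
      case False then show ?thesis using s i Cons by auto
    qed
  qed
qed

lemma root_annotated_replace_at:
  "p \<noteq> [] \<Longrightarrow> root_annotated (replace_at s p u) = root_annotated s"
  by (cases s; cases p) auto

lemma annotated_at_replace_at_other:
  "p \<in> poss s \<Longrightarrow> \<not> (\<exists>w. q = p @ w) \<Longrightarrow> annotated_at (replace_at s p u) q \<longleftrightarrow> annotated_at s q"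
proof (induction p arbitrary: s q)
  case Nil then show ?case by simp
next
  case (Cons i p)
  then obtain f b ts where s: "s = Fun f b ts" and i: "i < length ts" "p \<in> poss (ts ! i)" by (cases s) auto
  show ?case
  proof (cases q)
    case Nil then show ?thesis using s by simp
  next
    case (Cons j q')
    show ?thesis
    proof (cases "j = i")
      case True
      then have "\<not> (\<exists>w. q' = p @ w)" using Cons Cons.prems by auto
      then show ?thesis using Cons.IH[OF i(2)] s i Cons True by auto
    next
      case False then show ?thesis using s i Cons by auto
    qed
  qed
qed

lemma subt_at_replace_at_parallel:
  "p \<in> poss s \<Longrightarrow> \<not> (\<exists>w. q = p @ w) \<Longrightarrow> \<not> (\<exists>w. p = q @ w) \<Longrightarrow>
   subt_at (replace_at s p u) q = subt_at s q"
proof (induction p arbitrary: s q)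
  case Nil then show ?case by simp
next
  case (Cons i p)
  then obtain f b ts where s: "s = Fun f b ts" and i: "i < length ts" "p \<in> poss (ts ! i)" by (cases s) auto
  show ?case
  proof (cases q)
    case Nil then show ?thesis using Cons.prems by simp
  next
    case (Cons j q')
    show ?thesis
    proof (cases "j = i")
      case True
      then have "\<not> (\<exists>w. q' = p @ w)" "\<not> (\<exists>w. p = q' @ w)" using Cons Cons.prems by auto
      then show ?thesis using Cons.IH[OF i(2)] s i Cons True by auto
    next
      case False then show ?thesis using s i Cons by auto
    qed
  qed
qed

lemma subt_at_replace_at_below:
  "(q @ w) \<in> poss s \<Longrightarrow> subt_at (replace_at s (q @ w) u) q = replace_at (subt_at s q) w u"
proof (induction q arbitrary: s)
  case Nil then show ?case by simp
next
  case (Cons i q) then show ?case by (cases s) auto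
qed

lemma poss_flat_above[simp]: "poss (flat_above p t) = poss t"
proof (induction p arbitrary: t)
  case Nil then show ?case by simp
next
  case (Cons i p) then show ?case
  proof (cases t)
    case (Fun f b ts)
    show ?thesis
    proof (cases "i < length ts")
      case True
      then show ?thesis using Fun Cons by (auto simp: poss.simps nth_list_update split: if_splits)
    next
      case False then show ?thesis using Fun by (simp add: list_update_beyond poss.simps)
    qed
  qed simp
qed

lemma annotated_at_flat_above:
  "p \<in> poss t \<Longrightarrow> annotated_at (flat_above p t) q \<longleftrightarrow> annotated_at t q \<and> \<not> (\<exists>w. w \<noteq> [] \<and> p = q @ w)"
proof (induction p arbitrary: t q)
  case Nil then show ?case by simp
next
  case (Cons i p)
  then obtain f b ts where s: "t = Fun f b ts" and i: "i < length ts" "p \<in> poss (ts ! i)" by (cases t) auto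
  show ?case
  proof (cases q)
    case Nil then show ?thesis using s by simp
  next
    case (Cons j q')
    show ?thesis
    proof (cases "j = i")
      case True
      then show ?thesis using Cons.IH[OF i(2)] s i Cons True by auto
    next
      case False then show ?thesis using s i Cons by auto
    qed
  qed
qed




lemma two_m_le_pow: "1 \<le> m \<Longrightarrow> 2 * m \<le> (2::nat) ^ m"
proof (induction m)
  case 0 then show ?case by simp
next
  case (Suc m) then show ?case by (cases "m = 0") auto
qed

lemma le_two_powr: "(x::real) \<le> 2 powr x"
proof (cases "x \<le> 0")
  case True then show ?thesis using powr_ge_zero[of 2 x] by linarith
next
  case False
  define m where "m = nat \<lceil>x\<rceil>"
  have c1: "1 \<le> \<lceil>x\<rceil>" using False by simp
  have m1: "1 \<le> m" unfolding m_def using c1 by (simp add: le_nat_iff)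
  have xm: "x \<le> real m" using False by (simp add: m_def)
  have mx: "real m - 1 < x" using False by (simp add: m_def) linarith
  have "2 * real m \<le> 2 ^ m" using two_m_le_pow[OF m1] by (metis of_nat_le_iff of_nat_mult of_nat_numeral of_nat_power)
  also have "(2::real) ^ m = 2 * 2 powr (real m - 1)"
    using m1 by (simp add: powr_diff powr_realpow)
  finally have "real m \<le> 2 powr (real m - 1)" by simp
  also have "\<dots> \<le> 2 powr x" using mx by (intro powr_mono) auto
  finally show ?thesis using xm by simp
qed

lemma bigO_nonneg: "bigO f g \<Longrightarrow> \<exists>c\<ge>0. \<exists>N. \<forall>n\<ge>N. f n \<le> ennreal c * g n"
  unfolding bigO_def
  by (metis ennreal_eq_0_iff linear)

lemma bigO_trans_le: "bigO f g \<Longrightarrow> (\<forall>n\<ge>M. g n \<le> h n) \<Longrightarrow> bigO f h"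
proof -
  assume a: "bigO f g" and b: "\<forall>n\<ge>M. g n \<le> h n"
  then obtain c N where cN: "\<forall>n\<ge>N. f n \<le> ennreal c * g n" unfolding bigO_def by blast
  have "\<forall>n\<ge>max N M. f n \<le> ennreal c * h n"
    using cN b by (meson max.boundedE order.trans mult_left_mono zero_le)
  then show ?thesis unfolding bigO_def by blast
qed

lemma bigO_add: "bigO f g \<Longrightarrow> bigO f' g \<Longrightarrow> bigO (\<lambda>n. f n + f' n) g"
proof -
  assume "bigO f g" "bigO f' g"
  then obtain c N c' N' where c: "c \<ge> 0" "\<forall>n\<ge>N. f n \<le> ennreal c * g n"
    and c': "c' \<ge> 0" "\<forall>n\<ge>N'. f' n \<le> ennreal c' * g n"
    using bigO_nonneg by metis
  have "\<forall>n\<ge>max N N'. f n + f' n \<le> ennreal (c + c') * g n"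
  proof (intro allI impI)
    fix n assume "max N N' \<le> n"
    then have "f n + f' n \<le> ennreal c * g n + ennreal c' * g n"
      using c c' by (intro add_mono) auto
    also have "\<dots> = ennreal (c + c') * g n" using c c' by (simp add: ennreal_plus distrib_right)
    finally show "f n + f' n \<le> ennreal (c + c') * g n" .
  qed
  then show ?thesis unfolding bigO_def by blast
qed

lemma bigO_pointwise: "bigO f g \<Longrightarrow> (\<And>n. h n \<le> f n) \<Longrightarrow> bigO h g"
  unfolding bigO_def by (meson order.trans)

lemma bigO_scale: "bigO f g \<Longrightarrow> 0 \<le> d \<Longrightarrow> bigO (\<lambda>n. ennreal d * f n) g"
proof -
  assume "bigO f g" "0 \<le> d"
  then obtain c N where c: "c \<ge> 0" "\<forall>n\<ge>N. f n \<le> ennreal c * g n"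
    using bigO_nonneg by metis
  have "\<forall>n\<ge>N. ennreal d * f n \<le> ennreal (d * c) * g n"
    using c \<open>0 \<le> d\<close> by (metis ennreal_mult mult.assoc mult_left_mono zero_le)
  then show ?thesis unfolding bigO_def by blast
qed

lemma cplx_le_simps:
  "Pol a \<le> Pol b \<longleftrightarrow> a \<le> b" "Pol a \<le> Exp" "Pol a \<le> TwoExp" "Pol a \<le> Fin" "x \<le> Omega"
  "Exp \<le> TwoExp" "Exp \<le> Fin" "TwoExp \<le> Fin" "Pol 0 \<le> x"
  by (cases x; simp add: less_eq_cplx_def)+

lemma cls_cases: "cls f \<in> range Pol \<union> {Exp, TwoExp, Fin, Omega}"
  unfolding cls_def by auto

abbreviation PolF :: "nat \<Rightarrow> nat \<Rightarrow> ennreal" where "PolF a \<equiv> (\<lambda>n. ennreal (real n ^ a))"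
abbreviation ExpF :: "real poly \<Rightarrow> nat \<Rightarrow> ennreal" where "ExpF q \<equiv> (\<lambda>n. ennreal (2 powr poly q (real n)))"
abbreviation TExpF :: "real poly \<Rightarrow> nat \<Rightarrow> ennreal" where "TExpF q \<equiv> (\<lambda>n. ennreal (2 powr (2 powr poly q (real n))))"

lemma cls_le_Pol_iff: "cls f \<le> Pol a \<longleftrightarrow> bigO f (PolF a)"
proof
  assume a: "cls f \<le> Pol a"
  then have ex: "\<exists>a. bigO f (PolF a)"
    unfolding cls_def by (auto split: if_splits simp: less_eq_cplx_def)
  then have "cls f = Pol (LEAST a. bigO f (PolF a))" unfolding cls_def by simp
  with a have le: "(LEAST a. bigO f (PolF a)) \<le> a" by (simp add: cplx_le_simps)
  have "bigO f (PolF (LEAST a. bigO f (PolF a)))" using ex by (rule LeastI_ex)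
  then show "bigO f (PolF a)"
    by (rule bigO_trans_le[where M=1]) (auto intro!: power_increasing le)
next
  assume b: "bigO f (PolF a)"
  then have "cls f = Pol (LEAST a. bigO f (PolF a))" unfolding cls_def by auto
  moreover have "(LEAST a. bigO f (PolF a)) \<le> a" using b by (rule Least_le)
  ultimately show "cls f \<le> Pol a" by (simp add: cplx_le_simps)
qed

lemma Pol_to_Exp: "\<exists>q. \<forall>n. PolF a n \<le> ExpF q n"
proof -
  have "\<forall>n. real n ^ a \<le> 2 powr poly (monom 1 a) (real n)"
    by (simp add: poly_monom le_two_powr)
  then show ?thesis by (intro exI[of _ "monom 1 a"]) auto
qed

lemma Exp_to_TExp: "\<forall>n. ExpF q n \<le> TExpF q n"
  by (auto intro: le_two_powr)

lemma cls_le_Exp_iff: "cls f \<le> Exp \<longleftrightarrow> (\<exists>q. bigO f (ExpF q))"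
proof
  assume a: "cls f \<le> Exp"
  show "\<exists>q. bigO f (ExpF q)"
  proof (cases "\<exists>a. bigO f (PolF a)")
    case True
    then obtain a where "bigO f (PolF a)" by blast
    moreover obtain q where "\<forall>n. PolF a n \<le> ExpF q n" using Pol_to_Exp by blast
    ultimately have "bigO f (ExpF q)" using bigO_trans_le[where M=0, of f "PolF a" "ExpF q"] by auto
    then show ?thesis by blast
  next
    case False
    then show ?thesis using a unfolding cls_def by (auto split: if_splits simp: less_eq_cplx_def)
  qed
next
  assume "\<exists>q. bigO f (ExpF q)"
  then show "cls f \<le> Exp" unfolding cls_def by (auto simp: cplx_le_simps)
qed

lemma cls_le_TExp_iff: "cls f \<le> TwoExp \<longleftrightarrow> (\<exists>q. bigO f (TExpF q))"
proof
  assume a: "cls f \<le> TwoExp"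
  show "\<exists>q. bigO f (TExpF q)"
  proof (cases "cls f \<le> Exp")
    case True
    then obtain q where "bigO f (ExpF q)" using cls_le_Exp_iff by blast
    then have "bigO f (TExpF q)" using bigO_trans_le[where M=0, of f "ExpF q" "TExpF q"] Exp_to_TExp by auto
    then show ?thesis by blast
  next
    case False
    then have "\<not> (\<exists>a. bigO f (PolF a))" "\<not> (\<exists>q. bigO f (ExpF q))"
      using cls_le_Pol_iff cls_le_Exp_iff cplx_le_simps order.trans by metis+
    then show ?thesis using a unfolding cls_def by (auto split: if_splits simp: less_eq_cplx_def)
  qed
next
  assume "\<exists>q. bigO f (TExpF q)"
  then show "cls f \<le> TwoExp" unfolding cls_def by (auto simp: cplx_le_simps)
qed

lemma cls_le_Fin_if: "(\<forall>n. f n \<noteq> \<infinity>) \<Longrightarrow> cls f \<le> Fin"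
  unfolding cls_def by (auto simp: cplx_le_simps)

lemma bigO_finite_eventually: "bigO f g \<Longrightarrow> (\<forall>n. g n \<noteq> \<infinity>) \<Longrightarrow> \<exists>N. \<forall>n\<ge>N. f n \<noteq> \<infinity>"
proof -
  assume "bigO f g" and g: "\<forall>n. g n \<noteq> \<infinity>"
  then obtain c N where cN: "\<forall>n\<ge>N. f n \<le> ennreal c * g n" unfolding bigO_def by blast
  have "\<forall>n\<ge>N. f n \<noteq> \<infinity>"
  proof (intro allI impI)
    fix n assume "N \<le> n"
    then have "f n \<le> ennreal c * g n" using cN by blast
    moreover have "ennreal c * g n \<noteq> \<infinity>" using g by (simp add: ennreal_mult_eq_top_iff)
    ultimately show "f n \<noteq> \<infinity>" by (metis infinity_ennreal_def neq_top_trans)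
  qed
  then show ?thesis by blast
qed

lemma cls_le_Fin_only_if: assumes "mono f" "cls f \<le> Fin" shows "\<forall>n. f n \<noteq> \<infinity>"
proof (rule ccontr)
  assume "\<not> (\<forall>n. f n \<noteq> \<infinity>)"
  then obtain n0 where n0: "f n0 = \<infinity>" by blast
  have inf_after: "\<forall>n\<ge>n0. f n = \<infinity>"
  proof (intro allI impI)
    fix n assume "n0 \<le> n" then have "f n0 \<le> f n" using assms(1) by (simp add: monoD)
    then show "f n = \<infinity>" using n0 by (metis infinity_ennreal_def top_unique)
  qed
  have fin: "\<exists>g. bigO f g \<and> (\<forall>n. g n \<noteq> \<infinity>)"
  proof (cases "cls f \<le> TwoExp")
    case True then obtain q where "bigO f (TExpF q)" using cls_le_TExp_iff by blast
    then show ?thesis by auto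
  next
    case False
    then have "cls f = Fin" using assms(2) by (cases "cls f") (auto simp: less_eq_cplx_def)
    then have "\<forall>n. f n \<noteq> \<infinity>" unfolding cls_def by (auto split: if_splits)
    then show ?thesis using n0 by blast
  qed
  then obtain g where "bigO f g" "\<forall>n. g n \<noteq> \<infinity>" by blast
  then obtain N where "\<forall>n\<ge>N. f n \<noteq> \<infinity>" using bigO_finite_eventually by blast
  then have "f (max N n0) \<noteq> \<infinity>" by simp
  moreover have "f (max N n0) = \<infinity>" using inf_after by simp
  ultimately show False by simp
qed

lemma cls_mono_gen:
  assumes "\<And>g. bigO f g \<Longrightarrow> bigO h g"
    and "(\<forall>n. f n \<noteq> \<infinity>) \<Longrightarrow> (\<forall>n. h n \<noteq> \<infinity>)"
    and "mono f"
  shows "cls h \<le> cls f"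
proof -
  show ?thesis
  proof (cases "cls f")
    case (Pol a)
    then have "bigO f (PolF a)" using cls_le_Pol_iff[of f a] by simp
    then have "bigO h (PolF a)" by (rule assms(1))
    then show ?thesis using Pol cls_le_Pol_iff by simp
  next
    case Exp
    then obtain q where "bigO f (ExpF q)" using cls_le_Exp_iff[of f] by auto
    then have "bigO h (ExpF q)" by (rule assms(1))
    then show ?thesis using Exp cls_le_Exp_iff by auto
  next
    case TwoExp
    then obtain q where "bigO f (TExpF q)" using cls_le_TExp_iff[of f] by auto
    then have "bigO h (TExpF q)" by (rule assms(1))
    then show ?thesis using TwoExp cls_le_TExp_iff by auto
  next
    case Fin
    then have "\<forall>n. f n \<noteq> \<infinity>" using cls_le_Fin_only_if[OF assms(3)] by simp
    then have "\<forall>n. h n \<noteq> \<infinity>" by (rule assms(2))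
    then show ?thesis using Fin cls_le_Fin_if by simp
  next
    case Omega then show ?thesis by (simp add: cplx_le_simps)
  qed
qed

lemma cls_mono: "(\<And>n. h n \<le> f n) \<Longrightarrow> mono f \<Longrightarrow> cls h \<le> cls f"
proof (rule cls_mono_gen)
  fix g assume "bigO f g" "\<And>n. h n \<le> f n"
  then show "bigO h g" using bigO_pointwise by blast
qed (auto simp: top_unique, metis top.extremum_uniqueI)

lemma cls_scale: "0 \<le> d \<Longrightarrow> mono f \<Longrightarrow> cls (\<lambda>n. ennreal d * f n) \<le> cls f"
  by (rule cls_mono_gen) (auto intro: bigO_scale simp: ennreal_mult_eq_top_iff)

lemma cls_const: "cls (\<lambda>n. ennreal c) \<le> Pol 0"
  unfolding cls_le_Pol_iff bigO_def by (auto intro!: exI[of _ c])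

lemma poly_sq_bound: "(x::real) \<le> x * x + y * y + 1"
proof -
  have "0 \<le> (x - 1/2) * (x - 1/2) + y * y" by simp
  then show ?thesis by (simp add: algebra_simps)
qed

lemma ExpF_mono: "\<forall>n. ExpF q1 n \<le> ExpF (q1 * q1 + q2 * q2 + 1) n"
  by (auto simp: poly_sq_bound intro!: powr_mono)

lemma TExpF_mono: "\<forall>n. TExpF q1 n \<le> TExpF (q1 * q1 + q2 * q2 + 1) n"
  by (auto simp: poly_sq_bound intro!: powr_mono)

lemma cls_add:
  assumes "cls f \<le> X" "cls g \<le> X" "mono f" "mono g"
  shows "cls (\<lambda>n. f n + g n) \<le> X"
proof (cases X)
  case (Pol a)
  then have "bigO f (PolF a)" "bigO g (PolF a)" using assms cls_le_Pol_iff by auto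
  then have "bigO (\<lambda>n. f n + g n) (PolF a)" by (rule bigO_add)
  then show ?thesis using Pol cls_le_Pol_iff by auto
next
  case Exp
  then obtain q1 q2 where q: "bigO f (ExpF q1)" "bigO g (ExpF q2)" using assms cls_le_Exp_iff by meson
  define q where "q = q1 * q1 + q2 * q2 + 1"
  have "\<forall>n. ExpF q1 n \<le> ExpF q n" unfolding q_def by (rule ExpF_mono)
  moreover have "\<forall>n. ExpF q2 n \<le> ExpF q n" unfolding q_def using ExpF_mono[of q2 q1] by (simp add: add.commute)
  ultimately have "bigO f (ExpF q)" "bigO g (ExpF q)" using q bigO_trans_le[where M=0] by auto
  then have "bigO (\<lambda>n. f n + g n) (ExpF q)" by (rule bigO_add)
  then show ?thesis using Exp cls_le_Exp_iff by auto
next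
  case TwoExp
  then obtain q1 q2 where q: "bigO f (TExpF q1)" "bigO g (TExpF q2)" using assms cls_le_TExp_iff by meson
  define q where "q = q1 * q1 + q2 * q2 + 1"
  have "\<forall>n. TExpF q1 n \<le> TExpF q n" unfolding q_def by (rule TExpF_mono)
  moreover have "\<forall>n. TExpF q2 n \<le> TExpF q n" unfolding q_def using TExpF_mono[of q2 q1] by (simp add: add.commute)
  ultimately have "bigO f (TExpF q)" "bigO g (TExpF q)" using q bigO_trans_le[where M=0] by auto
  then have "bigO (\<lambda>n. f n + g n) (TExpF q)" by (rule bigO_add)
  then show ?thesis using TwoExp cls_le_TExp_iff by auto
next
  case Fin
  then have "\<forall>n. f n \<noteq> \<infinity>" "\<forall>n. g n \<noteq> \<infinity>" using assms cls_le_Fin_only_if by blast+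
  then have "\<forall>n. f n + g n \<noteq> \<infinity>" by (simp add: ennreal_add_eq_top)
  then have "cls (\<lambda>n. f n + g n) \<le> Fin" by (rule cls_le_Fin_if)
  then show ?thesis using Fin by simp
next
  case Omega then show ?thesis by (simp add: cplx_le_simps)
qed

lemma mono_add: "mono (f::nat \<Rightarrow> ennreal) \<Longrightarrow> mono g \<Longrightarrow> mono (\<lambda>n. f n + g n)"
  by (auto simp: mono_def intro: add_mono)

lemma mono_sum: "(\<And>J. J \<in> A \<Longrightarrow> mono (g J)) \<Longrightarrow> mono (\<lambda>n. \<Sum>J\<in>A. (g J n :: ennreal))"
  by (auto simp: mono_def intro!: sum_mono)

lemma cls_sum:
  assumes "finite A" "\<And>J. J \<in> A \<Longrightarrow> cls (g J) \<le> X" "\<And>J. J \<in> A \<Longrightarrow> mono (g J)"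
  shows "cls (\<lambda>n. \<Sum>J\<in>A. g J n) \<le> X"
  using assms
proof (induction A rule: finite_induct)
  case empty
  have "cls (\<lambda>n. ennreal 0) \<le> Pol 0" by (rule cls_const)
  also have "Pol 0 \<le> X" by (rule cplx_le_simps)
  finally show ?case by simp
next
  case (insert x F)
  have "cls (\<lambda>n. g x n + (\<Sum>J\<in>F. g J n)) \<le> X"
    using insert by (intro cls_add mono_sum) auto
  then show ?case using insert by simp
qed




abbreviation E :: "('f,'v) adp set \<Rightarrow> (('f,'v) dpair \<times> ('f,'v) dpair) set" where
  "E P \<equiv> dg_edges P"

definition tail :: "('f,'v) adp set \<Rightarrow> ('f,'v) dpair \<Rightarrow> bool" where
  "tail P d \<longleftrightarrow> \<not> (\<exists>G. is_SCC P G \<and> (\<exists>g\<in>G. reaches P d g))"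

lemma finite_dp: "finite (dp \<alpha>)"
proof -
  let ?A = "SIGMA r : snd ` set_mset (rhs \<alpha>). poss r"
  have "dp \<alpha> \<subseteq> (\<lambda>(r, \<pi>). (lhs \<alpha>, Some (flat (subt_at r \<pi>)))) ` ?A"
  proof
    fix x assume "x \<in> dp \<alpha>"
    then obtain t p r \<pi> where x: "x = (lhs \<alpha>, Some t)" "(p, r) \<in># rhs \<alpha>" "sharp_sub t \<pi> r"
      unfolding dp_def by blast
    then have "(r, \<pi>) \<in> ?A" "t = flat (subt_at r \<pi>)"
      by (auto simp: sharp_sub_def annotated_at_def image_iff intro!: bexI[of _ "(p, r)"])
    then show "x \<in> (\<lambda>(r, \<pi>). (lhs \<alpha>, Some (flat (subt_at r \<pi>)))) ` ?A" using x by force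
  qed
  moreover have "finite ?A" by auto
  ultimately show ?thesis using finite_subset by blast
qed

lemma finite_dpP: "finite P \<Longrightarrow> finite (dpP P)"
  unfolding dpP_def dp_bot_def by (auto simp: finite_dp)

lemma edge_dpP: "(a, b) \<in> E P \<Longrightarrow> a \<in> dpP P \<and> b \<in> dpP P"
  by (auto simp: dg_edges_def dg_edge_def)

lemma trancl_dpP: "(a, b) \<in> (E P)\<^sup>+ \<Longrightarrow> a \<in> dpP P \<and> b \<in> dpP P"
  by (induction rule: trancl_induct) (auto dest: edge_dpP)

lemma strongly_conn_reach: "strongly_conn P G \<Longrightarrow> a \<in> G \<Longrightarrow> b \<in> G \<Longrightarrow> (a, b) \<in> (E P)\<^sup>*"
  unfolding strongly_conn_def
  by (meson Int_lower1 rtrancl_mono subsetD trancl_into_rtrancl)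

lemma restrict_path:
  assumes "(a, z) \<in> (E P)\<^sup>+" "(x, a) \<in> (E P)\<^sup>*" "(a, x) \<in> (E P)\<^sup>*" "(z, x) \<in> (E P)\<^sup>*"
    and G0: "G0 = {y. (x, y) \<in> (E P)\<^sup>* \<and> (y, x) \<in> (E P)\<^sup>*}"
  shows "(a, z) \<in> (E P \<inter> G0 \<times> G0)\<^sup>+"
  using assms(1-4)
proof (induction rule: trancl_induct)
  case (base y)
  then have "(x, y) \<in> (E P)\<^sup>*" by (meson rtrancl.rtrancl_into_rtrancl)
  then show ?case using base G0 by auto
next
  case (step y z)
  then have yx: "(y, x) \<in> (E P)\<^sup>*" by (meson converse_rtrancl_into_rtrancl)
  have xy: "(x, y) \<in> (E P)\<^sup>*" using step(1) step(4) by (meson rtrancl_trancl_trancl trancl_into_rtrancl)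
  have xz: "(x, z) \<in> (E P)\<^sup>*" using xy step(2) by (meson rtrancl.rtrancl_into_rtrancl)
  have "(a, y) \<in> (E P \<inter> G0 \<times> G0)\<^sup>+" using step(3)[OF step(4) step(5) yx] .
  moreover have "(y, z) \<in> E P \<inter> G0 \<times> G0" using step xy yx xz G0 by auto
  ultimately show ?case by (rule trancl_into_trancl)
qed

lemma cycle_SCC:
  assumes fin: "finite P" and cyc: "(x, x) \<in> (E P)\<^sup>+"
  shows "\<exists>G. is_SCC P G \<and> x \<in> G"
proof -
  define G0 where "G0 = {y. (x, y) \<in> (E P)\<^sup>* \<and> (y, x) \<in> (E P)\<^sup>*}"
  have x0: "x \<in> G0" unfolding G0_def by simp
  have sc: "strongly_conn P G0"
    unfolding strongly_conn_def
  proof (intro conjI ballI)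
    show "G0 \<subseteq> dpP P"
    proof
      fix y assume "y \<in> G0"
      then have "(x, y) \<in> (E P)\<^sup>*" unfolding G0_def by simp
      then show "y \<in> dpP P"
        using cyc trancl_dpP by (metis rtrancl_eq_or_trancl)
    qed
  next
    fix a b assume a: "a \<in> G0" and b: "b \<in> G0"
    have ax: "(a, x) \<in> (E P)\<^sup>*" "(x, a) \<in> (E P)\<^sup>*" using a unfolding G0_def by auto
    have bx: "(x, b) \<in> (E P)\<^sup>*" "(b, x) \<in> (E P)\<^sup>*" using b unfolding G0_def by auto
    have "(a, x) \<in> (E P)\<^sup>+" using ax(1) cyc by (rule rtrancl_trancl_trancl)
    then have "(a, b) \<in> (E P)\<^sup>+" using bx(1) by (rule trancl_rtrancl_trancl)
    then show "(a, b) \<in> (E P \<inter> G0 \<times> G0)\<^sup>+"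
      using restrict_path[OF _ ax(2) ax(1) bx(2) G0_def] by blast
  qed
  let ?F = "{G'. G0 \<subseteq> G' \<and> strongly_conn P G'}"
  have "?F \<subseteq> Pow (dpP P)" by (auto simp: strongly_conn_def)
  then have "finite ?F" using finite_dpP[OF fin] by (meson finite_Pow_iff finite_subset)
  moreover have "G0 \<in> ?F" using sc by simp
  ultimately obtain m where m: "m \<in> ?F" "G0 \<subseteq> m" "\<forall>b\<in>?F. m \<subseteq> b \<longrightarrow> m = b"
    using finite_has_maximal2[of ?F G0] by blast
  have "is_SCC P m"
    unfolding is_SCC_def using m by auto
  then show ?thesis using m x0 by blast
qed

lemma tail_succ: "tail P d \<Longrightarrow> (d, e) \<in> (E P)\<^sup>* \<Longrightarrow> tail P e"
  unfolding tail_def reaches_def by (meson rtrancl_trans)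

lemma tail_no_cycle: "finite P \<Longrightarrow> tail P d \<Longrightarrow> (d, d) \<notin> (E P)\<^sup>+"
  using cycle_SCC unfolding tail_def reaches_def by blast

definition succs :: "('f,'v) adp set \<Rightarrow> ('f,'v) dpair \<Rightarrow> ('f,'v) dpair set" where
  "succs P d = {e. (d, e) \<in> (E P)\<^sup>+}"

lemma succs_sub: "succs P d \<subseteq> dpP P"
  unfolding succs_def using trancl_dpP by blast

lemma card_succs_less:
  assumes fin: "finite P" and t: "tail P d" and de: "(d, e) \<in> E P"
  shows "card (succs P e) < card (succs P d)"
proof (rule psubset_card_mono)
  show "finite (succs P d)" using succs_sub finite_dpP[OF fin] by (rule finite_subset)
  have te: "tail P e" using t de tail_succ by blast
  have "succs P e \<subseteq> succs P d" unfolding succs_def using de by auto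
  moreover have "e \<in> succs P d" unfolding succs_def using de by auto
  moreover have "e \<notin> succs P e" unfolding succs_def using tail_no_cycle[OF fin te] by auto
  ultimately show "succs P e \<subset> succs P d" by blast
qed

definition dpath :: "('f,'v) adp set \<Rightarrow> ('f,'v) dpair list \<Rightarrow> bool" where
  "dpath P c \<longleftrightarrow> set c \<subseteq> dpP P \<and> (\<forall>i. Suc i < length c \<longrightarrow> (c ! i, c ! Suc i) \<in> E P)"

lemma dpath_Nil[simp]: "dpath P []"
  by (simp add: dpath_def)

lemma dpath_snoc:
  assumes "dpath P c" "d \<in> dpP P" "c \<noteq> [] \<longrightarrow> (last c, d) \<in> E P"
  shows "dpath P (c @ [d])"
  using assms unfolding dpath_def
proof (intro conjI allI impI)
  fix i assume a: "set c \<subseteq> dpP P \<and> (\<forall>i. Suc i < length c \<longrightarrow> (c ! i, c ! Suc i) \<in> E P)"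
    "d \<in> dpP P" "c \<noteq> [] \<longrightarrow> (last c, d) \<in> E P" "Suc i < length (c @ [d])"
  show "((c @ [d]) ! i, (c @ [d]) ! Suc i) \<in> E P"
  proof (cases "Suc i < length c")
    case True then show ?thesis using a by (simp add: nth_append)
  next
    case False
    then have "Suc i = length c" using a(4) by simp
    then have "c \<noteq> []" by auto
    moreover have "length c - 1 = i" using \<open>Suc i = length c\<close> by simp
    ultimately have "last c = c ! i" by (simp add: last_conv_nth)
    then show ?thesis using a \<open>Suc i = length c\<close> \<open>c \<noteq> []\<close> by (simp add: nth_append)
  qed
qed (use assms in \<open>auto simp: dpath_def\<close>)

lemma dpath_reach:
  assumes "dpath P c" "i \<le> j" "j < length c"
  shows "(c ! i, c ! j) \<in> (E P)\<^sup>*"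
  using assms(2,3)
proof (induction j)
  case 0 then show ?case by simp
next
  case (Suc j)
  show ?case
  proof (cases "i = Suc j")
    case True then show ?thesis by simp
  next
    case False
    then have "(c ! i, c ! j) \<in> (E P)\<^sup>*" using Suc by auto
    moreover have "(c ! j, c ! Suc j) \<in> E P" using assms(1) Suc(3) unfolding dpath_def by auto
    ultimately show ?thesis by auto
  qed
qed

lemma dpath_reach_last:
  assumes "dpath P c" "x \<in> set c"
  shows "(x, last c) \<in> (E P)\<^sup>*"
proof -
  obtain i where i: "i < length c" "x = c ! i" using assms(2) by (auto simp: in_set_conv_nth)
  then have "c \<noteq> []" by auto
  then have "last c = c ! (length c - 1)" by (simp add: last_conv_nth)
  then show ?thesis using dpath_reach[OF assms(1), of i "length c - 1"] i by auto
qed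

lemma dpath_comparable:
  assumes "dpath P c" "x \<in> set c" "y \<in> set c"
  shows "(x, y) \<in> (E P)\<^sup>* \<or> (y, x) \<in> (E P)\<^sup>*"
proof -
  obtain i where i: "i < length c" "x = c ! i" using assms(2) by (auto simp: in_set_conv_nth)
  obtain j where j: "j < length c" "y = c ! j" using assms(3) by (auto simp: in_set_conv_nth)
  show ?thesis
  proof (cases "i \<le> j")
    case True then show ?thesis using dpath_reach[OF assms(1) True j(1)] i j by simp
  next
    case False then show ?thesis using dpath_reach[OF assms(1), of j i] i j by simp
  qed
qed

lemma chain_prefix_prop:
  assumes G: "is_SCC P G" and c: "dpath P c"
    and reach: "c \<noteq> [] \<Longrightarrow> \<exists>g\<in>G. (last c, g) \<in> (E P)\<^sup>*"
  shows "prefix_prop P G (set c \<union> G)"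
proof -
  have sc: "strongly_conn P G" using G by (simp add: is_SCC_def)
  have cG: "\<forall>x\<in>set c. \<forall>g\<in>G. (x, g) \<in> (E P)\<^sup>*"
  proof (intro ballI)
    fix x g assume x: "x \<in> set c" and g: "g \<in> G"
    then have ne: "c \<noteq> []" by auto
    obtain g0 where g0: "g0 \<in> G" "(last c, g0) \<in> (E P)\<^sup>*" using reach[OF ne] by blast
    have "(x, last c) \<in> (E P)\<^sup>*" using dpath_reach_last[OF c x] .
    moreover have "(g0, g) \<in> (E P)\<^sup>*" using strongly_conn_reach[OF sc g0(1) g] .
    ultimately show "(x, g) \<in> (E P)\<^sup>*" using g0(2) by (meson rtrancl_trans)
  qed
  show ?thesis
    unfolding prefix_prop_def reaches_def
  proof (intro conjI ballI)
    show "set c \<union> G \<subseteq> dpP P" using c sc by (auto simp: dpath_def strongly_conn_def)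
  next
    fix a assume "a \<in> set c \<union> G"
    then show "\<exists>b\<in>G. (a, b) \<in> (E P)\<^sup>*"
    proof
      assume "a \<in> set c"
      then have "c \<noteq> []" by auto
      then obtain g where "g \<in> G" by (meson reach)
      then show ?thesis using cG \<open>a \<in> set c\<close> by blast
    qed auto
  next
    fix a b assume "a \<in> set c \<union> G" "b \<in> set c \<union> G"
    then show "(a, b) \<in> (E P)\<^sup>* \<or> (b, a) \<in> (E P)\<^sup>*"
      using cG dpath_comparable[OF c] strongly_conn_reach[OF sc] by blast
  qed
qed

lemma extend_prefix:
  assumes fin: "finite P" and G: "is_SCC P G" and X: "prefix_prop P G X" "G \<subseteq> X"
  shows "\<exists>J. X \<subseteq> J \<and> SCC_prefix P J"
proof -
  let ?F = "{J. X \<subseteq> J \<and> prefix_prop P G J}"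
  have "?F \<subseteq> Pow (dpP P)" by (auto simp: prefix_prop_def)
  then have "finite ?F" using finite_dpP[OF fin] by (meson finite_Pow_iff finite_subset)
  moreover have "X \<in> ?F" using X by simp
  ultimately obtain m where m: "m \<in> ?F" "X \<subseteq> m" "\<forall>b\<in>?F. m \<subseteq> b \<longrightarrow> m = b"
    using finite_has_maximal2[of ?F X] by blast
  have "SCC_prefix P m"
    unfolding SCC_prefix_def
  proof (intro exI[of _ G] conjI)
    show "is_SCC P G" by (rule G)
    show "G \<subseteq> m" using X m by blast
    show "prefix_prop P G m" using m by blast
    show "\<not> (\<exists>J'. m \<subset> J' \<and> prefix_prop P G J')"
      using m by blast
  qed
  then show ?thesis using m by blast
qed

lemma finite_SCC_prefixes: "finite P \<Longrightarrow> finite {J. SCC_prefix P J}"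
proof -
  assume fin: "finite P"
  have "{J. SCC_prefix P J} \<subseteq> Pow (dpP P)" by (auto simp: SCC_prefix_def prefix_prop_def)
  then show ?thesis using finite_dpP[OF fin] by (meson finite_Pow_iff finite_subset)
qed




definition res :: "('f,'v) aterm \<Rightarrow> pos \<Rightarrow> ('f,'v) adp \<Rightarrow> ('v \<Rightarrow> ('f,'v) aterm) \<Rightarrow> ('f,'v) aterm \<Rightarrow> ('f,'v) aterm" where
  "res s \<pi> \<alpha> \<sigma> r = (if flag \<alpha> \<and> annotated_at s \<pi> then replace_at s \<pi> (tsubst r \<sigma>)
      else if flag \<alpha> \<and> \<not> annotated_at s \<pi> then replace_at s \<pi> (tsubst (flat r) \<sigma>)
      else if \<not> flag \<alpha> \<and> annotated_at s \<pi> then flat_above \<pi> (replace_at s \<pi> (tsubst r \<sigma>))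
      else flat_above \<pi> (replace_at s \<pi> (tsubst (flat r) \<sigma>)))"

lemma adp_result_res: "adp_result s \<pi> \<alpha> \<sigma> = image_mset (\<lambda>(p, r). (p, res s \<pi> \<alpha> \<sigma> r)) (rhs \<alpha>)"
  unfolding adp_result_def res_def by simp

lemma flat_res: "flat (res s \<pi> \<alpha> \<sigma> r) = replace_at (flat s) \<pi> (tsubst (flat r) (flat \<circ> \<sigma>))"
  unfolding res_def by (auto simp: flat_replace_at flat_tsubst)

lemma listing_exists:
  "mset xs = image_mset g M \<Longrightarrow> \<exists>L. mset L = M \<and> map g L = xs"
proof (induction xs arbitrary: M)
  case Nil then show ?case by auto
next
  case (Cons x xs)
  then have "x \<in># image_mset g M" by (metis list.set_intros(1) set_mset_mset)
  then obtain m where m: "m \<in># M" "g m = x" by auto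
  then obtain M' where M': "M = add_mset m M'" by (meson mset_add)
  then have "mset xs = image_mset g M'" using Cons.prems m by simp
  then obtain L' where "mset L' = M'" "map g L' = xs" using Cons.IH by blast
  then show ?case using M' m by (intro exI[of _ "m # L'"]) auto
qed

definition child_ok :: "('f,'v) ctree \<Rightarrow> nat list \<Rightarrow> (real \<times> ('f,'v) aterm) list \<Rightarrow> bool" where
  "child_ok T v L \<longleftrightarrow> mset L = rhs (crule T v) \<and> length L = nch T v \<and>
     (\<forall>i < nch T v. cprob T (v @ [i]) / cprob T v = fst (L ! i) \<and>
        cterm T (v @ [i]) = res (cterm T v) (cpos T v) (crule T v) (csub T v) (snd (L ! i)))"

definition chL :: "('f,'v) ctree \<Rightarrow> nat list \<Rightarrow> (real \<times> ('f,'v) aterm) list" where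
  "chL T v = (SOME L. child_ok T v L)"

lemma chain_tree_step:
  assumes "chain_tree P T" "v \<in> cnodes T" "0 < nch T v"
  shows "adp_redex P (cterm T v) (cpos T v) (crule T v) (csub T v)"
    "mset (map (\<lambda>i. (cprob T (v @ [i]) / cprob T v, cterm T (v @ [i]))) [0..<nch T v])
          = adp_result (cterm T v) (cpos T v) (crule T v) (csub T v)"
proof -
  have "\<forall>v \<in> cnodes T. 0 < nch T v \<longrightarrow>
        adp_redex P (cterm T v) (cpos T v) (crule T v) (csub T v) \<and>
        mset (map (\<lambda>i. (cprob T (v @ [i]) / cprob T v, cterm T (v @ [i]))) [0..<nch T v])
          = adp_result (cterm T v) (cpos T v) (crule T v) (csub T v)"
    using assms(1) unfolding chain_tree_def by (elim conjE)
  then show "adp_redex P (cterm T v) (cpos T v) (crule T v) (csub T v)"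
    "mset (map (\<lambda>i. (cprob T (v @ [i]) / cprob T v, cterm T (v @ [i]))) [0..<nch T v])
          = adp_result (cterm T v) (cpos T v) (crule T v) (csub T v)"
    using assms(2,3) by auto
qed

lemma chain_tree_D:
  assumes "chain_tree P T"
  shows "[] \<in> cnodes T" "cprob T [] = 1" "\<forall>w \<in> cnodes T. w \<noteq> [] \<longrightarrow> butlast w \<in> cnodes T"
    "\<forall>v \<in> cnodes T. \<forall>i. v @ [i] \<in> cnodes T \<longleftrightarrow> i < nch T v"
proof -
  note a = assms[unfolded chain_tree_def]
  show "[] \<in> cnodes T" using a by (rule conjunct1)
  show "cprob T [] = 1" using a[THEN conjunct2] by (rule conjunct1)
  show "\<forall>w \<in> cnodes T. w \<noteq> [] \<longrightarrow> butlast w \<in> cnodes T" using a[THEN conjunct2, THEN conjunct2] by (rule conjunct1)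
  show "\<forall>v \<in> cnodes T. \<forall>i. v @ [i] \<in> cnodes T \<longleftrightarrow> i < nch T v" using a[THEN conjunct2, THEN conjunct2, THEN conjunct2] by (rule conjunct1)
qed

lemma child_ok_ex:
  assumes "chain_tree P T" "v \<in> cnodes T" "0 < nch T v"
  shows "child_ok T v (chL T v)"
proof -
  let ?g = "\<lambda>(p, r). (p, res (cterm T v) (cpos T v) (crule T v) (csub T v) r)"
  have "mset (map (\<lambda>i. (cprob T (v @ [i]) / cprob T v, cterm T (v @ [i]))) [0..<nch T v])
        = image_mset ?g (rhs (crule T v))"
    using chain_tree_step(2)[OF assms] by (simp add: adp_result_res)
  then obtain L where L: "mset L = rhs (crule T v)"
    "map ?g L = map (\<lambda>i. (cprob T (v @ [i]) / cprob T v, cterm T (v @ [i]))) [0..<nch T v]"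
    using listing_exists by blast
  have "length (map ?g L) = length (map (\<lambda>i. (cprob T (v @ [i]) / cprob T v, cterm T (v @ [i]))) [0..<nch T v])"
    by (simp only: L(2))
  then have len: "length L = nch T v" by simp
  have "\<forall>i < nch T v. cprob T (v @ [i]) / cprob T v = fst (L ! i) \<and>
        cterm T (v @ [i]) = res (cterm T v) (cpos T v) (crule T v) (csub T v) (snd (L ! i))"
  proof (intro allI impI)
    fix i assume i: "i < nch T v"
    have "map ?g L ! i = map (\<lambda>i. (cprob T (v @ [i]) / cprob T v, cterm T (v @ [i]))) [0..<nch T v] ! i"
      by (simp only: L(2))
    also have "\<dots> = (cprob T (v @ [i]) / cprob T v, cterm T (v @ [i]))" using i by simp
    finally have "?g (L ! i) = (cprob T (v @ [i]) / cprob T v, cterm T (v @ [i]))" using i len by simp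
    then show "cprob T (v @ [i]) / cprob T v = fst (L ! i) \<and>
        cterm T (v @ [i]) = res (cterm T v) (cpos T v) (crule T v) (csub T v) (snd (L ! i))"
      using i len by (cases "L ! i") auto
  qed
  then have "child_ok T v L" using L len unfolding child_ok_def by blast
  then show ?thesis unfolding chL_def by (rule someI)
qed

lemma chain_tree_parent:
  assumes "chain_tree P T" "v @ [i] \<in> cnodes T"
  shows "v \<in> cnodes T" "i < nch T v"
proof -
  have "butlast (v @ [i]) \<in> cnodes T" using assms chain_tree_D(3)[OF assms(1)] by blast
  then show v: "v \<in> cnodes T" by simp
  show "i < nch T v" using assms v chain_tree_D(4)[OF assms(1)] by blast
qed

lemma NF_lhs_eq: "lhs ` P1 = lhs ` P2 \<Longrightarrow> NF P1 = NF P2"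
proof -
  assume a: "lhs ` P1 = lhs ` P2"
  have 1: "\<exists>\<beta>\<in>P2. lhs \<beta> = lhs \<alpha>" if "\<alpha> \<in> P1" for \<alpha>
  proof -
    have "lhs \<alpha> \<in> lhs ` P2" using a that by blast
    then show ?thesis by force
  qed
  have 2: "\<exists>\<beta>\<in>P1. lhs \<beta> = lhs \<alpha>" if "\<alpha> \<in> P2" for \<alpha>
  proof -
    have "lhs \<alpha> \<in> lhs ` P1" using a that by blast
    then show ?thesis by force
  qed
  show ?thesis
  proof
    fix u show "NF P1 u = NF P2 u"
      unfolding NF_def using 1 2 by metis
  qed
qed

section \<open>Generic re-annotation of chain trees\<close>

fun gterm_r :: "('f,'v) ctree \<Rightarrow> ('f,'v) aterm \<Rightarrow> (nat list \<Rightarrow> ('f,'v) adp) \<Rightarrow>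
    (nat list \<Rightarrow> (real \<times> ('f,'v) aterm) list) \<Rightarrow> nat list \<Rightarrow> ('f,'v) aterm" where
  "gterm_r T t0 \<beta> Lb [] = t0"
| "gterm_r T t0 \<beta> Lb (i # rv) = res (gterm_r T t0 \<beta> Lb rv) (cpos T (rev rv)) (\<beta> (rev rv)) (csub T (rev rv))
      (snd (Lb (rev rv) ! i))"

definition gterm where "gterm T t0 \<beta> Lb v = gterm_r T t0 \<beta> Lb (rev v)"

lemma gterm_Nil[simp]: "gterm T t0 \<beta> Lb [] = t0"
  by (simp add: gterm_def)

lemma gterm_snoc[simp]: "gterm T t0 \<beta> Lb (v @ [i]) = res (gterm T t0 \<beta> Lb v) (cpos T v) (\<beta> v) (csub T v) (snd (Lb v ! i))"
  by (simp add: gterm_def)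

definition gtree where "gtree T t0 \<beta> Lb = T\<lparr>cterm := gterm T t0 \<beta> Lb, crule := \<beta>\<rparr>"

definition reann_ok where
  "reann_ok PA PB T t0 \<beta> Lb \<longleftrightarrow> chain_tree PA T \<and> flat t0 = flat (cterm T []) \<and> lhs ` PA = lhs ` PB \<and>
    (\<forall>v\<in>cnodes T. 0 < nch T v \<longrightarrow> \<beta> v \<in> PB \<and> lhs (\<beta> v) = lhs (crule T v) \<and>
       flag (\<beta> v) = flag (crule T v) \<and> mset (Lb v) = rhs (\<beta> v) \<and> length (Lb v) = nch T v \<and>
       (\<forall>i < nch T v. fst (Lb v ! i) = fst (chL T v ! i) \<and> flat (snd (Lb v ! i)) = flat (snd (chL T v ! i))))"

lemma gterm_flat:
  assumes ok: "reann_ok PA PB T t0 \<beta> Lb" and v: "v \<in> cnodes T"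
  shows "flat (gterm T t0 \<beta> Lb v) = flat (cterm T v)"
  using v
proof (induction v rule: rev_induct)
  case Nil then show ?case using ok by (simp add: reann_ok_def)
next
  case (snoc i v)
  have ct: "chain_tree PA T" using ok by (simp add: reann_ok_def)
  have v: "v \<in> cnodes T" and i: "i < nch T v" using chain_tree_parent[OF ct snoc.prems] by auto
  then have n: "0 < nch T v" by simp
  have co: "child_ok T v (chL T v)" by (rule child_ok_ex[OF ct v n])
  have IH: "flat (gterm T t0 \<beta> Lb v) = flat (cterm T v)" using snoc.IH v by simp
  have fl: "flat (snd (Lb v ! i)) = flat (snd (chL T v ! i))" using ok v n i by (simp add: reann_ok_def)
  have "cterm T (v @ [i]) = res (cterm T v) (cpos T v) (crule T v) (csub T v) (snd (chL T v ! i))"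
    using co i by (simp add: child_ok_def)
  then show ?case using IH fl by (simp add: flat_res)
qed

lemma gtree_chain_tree:
  assumes ok: "reann_ok PA PB T t0 \<beta> Lb"
  shows "chain_tree PB (gtree T t0 \<beta> Lb)"
proof -
  have ct: "chain_tree PA T" using ok by (simp add: reann_ok_def)
  have NFeq: "NF PB = NF PA" using ok NF_lhs_eq by (metis reann_ok_def)
  let ?T' = "gtree T t0 \<beta> Lb"
  have step: "adp_redex PB (cterm ?T' v) (cpos ?T' v) (crule ?T' v) (csub ?T' v) \<and>
        mset (map (\<lambda>i. (cprob ?T' (v @ [i]) / cprob ?T' v, cterm ?T' (v @ [i]))) [0..<nch ?T' v])
          = adp_result (cterm ?T' v) (cpos ?T' v) (crule ?T' v) (csub ?T' v)"
    if v: "v \<in> cnodes ?T'" and n: "0 < nch ?T' v" for v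
  proof
    have v': "v \<in> cnodes T" and n': "0 < nch T v" using v n by (auto simp: gtree_def)
    have b: "\<beta> v \<in> PB" "lhs (\<beta> v) = lhs (crule T v)" "flag (\<beta> v) = flag (crule T v)"
      "mset (Lb v) = rhs (\<beta> v)" "length (Lb v) = nch T v"
      "\<forall>i < nch T v. fst (Lb v ! i) = fst (chL T v ! i) \<and> flat (snd (Lb v ! i)) = flat (snd (chL T v ! i))"
      using ok v' n' unfolding reann_ok_def by blast+
    have red: "adp_redex PA (cterm T v) (cpos T v) (crule T v) (csub T v)"
      by (rule chain_tree_step(1)[OF ct v' n'])
    have co: "child_ok T v (chL T v)" by (rule child_ok_ex[OF ct v' n'])
    have fl: "flat (gterm T t0 \<beta> Lb v) = flat (cterm T v)" by (rule gterm_flat[OF ok v'])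
    have pos: "cpos T v \<in> poss (cterm T v)" using red by (simp add: adp_redex_def)
    then have pos': "cpos T v \<in> poss (gterm T t0 \<beta> Lb v)"
      by (metis fl poss_flat)
    have "flat (subt_at (gterm T t0 \<beta> Lb v) (cpos T v)) = flat (subt_at (cterm T v) (cpos T v))"
      using fl pos pos' by (metis subt_at_flat)
    then show "adp_redex PB (cterm ?T' v) (cpos ?T' v) (crule ?T' v) (csub ?T' v)"
      using red b(1,2) pos' NFeq unfolding adp_redex_def gtree_def by simp
    have "map (\<lambda>i. (cprob T (v @ [i]) / cprob T v, gterm T t0 \<beta> Lb (v @ [i]))) [0..<nch T v]
          = map (\<lambda>(p, r). (p, res (gterm T t0 \<beta> Lb v) (cpos T v) (\<beta> v) (csub T v) r)) (Lb v)"
    proof (rule nth_equalityI)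
      show "length (map (\<lambda>i. (cprob T (v @ [i]) / cprob T v, gterm T t0 \<beta> Lb (v @ [i]))) [0..<nch T v]) =
            length (map (\<lambda>(p, r). (p, res (gterm T t0 \<beta> Lb v) (cpos T v) (\<beta> v) (csub T v) r)) (Lb v))"
        using b(5) by simp
    next
      fix i assume "i < length (map (\<lambda>i. (cprob T (v @ [i]) / cprob T v, gterm T t0 \<beta> Lb (v @ [i]))) [0..<nch T v])"
      then have i: "i < nch T v" by simp
      have "cprob T (v @ [i]) / cprob T v = fst (Lb v ! i)" using co i b(6) by (simp add: child_ok_def)
      then show "map (\<lambda>i. (cprob T (v @ [i]) / cprob T v, gterm T t0 \<beta> Lb (v @ [i]))) [0..<nch T v] ! i =
            map (\<lambda>(p, r). (p, res (gterm T t0 \<beta> Lb v) (cpos T v) (\<beta> v) (csub T v) r)) (Lb v) ! i"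
        using i b(5) by (cases "Lb v ! i") simp
    qed
    then show "mset (map (\<lambda>i. (cprob ?T' (v @ [i]) / cprob ?T' v, cterm ?T' (v @ [i]))) [0..<nch ?T' v])
          = adp_result (cterm ?T' v) (cpos ?T' v) (crule ?T' v) (csub ?T' v)"
      using b(4) unfolding gtree_def adp_result_res by (simp add: mset_map)
  qed
  show ?thesis
    using ct step unfolding chain_tree_def by (auto simp: gtree_def)
qed

lemma gtree_simps[simp]:
  "cnodes (gtree T t0 \<beta> Lb) = cnodes T" "cprob (gtree T t0 \<beta> Lb) = cprob T"
  "nch (gtree T t0 \<beta> Lb) = nch T" "cpos (gtree T t0 \<beta> Lb) = cpos T"
  "csub (gtree T t0 \<beta> Lb) = csub T" "crule (gtree T t0 \<beta> Lb) = \<beta>"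
  "cterm (gtree T t0 \<beta> Lb) = gterm T t0 \<beta> Lb"
  by (simp_all add: gtree_def)




section \<open>Annotated positions of rewrite results\<close>

lemma ann_tsubst_mono:
  "flat a = flat b \<Longrightarrow> (\<forall>q. annotated_at a q \<longrightarrow> annotated_at b q) \<Longrightarrow>
   annotated_at (tsubst a \<sigma>) q \<Longrightarrow> annotated_at (tsubst b \<sigma>) q"
proof (induction a arbitrary: b q)
  case (Var x)
  then show ?case by (cases b) auto
next
  case (Fun f c ts)
  obtain c' ts' where b: "b = Fun f c' ts'" and m: "map flat ts = map flat ts'"
    using Fun.prems(1) by (cases b) auto
  have len: "length ts' = length ts" using m by (metis length_map)
  have fl: "\<forall>i < length ts. flat (ts ! i) = flat (ts' ! i)"
    using m len by (metis nth_map)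
  show ?case
  proof (cases q)
    case Nil
    then have "c" using Fun.prems(3) by simp
    then have "annotated_at (Fun f c ts) []" by simp
    then have "annotated_at (Fun f c' ts') []" using Fun.prems(2) b by blast
    then show ?thesis using b Nil by simp
  next
    case (Cons i q')
    then have i: "i < length ts" and a: "annotated_at (tsubst (ts ! i) \<sigma>) q'" using Fun.prems(3) by auto
    have "\<forall>q. annotated_at (ts ! i) q \<longrightarrow> annotated_at (ts' ! i) q"
      using Fun.prems(2) b i by (metis annotated_at_Fun_Cons)
    then have "annotated_at (tsubst (ts' ! i) \<sigma>) q'"
      using Fun.IH[OF nth_mem[OF i] fl[rule_format, OF i] _ a] by blast
    then show ?thesis using b Cons i len by simp
  qed
qed

lemma ann_res:
  assumes "\<pi> \<in> poss s"
  shows "annotated_at (res s \<pi> \<alpha> \<sigma> r) q \<longleftrightarrow>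
    (\<not> (\<exists>w. q = \<pi> @ w) \<and> annotated_at s q \<and> (flag \<alpha> \<or> \<not> (\<exists>w. w \<noteq> [] \<and> \<pi> = q @ w))) \<or>
    (\<exists>w. q = \<pi> @ w \<and> annotated_at (if annotated_at s \<pi> then tsubst r \<sigma> else tsubst (flat r) \<sigma>) w)"
proof -
  define U where "U = (if annotated_at s \<pi> then tsubst r \<sigma> else tsubst (flat r) \<sigma>)"
  have pX: "\<pi> \<in> poss (replace_at s \<pi> U)" using poss_replace_at_above[OF assms, of "[]" U] by simp
  have X: "annotated_at (replace_at s \<pi> U) q \<longleftrightarrow>
      (\<not> (\<exists>w. q = \<pi> @ w) \<and> annotated_at s q) \<or> (\<exists>w. q = \<pi> @ w \<and> annotated_at U w)"
  proof (cases "\<exists>w. q = \<pi> @ w")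
    case True
    then obtain w where w: "q = \<pi> @ w" by blast
    show ?thesis using annotated_at_replace_at_above[OF assms, of U w] w by auto
  next
    case False
    show ?thesis using annotated_at_replace_at_other[OF assms False, of U] False by simp
  qed
  have r: "res s \<pi> \<alpha> \<sigma> r = (if flag \<alpha> then replace_at s \<pi> U else flat_above \<pi> (replace_at s \<pi> U))"
    unfolding res_def U_def by simp
  have nstrict: "\<not> (\<exists>w'. w' \<noteq> [] \<and> \<pi> = (\<pi> @ w) @ w')" for w by simp
  show ?thesis
  proof (cases "flag \<alpha>")
    case True then show ?thesis using X r U_def by simp
  next
    case False
    have "annotated_at (res s \<pi> \<alpha> \<sigma> r) q \<longleftrightarrow>
        annotated_at (replace_at s \<pi> U) q \<and> \<not> (\<exists>w. w \<noteq> [] \<and> \<pi> = q @ w)"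
      using r False annotated_at_flat_above[OF pX] by simp
    also have "\<dots> \<longleftrightarrow> (\<not> (\<exists>w. q = \<pi> @ w) \<and> annotated_at s q \<and> \<not> (\<exists>w. w \<noteq> [] \<and> \<pi> = q @ w)) \<or>
        (\<exists>w. q = \<pi> @ w \<and> annotated_at U w)"
      unfolding X using nstrict by blast
    finally show ?thesis using False U_def by simp
  qed
qed

lemma res_ann_mono:
  assumes pos: "\<pi> \<in> poss s" and fs: "flat s' = flat s" and as: "\<forall>q. annotated_at s' q \<longrightarrow> annotated_at s q"
    and fl: "flag \<alpha>' = flag \<alpha>" and fr: "flat r' = flat r" and ar: "\<forall>q. annotated_at r' q \<longrightarrow> annotated_at r q"
    and a: "annotated_at (res s' \<pi> \<alpha>' \<sigma> r') q"
  shows "annotated_at (res s \<pi> \<alpha> \<sigma> r) q"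
proof -
  have pos': "\<pi> \<in> poss s'" using pos fs by (metis poss_flat)
  have U: "annotated_at (if annotated_at s \<pi> then tsubst r \<sigma> else tsubst (flat r) \<sigma>) w"
    if "annotated_at (if annotated_at s' \<pi> then tsubst r' \<sigma> else tsubst (flat r') \<sigma>) w" for w
  proof (cases "annotated_at s' \<pi>")
    case True
    then have "annotated_at s \<pi>" using as by blast
    then show ?thesis using that True ann_tsubst_mono[OF fr ar] by simp
  next
    case False
    show ?thesis
    proof (cases "annotated_at s \<pi>")
      case True
      have "annotated_at (tsubst (flat r) \<sigma>) w" using that False fr by simp
      then show ?thesis using True ann_tsubst_mono[of "flat r" r] flat_not_annotated by (simp; blast)
    next
      case False2: False
      then show ?thesis using that False fr by simp
    qed
  qed
  show ?thesis using a unfolding ann_res[OF pos] ann_res[OF pos'] using as fl U by blast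
qed

definition gJ :: "('f,'v) adp set \<Rightarrow> ('f,'v) dpair set \<Rightarrow> ('f,'v) adp \<Rightarrow> real \<times> ('f,'v) aterm \<Rightarrow> real \<times> ('f,'v) aterm" where
  "gJ P J \<alpha> = (\<lambda>(p, r). (p, sharp_Phi (defs P) (Phi J (lhs \<alpha>) r) r))"

lemma restr_simps[simp]: "lhs (restr P J \<alpha>) = lhs \<alpha>" "flag (restr P J \<alpha>) = flag \<alpha>"
  "rhs (restr P J \<alpha>) = image_mset (gJ P J \<alpha>) (rhs \<alpha>)"
  by (simp_all add: restr_def gJ_def)

lemma fst_gJ[simp]: "fst (gJ P J \<alpha> x) = fst x"
  by (cases x) (simp add: gJ_def)

lemma sharp_Phi_at_flat: "flat (sharp_Phi_at D \<Phi> p t) = flat t"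
proof (induction t arbitrary: p)
  case (Var x) then show ?case by simp
next
  case (Fun f b ts)
  have "map (\<lambda>i. flat (sharp_Phi_at D \<Phi> (p @ [i]) (ts ! i))) [0..<length ts] = map flat ts"
    by (rule nth_equalityI) (auto simp: Fun.IH)
  then show ?case by (simp add: comp_def)
qed

lemma flat_gJ[simp]: "flat (snd (gJ P J \<alpha> x)) = flat (snd x)"
  by (cases x) (simp add: gJ_def sharp_Phi_def sharp_Phi_at_flat)

lemma sharp_Phi_at_ann1: "annotated_at (sharp_Phi_at D \<Phi> p t) q \<Longrightarrow> p @ q \<in> \<Phi>"
proof (induction t arbitrary: p q)
  case (Var x) then show ?case by simp
next
  case (Fun f b ts)
  show ?case
  proof (cases q)
    case Nil then show ?thesis using Fun.prems by simp
  next
    case (Cons i q')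
    then have i: "i < length ts" and a: "annotated_at (sharp_Phi_at D \<Phi> (p @ [i]) (ts ! i)) q'"
      using Fun.prems by auto
    show ?thesis using Fun.IH[OF nth_mem[OF i] a] Cons by simp
  qed
qed

lemma sharp_Phi_at_ann2: "annotated_at t q \<Longrightarrow> p @ q \<in> \<Phi> \<Longrightarrow> annotated_at (sharp_Phi_at D \<Phi> p t) q"
proof (induction t arbitrary: p q)
  case (Var x) then show ?case by simp
next
  case (Fun f b ts)
  show ?case
  proof (cases q)
    case Nil then show ?thesis using Fun.prems by simp
  next
    case (Cons i q')
    then have i: "i < length ts" and a: "annotated_at (ts ! i) q'"
      using Fun.prems by auto
    have "annotated_at (sharp_Phi_at D \<Phi> (p @ [i]) (ts ! i)) q'"
      using Fun.IH[OF nth_mem[OF i] a] Fun.prems(2) Cons by simp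
    then show ?thesis using Cons i by simp
  qed
qed

lemma Phi_ann: "\<pi> \<in> Phi J l r \<Longrightarrow> annotated_at r \<pi>"
  unfolding Phi_def sharp_sub_def by auto

lemma ann_gJ_sub: "annotated_at (snd (gJ P J \<alpha> x)) q \<Longrightarrow> annotated_at (snd x) q"
  by (cases x) (auto simp: gJ_def sharp_Phi_def dest!: sharp_Phi_at_ann1 intro: Phi_ann)

lemma ann_gJ_keep:
  "annotated_at r q \<Longrightarrow> (lhs \<alpha>, Some (flat (subt_at r q))) \<in> J \<Longrightarrow> annotated_at (snd (gJ P J \<alpha> (p, r))) q"
  unfolding gJ_def sharp_Phi_def
  by (auto intro!: sharp_Phi_at_ann2 simp: Phi_def sharp_sub_def)

lemma lhs_restr_image: "lhs ` (restr P J ` P) = lhs ` P"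
  by (auto simp: image_image)

lemma defs_restr: "defs (restr P J ` P) = defs P"
  unfolding defs_def by auto

lemma basic_restr: "basic (restr P J ` P) = basic P"
  unfolding basic_def[abs_def] defs_restr by simp

lemma edl_mono:
  assumes "counted_nodes S T \<subseteq> counted_nodes S' T'" "\<forall>v \<in> counted_nodes S T. cprob T v = cprob T' v"
  shows "edl S T \<le> edl S' T'"
  unfolding edl_def
proof (rule SUP_least)
  fix F assume F: "F \<in> {F. finite F \<and> F \<subseteq> counted_nodes S T}"
  then have "(\<Sum>v\<in>F. ennreal (cprob T v)) = (\<Sum>v\<in>F. ennreal (cprob T' v))"
    using assms(2) by (intro sum.cong) auto
  also have "\<dots> \<le> (SUP F \<in> {F. finite F \<and> F \<subseteq> counted_nodes S' T'}. \<Sum>v\<in>F. ennreal (cprob T' v))"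
    using F assms(1) by (intro SUP_upper) auto
  finally show "(\<Sum>v\<in>F. ennreal (cprob T v)) \<le> \<dots>" .
qed

lemma edl_le_edh: "chain_tree P T \<Longrightarrow> cterm T [] = sharp_root t \<Longrightarrow> edl S T \<le> edh P S t"
  unfolding edh_def by (rule SUP_upper) auto

lemma sum_le_edl: "finite F \<Longrightarrow> F \<subseteq> counted_nodes S T \<Longrightarrow> (\<Sum>v\<in>F. ennreal (cprob T v)) \<le> edl S T"
  unfolding edl_def by (rule SUP_upper) auto

definition ifun :: "('f,'v) adp set \<Rightarrow> ('f,'v) adp set \<Rightarrow> nat \<Rightarrow> ennreal" where
  "ifun P S n = (SUP t \<in> {t. basic P t \<and> tsize t \<le> n}. edh P S t)"

lemma iota_ifun: "iota P S = cls (ifun P S)"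
  unfolding iota_def ifun_def by simp

lemma ifun_mono: "mono (ifun P S)"
  unfolding ifun_def mono_def by (auto intro!: SUP_subset_mono)

lemma ifun_le:
  assumes "\<And>t. basic P t \<Longrightarrow> edh P S t \<le> edh P' S' t" "basic P = basic P'"
  shows "ifun P S n \<le> ifun P' S' n"
  unfolding ifun_def using assms by (intro SUP_mono) auto

section \<open>Lifting restricted chain trees\<close>

definition liftR :: "('f,'v) adp set \<Rightarrow> ('f,'v) dpair set \<Rightarrow> ('f,'v) ctree \<Rightarrow> nat list \<Rightarrow> ('f,'v) adp" where
  "liftR P J T' v = (SOME \<alpha>. \<alpha> \<in> P \<and> restr P J \<alpha> = crule T' v)"

definition liftL :: "('f,'v) adp set \<Rightarrow> ('f,'v) dpair set \<Rightarrow> ('f,'v) ctree \<Rightarrow> nat list \<Rightarrow> (real \<times> ('f,'v) aterm) list" where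
  "liftL P J T' v = (SOME L. mset L = rhs (liftR P J T' v) \<and> map (gJ P J (liftR P J T' v)) L = chL T' v)"

lemma liftR_prop:
  assumes "crule T' v \<in> restr P J ` P"
  shows "liftR P J T' v \<in> P \<and> restr P J (liftR P J T' v) = crule T' v"
proof -
  obtain \<alpha> where "\<alpha> \<in> P" "crule T' v = restr P J \<alpha>" using assms by (rule imageE)
  then have ex: "\<exists>\<alpha>. \<alpha> \<in> P \<and> restr P J \<alpha> = crule T' v" by auto
  show ?thesis unfolding liftR_def by (rule someI_ex[OF ex])
qed

lemma liftL_prop:
  assumes "crule T' v \<in> restr P J ` P" "mset (chL T' v) = rhs (crule T' v)"
  shows "mset (liftL P J T' v) = rhs (liftR P J T' v) \<and> map (gJ P J (liftR P J T' v)) (liftL P J T' v) = chL T' v"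
proof -
  have "restr P J (liftR P J T' v) = crule T' v" using liftR_prop[OF assms(1)] by blast
  then have "rhs (crule T' v) = image_mset (gJ P J (liftR P J T' v)) (rhs (liftR P J T' v))"
    by (metis restr_simps(3))
  then have "mset (chL T' v) = image_mset (gJ P J (liftR P J T' v)) (rhs (liftR P J T' v))"
    using assms(2) by simp
  then have ex: "\<exists>L. mset L = rhs (liftR P J T' v) \<and> map (gJ P J (liftR P J T' v)) L = chL T' v"
    by (rule listing_exists)
  show ?thesis unfolding liftL_def by (rule someI_ex[OF ex])
qed

lemma lift_ok:
  assumes ct: "chain_tree (restr P J ` P) T'"
  shows "reann_ok (restr P J ` P) P T' (cterm T' []) (liftR P J T') (liftL P J T')"
  unfolding reann_ok_def
proof (intro conjI ballI impI)
  show "chain_tree (restr P J ` P) T'" by (rule ct)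
  show "flat (cterm T' []) = flat (cterm T' [])" ..
  show "lhs ` restr P J ` P = lhs ` P" by (rule lhs_restr_image)
  fix v assume v: "v \<in> cnodes T'" and n: "0 < nch T' v"
  have cr: "crule T' v \<in> restr P J ` P" using chain_tree_step(1)[OF ct v n] by (simp add: adp_redex_def)
  have b: "liftR P J T' v \<in> P" "restr P J (liftR P J T' v) = crule T' v"
    using liftR_prop[OF cr] by auto
  have co: "child_ok T' v (chL T' v)" by (rule child_ok_ex[OF ct v n])
  have L: "mset (liftL P J T' v) = rhs (liftR P J T' v)"
      "map (gJ P J (liftR P J T' v)) (liftL P J T' v) = chL T' v"
    using liftL_prop[OF cr] co unfolding child_ok_def by auto
  have "length (map (gJ P J (liftR P J T' v)) (liftL P J T' v)) = length (chL T' v)" using L(2) by simp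
  then have len: "length (liftL P J T' v) = nch T' v"
    using co unfolding child_ok_def by simp
  show "liftR P J T' v \<in> P" by (rule b(1))
  show "lhs (liftR P J T' v) = lhs (crule T' v)" using b(2) by (metis restr_simps(1))
  show "flag (liftR P J T' v) = flag (crule T' v)" using b(2) by (metis restr_simps(2))
  show "mset (liftL P J T' v) = rhs (liftR P J T' v)" by (rule L(1))
  show "length (liftL P J T' v) = nch T' v" by (rule len)
  show "\<forall>i<nch T' v. fst (liftL P J T' v ! i) = fst (chL T' v ! i) \<and>
      flat (snd (liftL P J T' v ! i)) = flat (snd (chL T' v ! i))"
  proof (intro allI impI)
    fix i assume i: "i < nch T' v"
    have "chL T' v ! i = map (gJ P J (liftR P J T' v)) (liftL P J T' v) ! i" using L(2) by simp
    also have "\<dots> = gJ P J (liftR P J T' v) (liftL P J T' v ! i)" using i len by simp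
    finally show "fst (liftL P J T' v ! i) = fst (chL T' v ! i) \<and>
      flat (snd (liftL P J T' v ! i)) = flat (snd (chL T' v ! i))" by simp
  qed
qed

lemma lift_ann:
  assumes ct: "chain_tree (restr P J ` P) T'" and v: "v \<in> cnodes T'"
  shows "\<forall>q. annotated_at (cterm T' v) q \<longrightarrow> annotated_at (gterm T' (cterm T' []) (liftR P J T') (liftL P J T') v) q"
  using v
proof (induction v rule: rev_induct)
  case Nil then show ?case by simp
next
  case (snoc i v)
  have ok: "reann_ok (restr P J ` P) P T' (cterm T' []) (liftR P J T') (liftL P J T')" by (rule lift_ok[OF ct])
  have v: "v \<in> cnodes T'" and i: "i < nch T' v" using chain_tree_parent[OF ct snoc.prems] by auto
  then have n: "0 < nch T' v" by simp
  have IH: "\<forall>q. annotated_at (cterm T' v) q \<longrightarrow> annotated_at (gterm T' (cterm T' []) (liftR P J T') (liftL P J T') v) q"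
    using snoc.IH v by simp
  have co: "child_ok T' v (chL T' v)" by (rule child_ok_ex[OF ct v n])
  have ch: "cterm T' (v @ [i]) = res (cterm T' v) (cpos T' v) (crule T' v) (csub T' v) (snd (chL T' v ! i))"
    using co i by (simp add: child_ok_def)
  have red: "adp_redex (restr P J ` P) (cterm T' v) (cpos T' v) (crule T' v) (csub T' v)"
    by (rule chain_tree_step(1)[OF ct v n])
  have pos: "cpos T' v \<in> poss (cterm T' v)" using red by (simp add: adp_redex_def)
  have fl: "flat (gterm T' (cterm T' []) (liftR P J T') (liftL P J T') v) = flat (cterm T' v)"
    by (rule gterm_flat[OF ok v])
  have pos': "cpos T' v \<in> poss (gterm T' (cterm T' []) (liftR P J T') (liftL P J T') v)"
    using pos fl by (metis poss_flat)
  have cr: "crule T' v \<in> restr P J ` P" using red by (simp add: adp_redex_def)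
  have b: "restr P J (liftR P J T' v) = crule T' v" using liftR_prop[OF cr] by auto
  have L: "map (gJ P J (liftR P J T' v)) (liftL P J T' v) = chL T' v"
    using liftL_prop[OF cr] co unfolding child_ok_def by auto
  have "length (map (gJ P J (liftR P J T' v)) (liftL P J T' v)) = length (chL T' v)" using L by simp
  then have len: "length (liftL P J T' v) = nch T' v"
    using co unfolding child_ok_def by simp
  have "chL T' v ! i = map (gJ P J (liftR P J T' v)) (liftL P J T' v) ! i" using L by simp
  also have "\<dots> = gJ P J (liftR P J T' v) (liftL P J T' v ! i)" using i len by simp
  finally have eq: "chL T' v ! i = gJ P J (liftR P J T' v) (liftL P J T' v ! i)" .
  show ?case
  proof (intro allI impI)
    fix q assume a: "annotated_at (cterm T' (v @ [i])) q"
    show "annotated_at (gterm T' (cterm T' []) (liftR P J T') (liftL P J T') (v @ [i])) q"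
      unfolding gterm_snoc
    proof (rule res_ann_mono[OF pos' fl[symmetric] IH])
      show "flag (crule T' v) = flag (liftR P J T' v)" using b by (metis restr_simps(2))
      show "flat (snd (chL T' v ! i)) = flat (snd (liftL P J T' v ! i))" using eq by simp
      show "\<forall>q. annotated_at (snd (chL T' v ! i)) q \<longrightarrow> annotated_at (snd (liftL P J T' v ! i)) q"
        using eq ann_gJ_sub by metis
      show "annotated_at (res (cterm T' v) (cpos T' v) (crule T' v) (csub T' v) (snd (chL T' v ! i))) q"
        using a ch by simp
    qed
  qed
qed

lemma lift_edh:
  assumes fin: "finite P"
  shows "edh (restr P J ` P) (restr P J ` P - restr P J ` S) t \<le> edh P (P - S) t"
proof -
  have main: "edl (restr P J ` P - restr P J ` S) T' \<le> edh P (P - S) t"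
    if T': "T' \<in> {T. chain_tree (restr P J ` P) T \<and> cterm T [] = sharp_root t}" for T'
  proof -
  from T' have ct: "chain_tree (restr P J ` P) T'" and rt: "cterm T' [] = sharp_root t" by auto
  let ?T = "gtree T' (cterm T' []) (liftR P J T') (liftL P J T')"
  have ok: "reann_ok (restr P J ` P) P T' (cterm T' []) (liftR P J T') (liftL P J T')" by (rule lift_ok[OF ct])
  have ctT: "chain_tree P ?T" by (rule gtree_chain_tree[OF ok])
  have "counted_nodes (restr P J ` P - restr P J ` S) T' \<subseteq> counted_nodes (P - S) ?T"
  proof
    fix v assume "v \<in> counted_nodes (restr P J ` P - restr P J ` S) T'"
    then have v: "v \<in> cnodes T'" "0 < nch T' v" "crule T' v \<in> restr P J ` P - restr P J ` S"
      "annotated_at (cterm T' v) (cpos T' v)" unfolding counted_nodes_def by auto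
    have cr: "crule T' v \<in> restr P J ` P" using v(3) by blast
    have b: "liftR P J T' v \<in> P" "restr P J (liftR P J T' v) = crule T' v"
      using liftR_prop[OF cr] by auto
    have "liftR P J T' v \<notin> S"
    proof
      assume "liftR P J T' v \<in> S"
      then have "restr P J (liftR P J T' v) \<in> restr P J ` S" by (rule imageI)
      then show False using b v(3) by simp
    qed
    moreover have "annotated_at (cterm ?T v) (cpos T' v)"
      using lift_ann[OF ct v(1)] v(4) by simp
    ultimately show "v \<in> counted_nodes (P - S) ?T"
      using v b unfolding counted_nodes_def by simp
  qed
  then have "edl (restr P J ` P - restr P J ` S) T' \<le> edl (P - S) ?T"
    by (rule edl_mono) simp
  also have "\<dots> \<le> edh P (P - S) t" using ctT rt by (intro edl_le_edh) (simp_all add: gtree_def)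
  finally show "edl (restr P J ` P - restr P J ` S) T' \<le> edh P (P - S) t" .
  qed
  show ?thesis unfolding edh_def[of "restr P J ` P"] using main by (rule SUP_least)
qed

lemma iota_restr_le:
  assumes "finite P"
  shows "iota (restr P J ` P) (restr P J ` P - restr P J ` S) \<le> iota P (P - S)"
  unfolding iota_ifun
proof (rule cls_mono[OF _ ifun_mono])
  fix n show "ifun (restr P J ` P) (restr P J ` P - restr P J ` S) n \<le> ifun P (P - S) n"
    using lift_edh[OF assms] basic_restr by (intro ifun_le) auto
qed




lemma poss_sharp_root[simp]: "poss (sharp_root x) = poss x"
  by (cases x) (auto simp: poss.simps)

lemma subt_at_sharp_root: "w \<noteq> [] \<Longrightarrow> subt_at (sharp_root x) w = subt_at x w"
  by (cases x; cases w) auto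

lemma sharp_root_replace_at: "w \<noteq> [] \<Longrightarrow> sharp_root (replace_at x w u) = replace_at (sharp_root x) w u"
  by (cases x; cases w) auto

lemma proper_subterm_sharp_root: "proper_subterm u (sharp_root x) \<longleftrightarrow> proper_subterm u x"
proof -
  have "\<forall>\<pi>. \<pi> \<noteq> [] \<longrightarrow> subt_at (sharp_root x) \<pi> = subt_at x \<pi>" using subt_at_sharp_root by blast
  then show ?thesis unfolding proper_subterm_def poss_sharp_root by auto
qed

lemma tsubst_sharp_root: "(\<exists>f b ts. t = Fun f b ts) \<Longrightarrow> tsubst (sharp_root t) \<sigma> = sharp_root (tsubst t \<sigma>)"
  by auto

lemma ANF_sharp: "(\<forall>u. proper_subterm u x \<longrightarrow> NF P u) \<Longrightarrow> ANF P (sharp_root x)"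
  unfolding ANF_def by (simp add: proper_subterm_sharp_root)

lemma ann_is_Fun: "annotated_at r w \<Longrightarrow> \<exists>f ts. flat (subt_at r w) = Fun f False ts"
  unfolding annotated_at_def by (cases "subt_at r w") auto

lemma vars_flat[simp]: "vars (flat t) = vars t"
  by (induction t) auto

definition lhs_flat :: "('f,'v) adp set \<Rightarrow> bool" where
  "lhs_flat P \<longleftrightarrow> (\<forall>\<alpha>\<in>P. flat (lhs \<alpha>) = lhs \<alpha>)"

lemma NF_NFtrs:
  assumes lf: "lhs_flat P" and nf: "NF P u"
  shows "NF_trs (np P) u"
  unfolding NF_trs_def
proof
  assume "\<exists>\<pi>\<in>poss u. \<exists>(l, r)\<in>np P. \<exists>\<sigma>. subt_at u \<pi> = tsubst l \<sigma>"
  then obtain \<pi> l r \<sigma> where p: "\<pi> \<in> poss u" "(l, r) \<in> np P" "subt_at u \<pi> = tsubst l \<sigma>" by blast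
  then obtain \<alpha> where \<alpha>: "\<alpha> \<in> P" "l = lhs \<alpha>" unfolding np_def by blast
  have "flat (subt_at u \<pi>) = tsubst (flat l) (flat \<circ> \<sigma>)" using p(3) by (simp add: flat_tsubst)
  also have "flat l = l" using lf \<alpha> by (simp add: lhs_flat_def)
  finally show False using nf p(1) \<alpha> unfolding NF_def by blast
qed

definition step_ok :: "('f,'v) adp set \<Rightarrow> ('f,'v) aterm \<Rightarrow> pos \<Rightarrow> ('f,'v) adp \<Rightarrow> ('v \<Rightarrow> ('f,'v) aterm) \<Rightarrow> real \<Rightarrow> ('f,'v) aterm \<Rightarrow> bool" where
  "step_ok P s \<pi> \<alpha> \<sigma> p r \<longleftrightarrow> adp_redex P s \<pi> \<alpha> \<sigma> \<and> (p, r) \<in># rhs \<alpha> \<and> lhs_flat P \<and>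
     vars r \<subseteq> vars (lhs \<alpha>)"

lemma step_ok_D:
  assumes "step_ok P s \<pi> \<alpha> \<sigma> p r"
  shows "\<pi> \<in> poss s" "\<alpha> \<in> P" "flat (subt_at s \<pi>) = tsubst (lhs \<alpha>) \<sigma>"
    "\<forall>u. proper_subterm u (tsubst (lhs \<alpha>) \<sigma>) \<longrightarrow> NF P u" "(p, r) \<in># rhs \<alpha>" "lhs_flat P"
    "vars r \<subseteq> vars (lhs \<alpha>)"
  using assms unfolding step_ok_def adp_redex_def by blast+

lemma step_ok_sigma:
  assumes "step_ok P s \<pi> \<alpha> \<sigma> p r"
  shows "tsubst (lhs \<alpha>) (flat \<circ> \<sigma>) = tsubst (lhs \<alpha>) \<sigma>" "\<forall>x \<in> vars r. flat (\<sigma> x) = \<sigma> x"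
proof -
  have e: "flat (subt_at s \<pi>) = tsubst (lhs \<alpha>) \<sigma>" using step_ok_D[OF assms] by blast
  then have ff: "flat (tsubst (lhs \<alpha>) \<sigma>) = tsubst (lhs \<alpha>) \<sigma>" by (metis flat_flat)
  have lf: "flat (lhs \<alpha>) = lhs \<alpha>" using step_ok_D(2,6)[OF assms] by (simp add: lhs_flat_def)
  show "tsubst (lhs \<alpha>) (flat \<circ> \<sigma>) = tsubst (lhs \<alpha>) \<sigma>" by (rule tsubst_flat_comp[OF ff lf])
  show "\<forall>x \<in> vars r. flat (\<sigma> x) = \<sigma> x"
    using flat_tsubst_vars[OF ff] step_ok_D(7)[OF assms] by blast
qed

lemma step_istep:
  assumes ok: "step_ok P s \<pi> \<alpha> \<sigma> p r" and fl: "flag \<alpha>" and pi: "\<pi> = q @ w" and w: "w \<noteq> []"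
  shows "(sharp_root (flat (subt_at s q)), sharp_root (flat (subt_at (res s \<pi> \<alpha> \<sigma> r) q))) \<in> istep (np P)"
proof -
  note D = step_ok_D[OF ok]
  have qp: "q \<in> poss s" and wp: "w \<in> poss (subt_at s q)" using D(1) pi poss_append by blast+
  let ?X = "flat (subt_at s q)"
  let ?U = "tsubst (flat r) (flat \<circ> \<sigma>)"
  have fres: "flat (res s \<pi> \<alpha> \<sigma> r) = replace_at (flat s) \<pi> ?U" by (rule flat_res)
  have "\<pi> @ [] \<in> poss (replace_at (flat s) \<pi> ?U)"
    using poss_replace_at_above[of \<pi> "flat s" "[]" ?U] D(1) by simp
  then have "\<pi> \<in> poss (flat (res s \<pi> \<alpha> \<sigma> r))" using fres by simp
  then have "q @ w \<in> poss (res s \<pi> \<alpha> \<sigma> r)" using pi by simp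
  then have pres: "q \<in> poss (res s \<pi> \<alpha> \<sigma> r)" unfolding poss_append by simp
  have "flat (subt_at (res s \<pi> \<alpha> \<sigma> r) q) = subt_at (flat (res s \<pi> \<alpha> \<sigma> r)) q"
    using pres by (simp add: subt_at_flat)
  also have "\<dots> = subt_at (replace_at (flat s) \<pi> ?U) q" by (simp only: fres)
  also have "\<dots> = replace_at (subt_at (flat s) q) w ?U"
    using D(1) pi by (simp add: subt_at_replace_at_below)
  also have "subt_at (flat s) q = ?X" using qp by (simp add: subt_at_flat)
  finally have res_q: "flat (subt_at (res s \<pi> \<alpha> \<sigma> r) q) = replace_at ?X w ?U" .
  have wX: "w \<in> poss (sharp_root ?X)" using wp by (simp add: poss_flat)
  have sub: "subt_at (sharp_root ?X) w = tsubst (lhs \<alpha>) (flat \<circ> \<sigma>)"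
  proof -
    have "subt_at (sharp_root ?X) w = subt_at ?X w" using w by (rule subt_at_sharp_root)
    also have "\<dots> = flat (subt_at (subt_at s q) w)" using wp by (simp add: subt_at_flat)
    also have "\<dots> = flat (subt_at s \<pi>)" using qp pi by (simp add: subt_at_append)
    also have "\<dots> = tsubst (lhs \<alpha>) (flat \<circ> \<sigma>)" using D(3) step_ok_sigma(1)[OF ok] by simp
    finally show ?thesis .
  qed
  have np: "(lhs \<alpha>, flat r) \<in> np P" using D(2,5) fl unfolding np_def by blast
  have inn: "\<forall>u. proper_subterm u (tsubst (lhs \<alpha>) (flat \<circ> \<sigma>)) \<longrightarrow> NF_trs (np P) u"
    using D(4,6) step_ok_sigma(1)[OF ok] NF_NFtrs by metis
  have "sharp_root (replace_at ?X w ?U) = replace_at (sharp_root ?X) w ?U"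
    using w by (rule sharp_root_replace_at)
  have "(sharp_root ?X, replace_at (sharp_root ?X) w (tsubst (flat r) (flat \<circ> \<sigma>))) \<in> istep (np P)"
    unfolding istep_def
  proof (intro CollectI, unfold case_prod_conv)
    show "\<exists>\<pi>'\<in>poss (sharp_root ?X). \<exists>(l, r')\<in>np P. \<exists>\<sigma>'. subt_at (sharp_root ?X) \<pi>' = tsubst l \<sigma>' \<and>
      (\<forall>u. proper_subterm u (tsubst l \<sigma>') \<longrightarrow> NF_trs (np P) u) \<and>
      replace_at (sharp_root ?X) w (tsubst (flat r) (flat \<circ> \<sigma>)) = replace_at (sharp_root ?X) \<pi>' (tsubst r' \<sigma>')"
    proof (rule bexI[OF _ wX], rule bexI[OF _ np], unfold case_prod_conv)
      show "\<exists>\<sigma>'. subt_at (sharp_root ?X) w = tsubst (lhs \<alpha>) \<sigma>' \<and>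
        (\<forall>u. proper_subterm u (tsubst (lhs \<alpha>) \<sigma>') \<longrightarrow> NF_trs (np P) u) \<and>
        replace_at (sharp_root ?X) w (tsubst (flat r) (flat \<circ> \<sigma>)) = replace_at (sharp_root ?X) w (tsubst (flat r) \<sigma>')"
        using sub inn by (intro exI[of _ "flat \<circ> \<sigma>"]) simp
    qed
  qed
  then show ?thesis unfolding res_q using \<open>sharp_root (replace_at ?X w ?U) = _\<close> by simp
qed

lemma old_pos:
  assumes ok: "step_ok P s \<pi> \<alpha> \<sigma> p r"
    and a: "annotated_at (res s \<pi> \<alpha> \<sigma> r) q" and nq: "\<not> (\<exists>w. q = \<pi> @ w)"
  shows "annotated_at s q \<and>
    (sharp_root (flat (subt_at s q)), sharp_root (flat (subt_at (res s \<pi> \<alpha> \<sigma> r) q))) \<in> (istep (np P))\<^sup>*"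
proof -
  note D = step_ok_D[OF ok]
  have disj: "(\<not> (\<exists>w. q = \<pi> @ w) \<and> annotated_at s q \<and> (flag \<alpha> \<or> \<not> (\<exists>w. w \<noteq> [] \<and> \<pi> = q @ w))) \<or>
    (\<exists>w. q = \<pi> @ w \<and> annotated_at (if annotated_at s \<pi> then tsubst r \<sigma> else tsubst (flat r) \<sigma>) w)"
    using ann_res[OF D(1)] a by (rule iffD1)
  have c: "annotated_at s q" "flag \<alpha> \<or> \<not> (\<exists>w. w \<noteq> [] \<and> \<pi> = q @ w)"
    using disj nq by (elim disjE conjE; simp)+
  have qp: "q \<in> poss s" using c(1) by (rule annotated_at_poss)
  show ?thesis
  proof (cases "\<exists>w. \<pi> = q @ w")
    case True
    then obtain w where w: "\<pi> = q @ w" by blast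
    then have "w \<noteq> []" using nq by auto
    then have fl: "flag \<alpha>" using c(2) w by blast
    show ?thesis using step_istep[OF ok fl w \<open>w \<noteq> []\<close>] c(1) by blast
  next
    case False
    let ?U = "tsubst (flat r) (flat \<circ> \<sigma>)"
    have fres: "flat (res s \<pi> \<alpha> \<sigma> r) = replace_at (flat s) \<pi> ?U" by (rule flat_res)
    have pres: "q \<in> poss (res s \<pi> \<alpha> \<sigma> r)" using a by (rule annotated_at_poss)
    have "flat (subt_at (res s \<pi> \<alpha> \<sigma> r) q) = subt_at (flat (res s \<pi> \<alpha> \<sigma> r)) q"
      using pres by (simp add: subt_at_flat)
    also have "\<dots> = subt_at (flat s) q"
      unfolding fres using D(1) nq False by (simp add: subt_at_replace_at_parallel)
    also have "\<dots> = flat (subt_at s q)" using qp by (simp add: subt_at_flat)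
    finally show ?thesis using c(1) by simp
  qed
qed

lemma new_pos:
  assumes ok: "step_ok P s \<pi> \<alpha> \<sigma> p r"
    and a: "annotated_at (res s \<pi> \<alpha> \<sigma> r) (\<pi> @ w)"
  shows "annotated_at s \<pi>" "annotated_at r w"
    "flat (subt_at (res s \<pi> \<alpha> \<sigma> r) (\<pi> @ w)) = tsubst (flat (subt_at r w)) (flat \<circ> \<sigma>)"
proof -
  note D = step_ok_D[OF ok]
  have sfl: "\<forall>x \<in> vars r. flat (\<sigma> x) = \<sigma> x" by (rule step_ok_sigma(2)[OF ok])
  have disj: "(\<not> (\<exists>w'. \<pi> @ w = \<pi> @ w') \<and> annotated_at s (\<pi> @ w) \<and> (flag \<alpha> \<or> \<not> (\<exists>w'. w' \<noteq> [] \<and> \<pi> = (\<pi> @ w) @ w'))) \<or>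
    (\<exists>w'. \<pi> @ w = \<pi> @ w' \<and> annotated_at (if annotated_at s \<pi> then tsubst r \<sigma> else tsubst (flat r) \<sigma>) w')"
    using ann_res[OF D(1)] a by (rule iffD1)
  have c: "annotated_at (if annotated_at s \<pi> then tsubst r \<sigma> else tsubst (flat r) \<sigma>) w"
    using disj
  proof (elim disjE)
    assume "\<exists>w'. \<pi> @ w = \<pi> @ w' \<and> annotated_at (if annotated_at s \<pi> then tsubst r \<sigma> else tsubst (flat r) \<sigma>) w'"
    then obtain w' where "\<pi> @ w = \<pi> @ w'" "annotated_at (if annotated_at s \<pi> then tsubst r \<sigma> else tsubst (flat r) \<sigma>) w'"
      by blast
    then show ?thesis by simp
  qed blast
  show as: "annotated_at s \<pi>"
  proof (rule ccontr)
    assume "\<not> annotated_at s \<pi>"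
    then have "annotated_at (tsubst (flat r) \<sigma>) w" using c by simp
    then have "annotated_at (flat r) w" using annotated_at_tsubst_rev[of "flat r" \<sigma> w] sfl by simp
    then show False using flat_not_annotated by blast
  qed
  then have "annotated_at (tsubst r \<sigma>) w" using c by simp
  then show ar: "annotated_at r w" using sfl by (rule annotated_at_tsubst_rev)
  have wp: "w \<in> poss r" using ar by (rule annotated_at_poss)
  have pres: "\<pi> @ w \<in> poss (res s \<pi> \<alpha> \<sigma> r)" using a by (rule annotated_at_poss)
  have "flat (subt_at (res s \<pi> \<alpha> \<sigma> r) (\<pi> @ w)) = subt_at (flat (res s \<pi> \<alpha> \<sigma> r)) (\<pi> @ w)"
    using pres by (simp add: subt_at_flat)
  also have "\<dots> = subt_at (replace_at (flat s) \<pi> (tsubst (flat r) (flat \<circ> \<sigma>))) (\<pi> @ w)"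
    by (simp only: flat_res)
  also have "\<dots> = subt_at (tsubst (flat r) (flat \<circ> \<sigma>)) w"
    using D(1) by (simp add: subt_at_replace_at_above)
  also have "\<dots> = tsubst (subt_at (flat r) w) (flat \<circ> \<sigma>)"
    using wp by (simp add: subt_at_tsubst)
  also have "subt_at (flat r) w = flat (subt_at r w)" using wp by (simp add: subt_at_flat)
  finally show "flat (subt_at (res s \<pi> \<alpha> \<sigma> r) (\<pi> @ w)) = tsubst (flat (subt_at r w)) (flat \<circ> \<sigma>)" .
qed




definition wfP :: "('f,'v) adp set \<Rightarrow> bool" where
  "wfP P \<longleftrightarrow> finite P \<and> (\<forall>\<alpha>\<in>P. valid_adp (defs P) \<alpha>)"

lemma wfP_lhs_flat: "wfP P \<Longrightarrow> lhs_flat P"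
  unfolding wfP_def valid_adp_def lhs_flat_def unannotated_def by blast

lemma wfP_lhs_Fun: "wfP P \<Longrightarrow> \<alpha> \<in> P \<Longrightarrow> \<exists>f ts. lhs \<alpha> = Fun f False ts"
  unfolding wfP_def valid_adp_def by blast

lemma wfP_rhs: "wfP P \<Longrightarrow> \<alpha> \<in> P \<Longrightarrow> (p, r) \<in># rhs \<alpha> \<Longrightarrow> vars r \<subseteq> vars (lhs \<alpha>) \<and> 0 < p"
  unfolding wfP_def valid_adp_def by fastforce

lemma wfP_sum: "wfP P \<Longrightarrow> \<alpha> \<in> P \<Longrightarrow> sum_mset (image_mset fst (rhs \<alpha>)) = 1"
  unfolding wfP_def valid_adp_def by blast

lemma node_step_ok:
  assumes ct: "chain_tree P T" and w: "wfP P" and v: "v \<in> cnodes T" and n: "0 < nch T v" and i: "i < nch T v"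
  shows "step_ok P (cterm T v) (cpos T v) (crule T v) (csub T v) (fst (chL T v ! i)) (snd (chL T v ! i))"
    "cterm T (v @ [i]) = res (cterm T v) (cpos T v) (crule T v) (csub T v) (snd (chL T v ! i))"
    "crule T v \<in> P"
proof -
  have red: "adp_redex P (cterm T v) (cpos T v) (crule T v) (csub T v)" by (rule chain_tree_step(1)[OF ct v n])
  then show cr: "crule T v \<in> P" by (simp add: adp_redex_def)
  have co: "child_ok T v (chL T v)" by (rule child_ok_ex[OF ct v n])
  then have "chL T v ! i \<in> set (chL T v)" using i by (simp add: child_ok_def)
  then have mem: "(fst (chL T v ! i), snd (chL T v ! i)) \<in># rhs (crule T v)"
    using co by (simp add: child_ok_def flip: set_mset_mset)
  show "step_ok P (cterm T v) (cpos T v) (crule T v) (csub T v) (fst (chL T v ! i)) (snd (chL T v ! i))"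
    unfolding step_ok_def using red mem wfP_lhs_flat[OF w] wfP_rhs[OF w cr mem] by blast
  show "cterm T (v @ [i]) = res (cterm T v) (cpos T v) (crule T v) (csub T v) (snd (chL T v ! i))"
    using co i by (simp add: child_ok_def)
qed

definition \<beta>J where "\<beta>J P J T v = restr P J (crule T v)"
definition LJ where "LJ P J T v = map (gJ P J (crule T v)) (chL T v)"
definition tJ where "tJ P J T = gtree T (cterm T []) (\<beta>J P J T) (LJ P J T)"
definition tJt where "tJt P J T = gterm T (cterm T []) (\<beta>J P J T) (LJ P J T)"

lemma reannJ_ok:
  assumes ct: "chain_tree P T"
  shows "reann_ok P (restr P J ` P) T (cterm T []) (\<beta>J P J T) (LJ P J T)"
  unfolding reann_ok_def
proof (intro conjI ballI impI)
  show "chain_tree P T" by (rule ct)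
  show "flat (cterm T []) = flat (cterm T [])" ..
  show "lhs ` P = lhs ` restr P J ` P" by (rule lhs_restr_image[symmetric])
  fix v assume v: "v \<in> cnodes T" and n: "0 < nch T v"
  have cr: "crule T v \<in> P" using chain_tree_step(1)[OF ct v n] by (simp add: adp_redex_def)
  have co: "child_ok T v (chL T v)" by (rule child_ok_ex[OF ct v n])
  show "\<beta>J P J T v \<in> restr P J ` P" using cr by (simp add: \<beta>J_def)
  show "lhs (\<beta>J P J T v) = lhs (crule T v)" by (simp add: \<beta>J_def)
  show "flag (\<beta>J P J T v) = flag (crule T v)" by (simp add: \<beta>J_def)
  show "mset (LJ P J T v) = rhs (\<beta>J P J T v)" using co by (simp add: \<beta>J_def LJ_def child_ok_def)
  show "length (LJ P J T v) = nch T v" using co by (simp add: LJ_def child_ok_def)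
  show "\<forall>i<nch T v. fst (LJ P J T v ! i) = fst (chL T v ! i) \<and> flat (snd (LJ P J T v ! i)) = flat (snd (chL T v ! i))"
    using co by (simp add: LJ_def child_ok_def)
qed

lemma tJt_snoc: "tJt P J T (v @ [i]) = res (tJt P J T v) (cpos T v) (restr P J (crule T v)) (csub T v) (snd (LJ P J T v ! i))"
  by (simp add: tJt_def \<beta>J_def)

lemma tJ_chain: "chain_tree P T \<Longrightarrow> chain_tree (restr P J ` P) (tJ P J T)"
  unfolding tJ_def by (rule gtree_chain_tree[OF reannJ_ok])

definition creator_ok :: "('f,'v) adp set \<Rightarrow> ('f,'v) dpair \<Rightarrow> ('f,'v) aterm \<Rightarrow> bool" where
  "creator_ok P d u \<longleftrightarrow> (\<exists>l t \<sigma>. d = (l, Some t) \<and> ANF P (tsubst (sharp_root l) \<sigma>) \<and>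
      (tsubst (sharp_root t) \<sigma>, sharp_root u) \<in> (istep (np P))\<^sup>*)"

lemma step_ANF:
  assumes ok: "step_ok P s \<pi> \<alpha> \<sigma> p r" and lf: "\<exists>f ts. lhs \<alpha> = Fun f False ts"
  shows "ANF P (tsubst (sharp_root (lhs \<alpha>)) (flat \<circ> \<sigma>))"
    "tsubst (sharp_root (lhs \<alpha>)) (flat \<circ> \<sigma>) = sharp_root (flat (subt_at s \<pi>))"
proof -
  note D = step_ok_D[OF ok]
  have e: "tsubst (sharp_root (lhs \<alpha>)) (flat \<circ> \<sigma>) = sharp_root (tsubst (lhs \<alpha>) (flat \<circ> \<sigma>))"
    using lf by (intro tsubst_sharp_root) auto
  also have "tsubst (lhs \<alpha>) (flat \<circ> \<sigma>) = tsubst (lhs \<alpha>) \<sigma>" by (rule step_ok_sigma(1)[OF ok])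
  finally have e2: "tsubst (sharp_root (lhs \<alpha>)) (flat \<circ> \<sigma>) = sharp_root (tsubst (lhs \<alpha>) \<sigma>)" .
  then show "ANF P (tsubst (sharp_root (lhs \<alpha>)) (flat \<circ> \<sigma>))" using ANF_sharp D(4) by metis
  show "tsubst (sharp_root (lhs \<alpha>)) (flat \<circ> \<sigma>) = sharp_root (flat (subt_at s \<pi>))" using e2 D(3) by simp
qed

lemma edge_from_creator:
  assumes ok: "step_ok P s \<pi> \<alpha> \<sigma> p r" and lf: "\<exists>f ts. lhs \<alpha> = Fun f False ts"
    and cr: "creator_ok P d1 (flat (subt_at s \<pi>))" and d1: "d1 \<in> dpP P" and d2: "d2 \<in> dpP P"
    and f2: "fst d2 = lhs \<alpha>"
  shows "(d1, d2) \<in> E P"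
proof -
  obtain l t \<sigma>1 where c: "d1 = (l, Some t)" "ANF P (tsubst (sharp_root l) \<sigma>1)"
    "(tsubst (sharp_root t) \<sigma>1, sharp_root (flat (subt_at s \<pi>))) \<in> (istep (np P))\<^sup>*"
    using cr unfolding creator_ok_def by blast
  note SA = step_ANF[OF ok lf]
  have ex: "\<exists>\<sigma>1' \<sigma>2. (tsubst (sharp_root t) \<sigma>1', tsubst (sharp_root (fst d2)) \<sigma>2) \<in> (istep (np P))\<^sup>* \<and>
          ANF P (tsubst (sharp_root (fst d1)) \<sigma>1') \<and> ANF P (tsubst (sharp_root (fst d2)) \<sigma>2)"
    apply (rule exI[of _ \<sigma>1], rule exI[of _ "flat \<circ> \<sigma>"])
    using c SA f2 by simp
  have "dg_edge P d1 d2"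
    unfolding dg_edge_def using d1 d2 c(1) ex by simp
  then show ?thesis by (simp add: dg_edges_def)
qed

lemma dp_mem:
  assumes "\<alpha> \<in> P" "(p, r) \<in># rhs \<alpha>" "annotated_at r w"
  shows "(lhs \<alpha>, Some (flat (subt_at r w))) \<in> dp \<alpha>" "(lhs \<alpha>, Some (flat (subt_at r w))) \<in> dpP P"
proof -
  show m: "(lhs \<alpha>, Some (flat (subt_at r w))) \<in> dp \<alpha>"
    unfolding dp_def sharp_sub_def using assms(2,3) by blast
  then have "dp_bot \<alpha> = dp \<alpha>" by (auto simp: dp_bot_def)
  then show "(lhs \<alpha>, Some (flat (subt_at r w))) \<in> dpP P"
    using m assms(1) unfolding dpP_def by blast
qed

lemma dp_bot_fst: "d \<in> dp_bot \<alpha> \<Longrightarrow> fst d = lhs \<alpha>"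
  unfolding dp_bot_def dp_def by (auto split: if_splits)

lemma dp_bot_dpP: "\<alpha> \<in> P \<Longrightarrow> d \<in> dp_bot \<alpha> \<Longrightarrow> d \<in> dpP P"
  unfolding dpP_def by blast

lemma dp_bot_ne: "dp_bot \<alpha> \<noteq> {}"
  unfolding dp_bot_def by auto

lemma LJ_nth:
  assumes "chain_tree P T" "v \<in> cnodes T" "0 < nch T v" "i < nch T v"
  shows "LJ P J T v ! i = gJ P J (crule T v) (chL T v ! i)"
proof -
  have "length (chL T v) = nch T v" using child_ok_ex[OF assms(1-3)] by (simp add: child_ok_def)
  then show ?thesis using assms(4) by (simp add: LJ_def)
qed

lemma chain_inv:
  assumes ct: "chain_tree P T" and w: "wfP P" and v: "v \<in> cnodes T"
  shows "\<forall>q. annotated_at (cterm T v) q \<longrightarrow> (\<exists>c. dpath P c \<and>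
      (c \<noteq> [] \<longrightarrow> creator_ok P (last c) (flat (subt_at (cterm T v) q))) \<and>
      (\<forall>J. set c \<subseteq> J \<longrightarrow> annotated_at (tJt P J T v) q))"
  using v
proof (induction v rule: rev_induct)
  case Nil
  show ?case by (intro allI impI exI[of _ "[]"]) (simp add: tJt_def)
next
  case (snoc i v)
  have v: "v \<in> cnodes T" and i: "i < nch T v" using chain_tree_parent[OF ct snoc.prems] by auto
  then have n: "0 < nch T v" by simp
  have IH: "\<forall>q. annotated_at (cterm T v) q \<longrightarrow> (\<exists>c. dpath P c \<and>
      (c \<noteq> [] \<longrightarrow> creator_ok P (last c) (flat (subt_at (cterm T v) q))) \<and>
      (\<forall>J. set c \<subseteq> J \<longrightarrow> annotated_at (tJt P J T v) q))" using snoc.IH v by simp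
  define s where "s = cterm T v"
  define \<pi> where "\<pi> = cpos T v"
  define \<alpha> where "\<alpha> = crule T v"
  define \<sigma> where "\<sigma> = csub T v"
  define p where "p = fst (chL T v ! i)"
  define r where "r = snd (chL T v ! i)"
  have ok: "step_ok P s \<pi> \<alpha> \<sigma> p r" and ch: "cterm T (v @ [i]) = res s \<pi> \<alpha> \<sigma> r" and aP: "\<alpha> \<in> P"
    using node_step_ok[OF ct w v n i] unfolding s_def \<pi>_def \<alpha>_def \<sigma>_def p_def r_def by auto
  note D = step_ok_D[OF ok]
  have lf: "\<exists>f ts. lhs \<alpha> = Fun f False ts" using wfP_lhs_Fun[OF w aP] .
  have pr: "chL T v ! i = (p, r)" by (simp add: p_def r_def)
  have okJ: "reann_ok P (restr P J ` P) T (cterm T []) (\<beta>J P J T) (LJ P J T)" for J by (rule reannJ_ok[OF ct])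
  have flJ: "flat (tJt P J T v) = flat s" for J
    using gterm_flat[OF okJ v] by (simp add: tJt_def s_def)
  have posJ: "\<pi> \<in> poss (tJt P J T v)" for J using D(1) flJ by (metis poss_flat)
  have chJ: "tJt P J T (v @ [i]) = res (tJt P J T v) \<pi> (restr P J \<alpha>) \<sigma> (snd (gJ P J \<alpha> (p, r)))" for J
    using tJt_snoc LJ_nth[OF ct v n i] pr unfolding \<pi>_def \<alpha>_def \<sigma>_def by metis
  show ?case
  proof (intro allI impI)
    fix q assume a: "annotated_at (cterm T (v @ [i])) q"
    then have a': "annotated_at (res s \<pi> \<alpha> \<sigma> r) q" using ch by simp
    show "\<exists>c. dpath P c \<and>
      (c \<noteq> [] \<longrightarrow> creator_ok P (last c) (flat (subt_at (cterm T (v @ [i])) q))) \<and>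
      (\<forall>J. set c \<subseteq> J \<longrightarrow> annotated_at (tJt P J T (v @ [i])) q)"
    proof (cases "\<exists>w. q = \<pi> @ w")
      case False
      have op: "annotated_at s q" "(sharp_root (flat (subt_at s q)), sharp_root (flat (subt_at (res s \<pi> \<alpha> \<sigma> r) q))) \<in> (istep (np P))\<^sup>*"
        using old_pos[OF ok a' False] by auto
      have disj: "(\<not> (\<exists>w. q = \<pi> @ w) \<and> annotated_at s q \<and> (flag \<alpha> \<or> \<not> (\<exists>w. w \<noteq> [] \<and> \<pi> = q @ w))) \<or>
        (\<exists>w. q = \<pi> @ w \<and> annotated_at (if annotated_at s \<pi> then tsubst r \<sigma> else tsubst (flat r) \<sigma>) w)"
        using ann_res[OF D(1)] a' by (rule iffD1)
      have fl: "flag \<alpha> \<or> \<not> (\<exists>w. w \<noteq> [] \<and> \<pi> = q @ w)" using disj False by blast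
      obtain c where c: "dpath P c" "c \<noteq> [] \<longrightarrow> creator_ok P (last c) (flat (subt_at s q))"
        "\<forall>J. set c \<subseteq> J \<longrightarrow> annotated_at (tJt P J T v) q"
        using IH op(1) unfolding s_def by blast
      show ?thesis
      proof (intro exI[of _ c] conjI impI allI)
        show "dpath P c" by (rule c(1))
      next
        assume "c \<noteq> []"
        then obtain l t \<sigma>1 where cc: "last c = (l, Some t)" "ANF P (tsubst (sharp_root l) \<sigma>1)"
          "(tsubst (sharp_root t) \<sigma>1, sharp_root (flat (subt_at s q))) \<in> (istep (np P))\<^sup>*"
          using c(2) unfolding creator_ok_def by blast
        have "(tsubst (sharp_root t) \<sigma>1, sharp_root (flat (subt_at (res s \<pi> \<alpha> \<sigma> r) q))) \<in> (istep (np P))\<^sup>*"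
          using cc(3) op(2) by (rule rtrancl_trans)
        then show "creator_ok P (last c) (flat (subt_at (cterm T (v @ [i])) q))"
          unfolding creator_ok_def ch using cc(1,2) by blast
      next
        fix J assume "set c \<subseteq> J"
        then have aJ: "annotated_at (tJt P J T v) q" using c(3) by blast
        have "annotated_at (res (tJt P J T v) \<pi> (restr P J \<alpha>) \<sigma> (snd (gJ P J \<alpha> (p, r)))) q"
          unfolding ann_res[OF posJ] using False aJ fl by simp
        then show "annotated_at (tJt P J T (v @ [i])) q" using chJ by simp
      qed
    next
      case True
      then obtain w where q: "q = \<pi> @ w" by blast
      have a'': "annotated_at (res s \<pi> \<alpha> \<sigma> r) (\<pi> @ w)" using a' q by simp
      note np = new_pos[OF ok a'']
      define t' where "t' = flat (subt_at r w)"
      define d where "d = (lhs \<alpha>, Some t')"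
      have dP: "d \<in> dpP P" unfolding d_def t'_def using dp_mem(2)[OF aP D(5) np(2)] .
      obtain c0 where c0: "dpath P c0" "c0 \<noteq> [] \<longrightarrow> creator_ok P (last c0) (flat (subt_at s \<pi>))"
        "\<forall>J. set c0 \<subseteq> J \<longrightarrow> annotated_at (tJt P J T v) \<pi>"
        using IH np(1) unfolding s_def by blast
      have edge: "c0 \<noteq> [] \<longrightarrow> (last c0, d) \<in> E P"
      proof
        assume ne: "c0 \<noteq> []"
        have "last c0 \<in> dpP P" using c0(1) ne unfolding dpath_def by auto
        then show "(last c0, d) \<in> E P"
          using edge_from_creator[OF ok lf] c0(2) ne dP by (simp add: d_def)
      qed
      have tFun: "\<exists>f ts. t' = Fun f False ts" unfolding t'_def by (rule ann_is_Fun[OF np(2)])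
      show ?thesis
      proof (intro exI[of _ "c0 @ [d]"] conjI impI allI)
        show "dpath P (c0 @ [d])" by (rule dpath_snoc[OF c0(1) dP edge])
      next
        have "tsubst (sharp_root t') (flat \<circ> \<sigma>) = sharp_root (tsubst t' (flat \<circ> \<sigma>))"
          using tFun by (intro tsubst_sharp_root) auto
        also have "tsubst t' (flat \<circ> \<sigma>) = flat (subt_at (cterm T (v @ [i])) q)"
          using np(3) ch q by (simp add: t'_def)
        finally have eqq: "tsubst (sharp_root t') (flat \<circ> \<sigma>) = sharp_root (flat (subt_at (cterm T (v @ [i])) q))" .
        then have "(tsubst (sharp_root t') (flat \<circ> \<sigma>), sharp_root (flat (subt_at (cterm T (v @ [i])) q))) \<in> (istep (np P))\<^sup>*"
          by (simp only: rtrancl.rtrancl_refl)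
        then show "creator_ok P (last (c0 @ [d])) (flat (subt_at (cterm T (v @ [i])) q))"
          unfolding creator_ok_def d_def using step_ANF(1)[OF ok lf] by auto
      next
        fix J assume J: "set (c0 @ [d]) \<subseteq> J"
        then have aJ: "annotated_at (tJt P J T v) \<pi>" using c0(3) by auto
        have "(lhs \<alpha>, Some (flat (subt_at r w))) \<in> J" using J by (simp add: d_def t'_def)
        then have "annotated_at (snd (gJ P J \<alpha> (p, r))) w" by (rule ann_gJ_keep[OF np(2)])
        then have "annotated_at (tsubst (snd (gJ P J \<alpha> (p, r))) \<sigma>) w" by (rule annotated_at_tsubst)
        then have "annotated_at (res (tJt P J T v) \<pi> (restr P J \<alpha>) \<sigma> (snd (gJ P J \<alpha> (p, r)))) (\<pi> @ w)"
          unfolding ann_res[OF posJ] using aJ by auto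
        then show "annotated_at (tJt P J T (v @ [i])) q" using chJ q by simp
      qed
    qed
  qed
qed

lemma typeb_counted:
  assumes ct: "chain_tree P T" and w: "wfP P" and vc: "v \<in> counted_nodes S T"
    and d2: "d2 \<in> dp_bot (crule T v)" and nt: "\<not> tail P d2"
  shows "\<exists>J. SCC_prefix P J \<and> v \<in> counted_nodes (restr P J ` S) (tJ P J T)"
proof -
  have v: "v \<in> cnodes T" and n: "0 < nch T v" and cS: "crule T v \<in> S"
    and an: "annotated_at (cterm T v) (cpos T v)" using vc unfolding counted_nodes_def by auto
  have fin: "finite P" using w by (simp add: wfP_def)
  have ok: "step_ok P (cterm T v) (cpos T v) (crule T v) (csub T v) (fst (chL T v ! 0)) (snd (chL T v ! 0))"
    and aP: "crule T v \<in> P" using node_step_ok[OF ct w v n n] by auto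
  have lf: "\<exists>f ts. lhs (crule T v) = Fun f False ts" using wfP_lhs_Fun[OF w aP] .
  obtain c where c: "dpath P c" "c \<noteq> [] \<longrightarrow> creator_ok P (last c) (flat (subt_at (cterm T v) (cpos T v)))"
    "\<forall>J. set c \<subseteq> J \<longrightarrow> annotated_at (tJt P J T v) (cpos T v)"
    using chain_inv[OF ct w v] an by blast
  obtain G g where G: "is_SCC P G" "g \<in> G" "reaches P d2 g" using nt unfolding tail_def by blast
  have d2P: "d2 \<in> dpP P" using dp_bot_dpP[OF aP d2] .
  have reach: "\<exists>g\<in>G. (last c, g) \<in> (E P)\<^sup>*" if ne: "c \<noteq> []"
  proof -
    have lc: "last c \<in> dpP P" using c(1) ne unfolding dpath_def by auto
    have "(last c, d2) \<in> E P"
      using edge_from_creator[OF ok lf _ lc d2P dp_bot_fst[OF d2]] c(2) ne by blast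
    then show ?thesis using G(2,3) unfolding reaches_def by (meson converse_rtrancl_into_rtrancl)
  qed
  have pp: "prefix_prop P G (set c \<union> G)" by (rule chain_prefix_prop[OF G(1) c(1) reach])
  obtain J where J: "set c \<union> G \<subseteq> J" "SCC_prefix P J"
    using extend_prefix[OF fin G(1) pp] by blast
  have "annotated_at (tJt P J T v) (cpos T v)" using c(3) J(1) by blast
  then have "v \<in> counted_nodes (restr P J ` S) (tJ P J T)"
    unfolding counted_nodes_def tJ_def using v n cS by (simp add: \<beta>J_def tJt_def)
  then show ?thesis using J(2) by blast
qed




definition annpos :: "('f,'v) aterm \<Rightarrow> pos set" where
  "annpos t = {q. annotated_at t q}"

lemma finite_annpos[simp]: "finite (annpos t)"
proof -
  have "annpos t \<subseteq> poss t" unfolding annpos_def using annotated_at_poss by blast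
  then show ?thesis using finite_poss finite_subset by blast
qed

definition ConsS :: "('f,'v) adp set \<Rightarrow> ('f,'v) aterm \<Rightarrow> ('f,'v) dpair set" where
  "ConsS P u = {d \<in> dpP P. \<exists>\<sigma>2. (sharp_root u, tsubst (sharp_root (fst d)) \<sigma>2) \<in> (istep (np P))\<^sup>* \<and>
      ANF P (tsubst (sharp_root (fst d)) \<sigma>2)}"

definition wd :: "('f,'v) adp set \<Rightarrow> nat \<Rightarrow> ('f,'v) dpair \<Rightarrow> real" where
  "wd P K d = (real K + 1) ^ card (succs P d)"

definition Wt :: "('f,'v) adp set \<Rightarrow> nat \<Rightarrow> ('f,'v) aterm \<Rightarrow> real" where
  "Wt P K u = Max (insert 0 (wd P K ` {d \<in> ConsS P u. tail P d}))"

definition Wmax :: "('f,'v) adp set \<Rightarrow> nat \<Rightarrow> real" where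
  "Wmax P K = (real K + 1) ^ card (dpP P)"

definition Phi_pot :: "('f,'v) adp set \<Rightarrow> nat \<Rightarrow> ('f,'v) aterm \<Rightarrow> real" where
  "Phi_pot P K t = (\<Sum>q\<in>annpos t. Wt P K (flat (subt_at t q)))"

lemma finite_ConsS: "finite P \<Longrightarrow> finite (ConsS P u)"
  unfolding ConsS_def by (rule finite_subset[OF _ finite_dpP]) auto

lemma finite_TC: "finite P \<Longrightarrow> finite (wd P K ` {d \<in> ConsS P u. tail P d})"
  by (rule finite_imageI, rule finite_subset[OF _ finite_ConsS]) auto

lemma wd_ge1: "1 \<le> wd P K d"
  unfolding wd_def by simp

lemma Wt_ge0: "finite P \<Longrightarrow> 0 \<le> Wt P K u"
  unfolding Wt_def using finite_TC by (intro Max_ge) auto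

lemma Wt_ge: "finite P \<Longrightarrow> d \<in> ConsS P u \<Longrightarrow> tail P d \<Longrightarrow> wd P K d \<le> Wt P K u"
  unfolding Wt_def using finite_TC by (intro Max_ge) auto

lemma Wt_le_Wmax: assumes "finite P" shows "Wt P K u \<le> Wmax P K"
proof -
  have "\<forall>x \<in> insert 0 (wd P K ` {d \<in> ConsS P u. tail P d}). x \<le> Wmax P K"
  proof
    fix x assume "x \<in> insert 0 (wd P K ` {d \<in> ConsS P u. tail P d})"
    then show "x \<le> Wmax P K"
    proof
      assume "x = 0" then show ?thesis by (simp add: Wmax_def)
    next
      assume "x \<in> wd P K ` {d \<in> ConsS P u. tail P d}"
      then obtain d where x: "x = wd P K d" by blast
      have "card (succs P d) \<le> card (dpP P)" using succs_sub finite_dpP[OF assms] by (rule card_mono[rotated])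
      then show ?thesis unfolding x wd_def Wmax_def by (intro power_increasing) auto
    qed
  qed
  then show ?thesis unfolding Wt_def using finite_TC[OF assms] by (subst Max_le_iff) auto
qed

lemma Wt_mono:
  assumes fin: "finite P" and st: "(sharp_root u, sharp_root u') \<in> (istep (np P))\<^sup>*"
  shows "Wt P K u' \<le> Wt P K u"
proof -
  have "ConsS P u' \<subseteq> ConsS P u"
    unfolding ConsS_def using st by (auto intro: rtrancl_trans)
  then show ?thesis unfolding Wt_def using finite_TC[OF fin]
    by (intro Max_mono) auto
qed

lemma Wt_consumed:
  assumes ok: "step_ok P s \<pi> \<alpha> \<sigma> p r" and lf: "\<exists>f ts. lhs \<alpha> = Fun f False ts" and fin: "finite P"
    and d: "d \<in> dp_bot \<alpha>" and t: "tail P d"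
  shows "wd P K d \<le> Wt P K (flat (subt_at s \<pi>))"
proof (rule Wt_ge[OF fin _ t])
  note SA = step_ANF[OF ok lf]
  have aP: "\<alpha> \<in> P" using step_ok_D(2)[OF ok] .
  show "d \<in> ConsS P (flat (subt_at s \<pi>))"
    unfolding ConsS_def using dp_bot_dpP[OF aP d] dp_bot_fst[OF d] SA
    by (auto intro!: exI[of _ "flat \<circ> \<sigma>"])
qed

lemma pow_step: "ce < cd \<Longrightarrow> real K * (real K + 1) ^ ce + 1 \<le> (real K + 1) ^ cd"
proof -
  assume "ce < cd"
  then have "(real K + 1) ^ Suc ce \<le> (real K + 1) ^ cd" by (intro power_increasing) auto
  moreover have "real K * (real K + 1) ^ ce + 1 \<le> (real K + 1) ^ Suc ce"
  proof -
    have "1 \<le> (real K + 1) ^ ce" by simp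
    then show ?thesis by (simp add: algebra_simps)
  qed
  ultimately show ?thesis by linarith
qed

lemma Wt_new:
  assumes ok: "step_ok P s \<pi> \<alpha> \<sigma> p r" and lf: "\<exists>f ts. lhs \<alpha> = Fun f False ts" and fin: "finite P"
    and ar: "annotated_at r w" and t: "tail P (lhs \<alpha>, Some (flat (subt_at r w)))"
  shows "real K * Wt P K (tsubst (flat (subt_at r w)) (flat \<circ> \<sigma>)) + 1 \<le> wd P K (lhs \<alpha>, Some (flat (subt_at r w)))"
proof -
  define t' where "t' = flat (subt_at r w)"
  define d where "d = (lhs \<alpha>, Some t')"
  note D = step_ok_D[OF ok]
  note SA = step_ANF[OF ok lf]
  have dP: "d \<in> dpP P" unfolding d_def t'_def by (rule dp_mem(2)[OF D(2) D(5) ar])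
  have tFun: "\<exists>f ts. t' = Fun f False ts" unfolding t'_def by (rule ann_is_Fun[OF ar])
  have shr: "sharp_root (tsubst t' (flat \<circ> \<sigma>)) = tsubst (sharp_root t') (flat \<circ> \<sigma>)"
    using tFun by auto
  have edge: "(d, e) \<in> E P" if e: "e \<in> ConsS P (tsubst t' (flat \<circ> \<sigma>))" for e
  proof -
    obtain \<sigma>2 where e2: "e \<in> dpP P" "(sharp_root (tsubst t' (flat \<circ> \<sigma>)), tsubst (sharp_root (fst e)) \<sigma>2) \<in> (istep (np P))\<^sup>*"
      "ANF P (tsubst (sharp_root (fst e)) \<sigma>2)" using e unfolding ConsS_def by blast
    have ex: "\<exists>\<sigma>1 \<sigma>2'. (tsubst (sharp_root t') \<sigma>1, tsubst (sharp_root (fst e)) \<sigma>2') \<in> (istep (np P))\<^sup>* \<and>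
        ANF P (tsubst (sharp_root (fst d)) \<sigma>1) \<and> ANF P (tsubst (sharp_root (fst e)) \<sigma>2')"
      apply (rule exI[of _ "flat \<circ> \<sigma>"], rule exI[of _ \<sigma>2])
      using e2 SA(1) shr by (simp add: d_def)
    have "dg_edge P d e" unfolding dg_edge_def using dP e2(1) ex by (simp add: d_def)
    then show ?thesis by (simp add: dg_edges_def)
  qed
  have td: "tail P d" using t by (simp add: d_def t'_def)
  have "\<forall>x \<in> insert 0 (wd P K ` {e \<in> ConsS P (tsubst t' (flat \<circ> \<sigma>)). tail P e}). real K * x + 1 \<le> wd P K d"
  proof
    fix x assume "x \<in> insert 0 (wd P K ` {e \<in> ConsS P (tsubst t' (flat \<circ> \<sigma>)). tail P e})"
    then show "real K * x + 1 \<le> wd P K d"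
    proof
      assume "x = 0" then show ?thesis using wd_ge1 by simp
    next
      assume "x \<in> wd P K ` {e \<in> ConsS P (tsubst t' (flat \<circ> \<sigma>)). tail P e}"
      then obtain e where x: "x = wd P K e" "e \<in> ConsS P (tsubst t' (flat \<circ> \<sigma>))" by blast
      have "card (succs P e) < card (succs P d)" by (rule card_succs_less[OF fin td edge[OF x(2)]])
      then show ?thesis unfolding x wd_def by (rule pow_step)
    qed
  qed
  moreover have "Wt P K (tsubst t' (flat \<circ> \<sigma>)) \<in> insert 0 (wd P K ` {e \<in> ConsS P (tsubst t' (flat \<circ> \<sigma>)). tail P e})"
    unfolding Wt_def using finite_TC[OF fin] by (intro Max_in) auto
  ultimately show ?thesis unfolding d_def t'_def by blast
qed




lemma pot_step:
  assumes ok: "step_ok P s \<pi> \<alpha> \<sigma> p r" and lf: "\<exists>f ts. lhs \<alpha> = Fun f False ts" and fin: "finite P"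
    and K: "card (annpos r) \<le> K"
  shows "Phi_pot P K (res s \<pi> \<alpha> \<sigma> r) + (if annotated_at s \<pi> \<and> (\<forall>d\<in>dp_bot \<alpha>. tail P d) then 1 else 0)
    \<le> Phi_pot P K s + (if annotated_at s \<pi> \<and> \<not> (\<forall>d\<in>dp_bot \<alpha>. tail P d) then real K * Wmax P K else 0)"
proof -
  note D = step_ok_D[OF ok]
  define c where "c = res s \<pi> \<alpha> \<sigma> r"
  define W where "W = (\<lambda>t q. Wt P K (flat (subt_at t q)))"
  have W0: "0 \<le> W t q" for t q unfolding W_def by (rule Wt_ge0[OF fin])
  define A1 where "A1 = {q \<in> annpos c. \<not> (\<exists>w. q = \<pi> @ w)}"
  define A2 where "A2 = {q \<in> annpos c. \<exists>w. q = \<pi> @ w}"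
  define B1 where "B1 = {q \<in> annpos s. \<not> (\<exists>w. q = \<pi> @ w)}"
  define WS where "WS = {w. \<pi> @ w \<in> A2}"
  have finA1: "finite A1" "finite A2" "finite B1" unfolding A1_def A2_def B1_def by auto
  have "annpos c = A1 \<union> A2" "A1 \<inter> A2 = {}" unfolding A1_def A2_def by auto
  then have Pc: "Phi_pot P K c = sum (W c) A1 + sum (W c) A2"
    unfolding Phi_pot_def W_def using finA1 by (simp add: sum.union_disjoint)
  have A1B1: "A1 \<subseteq> B1"
    unfolding A1_def B1_def annpos_def c_def using old_pos[OF ok] by blast
  have h1: "sum (W c) A1 \<le> sum (W s) B1"
  proof -
    have "sum (W c) A1 \<le> sum (W s) A1"
    proof (rule sum_mono)
      fix q assume q: "q \<in> A1"
      then have "annotated_at (res s \<pi> \<alpha> \<sigma> r) q" "\<not> (\<exists>w. q = \<pi> @ w)"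
        unfolding A1_def annpos_def c_def by auto
      then have "(sharp_root (flat (subt_at s q)), sharp_root (flat (subt_at c q))) \<in> (istep (np P))\<^sup>*"
        using old_pos[OF ok] unfolding c_def by blast
      then show "W c q \<le> W s q" unfolding W_def by (rule Wt_mono[OF fin])
    qed
    also have "\<dots> \<le> sum (W s) B1" using A1B1 finA1 W0 by (intro sum_mono2) auto
    finally show ?thesis .
  qed
  have A2eq: "A2 = (\<lambda>w. \<pi> @ w) ` WS" unfolding WS_def A2_def by auto
  have sA2: "sum (W c) A2 = (\<Sum>w\<in>WS. W c (\<pi> @ w))"
    unfolding A2eq by (subst sum.reindex) (auto simp: inj_on_def)
  have WSr: "WS \<subseteq> annpos r" and WSs: "w \<in> WS \<Longrightarrow> annotated_at s \<pi>" for w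
    unfolding WS_def A2_def annpos_def c_def using new_pos[OF ok] by auto
  have finWS: "finite WS" using WSr finite_annpos finite_subset by blast
  have cardWS: "card WS \<le> K" using card_mono[OF finite_annpos WSr] K by simp
  have Ps: "Phi_pot P K s \<ge> sum (W s) B1 + (if annotated_at s \<pi> then W s \<pi> else 0)"
  proof (cases "annotated_at s \<pi>")
    case True
    have "\<pi> \<notin> B1" unfolding B1_def by auto
    moreover have "insert \<pi> B1 \<subseteq> annpos s" using True unfolding B1_def annpos_def by auto
    ultimately have "sum (W s) (insert \<pi> B1) \<le> sum (W s) (annpos s)" using W0 by (intro sum_mono2) auto
    then show ?thesis using True \<open>\<pi> \<notin> B1\<close> finA1 unfolding Phi_pot_def W_def by simp
  next
    case False
    have "sum (W s) B1 \<le> sum (W s) (annpos s)" using W0 unfolding B1_def by (intro sum_mono2) auto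
    then show ?thesis using False unfolding Phi_pot_def W_def by simp
  qed
  show ?thesis
  proof (cases "annotated_at s \<pi>")
    case False
    then have "WS = {}" using WSs by blast
    then show ?thesis using Pc h1 sA2 Ps False unfolding c_def by simp
  next
    case ann: True
    show ?thesis
    proof (cases "\<forall>d\<in>dp_bot \<alpha>. tail P d")
      case False
      have "(\<Sum>w\<in>WS. W c (\<pi> @ w)) \<le> (\<Sum>w\<in>WS. Wmax P K)"
        unfolding W_def by (intro sum_mono Wt_le_Wmax[OF fin])
      also have "\<dots> = real (card WS) * Wmax P K" by simp
      also have "\<dots> \<le> real K * Wmax P K" using cardWS by (intro mult_right_mono) (auto simp: Wmax_def)
      finally have "(\<Sum>w\<in>WS. W c (\<pi> @ w)) \<le> real K * Wmax P K" .
      then have "Phi_pot P K c \<le> Phi_pot P K s + real K * Wmax P K"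
        using Pc h1 sA2 Ps ann W0[of s \<pi>] by simp
      then show ?thesis using ann False unfolding c_def by auto
    next
      case True
      obtain d0 where d0: "d0 \<in> dp_bot \<alpha>" using dp_bot_ne by blast
      have Ws1: "1 \<le> W s \<pi>"
        using Wt_consumed[OF ok lf fin d0 True[rule_format, OF d0], of K] wd_ge1[of P K d0]
        unfolding W_def by linarith
      have each: "real K * W c (\<pi> @ w) + 1 \<le> W s \<pi>" if w: "w \<in> WS" for w
      proof -
        have a2: "annotated_at (res s \<pi> \<alpha> \<sigma> r) (\<pi> @ w)" using w unfolding WS_def A2_def annpos_def c_def by auto
        note np = new_pos[OF ok a2]
        define dw where "dw = (lhs \<alpha>, Some (flat (subt_at r w)))"
        have "dw \<in> dp \<alpha>" unfolding dw_def by (rule dp_mem(1)[OF D(2) D(5) np(2)])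
        then have dwb: "dw \<in> dp_bot \<alpha>" unfolding dp_bot_def by auto
        then have tw: "tail P dw" using True by blast
        have "real K * Wt P K (tsubst (flat (subt_at r w)) (flat \<circ> \<sigma>)) + 1 \<le> wd P K dw"
          using Wt_new[OF ok lf fin np(2)] tw unfolding dw_def by blast
        also have "\<dots> \<le> Wt P K (flat (subt_at s \<pi>))" by (rule Wt_consumed[OF ok lf fin dwb tw])
        finally show ?thesis unfolding W_def c_def using np(3) by simp
      qed
      have sum_le: "(\<Sum>w\<in>WS. W c (\<pi> @ w)) + 1 \<le> W s \<pi>"
      proof (cases "K = 0")
        case True
        then have "WS = {}" using cardWS finWS by simp
        then show ?thesis using Ws1 by simp
      next
        case False
        then have Kp: "0 < real K" by simp
        have "(\<Sum>w\<in>WS. W c (\<pi> @ w)) \<le> (\<Sum>w\<in>WS. (W s \<pi> - 1) / real K)"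
        proof (rule sum_mono)
          fix w assume "w \<in> WS"
          then have "real K * W c (\<pi> @ w) \<le> W s \<pi> - 1" using each by fastforce
          then show "W c (\<pi> @ w) \<le> (W s \<pi> - 1) / real K" using Kp by (simp add: field_simps)
        qed
        also have "\<dots> = real (card WS) * ((W s \<pi> - 1) / real K)" by simp
        also have "\<dots> \<le> real K * ((W s \<pi> - 1) / real K)"
          using cardWS Ws1 Kp by (intro mult_right_mono) auto
        also have "\<dots> = W s \<pi> - 1" using Kp by simp
        finally show ?thesis by simp
      qed
      show ?thesis using Pc h1 sA2 Ps ann True sum_le unfolding c_def by simp
    qed
  qed
qed




definition lvl :: "('f,'v) ctree \<Rightarrow> nat \<Rightarrow> nat list set" where
  "lvl T D = {v \<in> cnodes T. length v = D}"

definition upto_lvl :: "('f,'v) ctree \<Rightarrow> nat \<Rightarrow> nat list set" where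
  "upto_lvl T D = {v \<in> cnodes T. length v < D}"

lemma lvl_0: "chain_tree P T \<Longrightarrow> lvl T 0 = {[]}"
  unfolding lvl_def using chain_tree_D(1) by auto

lemma lvl_Suc:
  assumes ct: "chain_tree P T"
  shows "lvl T (Suc D) = (\<lambda>(v, i). v @ [i]) ` (SIGMA v : lvl T D. {..<nch T v})"
proof
  show "lvl T (Suc D) \<subseteq> (\<lambda>(v, i). v @ [i]) ` (SIGMA v : lvl T D. {..<nch T v})"
  proof
    fix w assume w: "w \<in> lvl T (Suc D)"
    then have "w \<noteq> []" unfolding lvl_def by auto
    then obtain v i where wv: "w = v @ [i]" by (metis append_butlast_last_id)
    have "w \<in> cnodes T" using w unfolding lvl_def by auto
    then have "v \<in> cnodes T" "i < nch T v" using chain_tree_parent[OF ct] wv by auto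
    moreover have "length v = D" using w wv unfolding lvl_def by auto
    ultimately show "w \<in> (\<lambda>(v, i). v @ [i]) ` (SIGMA v : lvl T D. {..<nch T v})"
      unfolding lvl_def wv by force
  qed
next
  show "(\<lambda>(v, i). v @ [i]) ` (SIGMA v : lvl T D. {..<nch T v}) \<subseteq> lvl T (Suc D)"
    using chain_tree_D(4)[OF ct] unfolding lvl_def by auto
qed

lemma finite_lvl: assumes ct: "chain_tree P T" shows "finite (lvl T D)"
proof (induction D)
  case 0 then show ?case using lvl_0[OF ct] by simp
next
  case (Suc D) then show ?case unfolding lvl_Suc[OF ct] by auto
qed

lemma sum_lvl_Suc:
  assumes ct: "chain_tree P T"
  shows "(\<Sum>w\<in>lvl T (Suc D). f w) = (\<Sum>v\<in>lvl T D. \<Sum>i<nch T v. f (v @ [i]))"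
proof -
  have inj: "inj_on (\<lambda>(v, i). v @ [i]) (SIGMA v : lvl T D. {..<nch T v})"
    by (auto simp: inj_on_def)
  have "(\<Sum>w\<in>lvl T (Suc D). f w) = (\<Sum>x\<in>(SIGMA v : lvl T D. {..<nch T v}). f ((\<lambda>(v, i). v @ [i]) x))"
    unfolding lvl_Suc[OF ct] using sum.reindex[OF inj, of f] by (simp add: comp_def)
  also have "\<dots> = (\<Sum>v\<in>lvl T D. \<Sum>i<nch T v. f (v @ [i]))"
  proof -
    have "(\<Sum>v\<in>lvl T D. \<Sum>i<nch T v. f (v @ [i])) = (\<Sum>(v, i)\<in>(SIGMA v : lvl T D. {..<nch T v}). f (v @ [i]))"
      by (rule sum.Sigma) (auto intro: finite_lvl[OF ct])
    also have "\<dots> = (\<Sum>x\<in>(SIGMA v : lvl T D. {..<nch T v}). f ((\<lambda>(v, i). v @ [i]) x))"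
      by (rule sum.cong) auto
    finally show ?thesis by simp
  qed
  finally show ?thesis .
qed

lemma upto_lvl_Suc: "upto_lvl T (Suc D) = upto_lvl T D \<union> lvl T D" "upto_lvl T D \<inter> lvl T D = {}"
  unfolding upto_lvl_def lvl_def by auto

lemma finite_upto_lvl: "chain_tree P T \<Longrightarrow> finite (upto_lvl T D)"
proof (induction D)
  case 0 then show ?case by (simp add: upto_lvl_def)
next
  case (Suc D) then show ?case using upto_lvl_Suc(1)[of T D] finite_lvl by auto
qed

lemma child_prob:
  assumes ct: "chain_tree P T" and w: "wfP P" and v: "v \<in> cnodes T" and n: "0 < nch T v" and i: "i < nch T v"
    and pv: "cprob T v \<noteq> 0"
  shows "cprob T (v @ [i]) = cprob T v * fst (chL T v ! i)" "0 < fst (chL T v ! i)"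
proof -
  have co: "child_ok T v (chL T v)" by (rule child_ok_ex[OF ct v n])
  then have "cprob T (v @ [i]) / cprob T v = fst (chL T v ! i)" using i by (simp add: child_ok_def)
  then show "cprob T (v @ [i]) = cprob T v * fst (chL T v ! i)" using pv by (simp add: field_simps)
  have ok: "step_ok P (cterm T v) (cpos T v) (crule T v) (csub T v) (fst (chL T v ! i)) (snd (chL T v ! i))"
    and cr: "crule T v \<in> P" using node_step_ok[OF ct w v n i] by auto
  show "0 < fst (chL T v ! i)" using wfP_rhs[OF w cr step_ok_D(5)[OF ok]] by simp
qed

lemma prob_pos:
  assumes ct: "chain_tree P T" and w: "wfP P" and v: "v \<in> cnodes T"
  shows "0 < cprob T v"
  using v
proof (induction v rule: rev_induct)
  case Nil then show ?case using chain_tree_D(2)[OF ct] by simp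
next
  case (snoc i v)
  have v: "v \<in> cnodes T" and i: "i < nch T v" using chain_tree_parent[OF ct snoc.prems] by auto
  then have n: "0 < nch T v" by simp
  have pv: "0 < cprob T v" using snoc.IH v by simp
  show ?case using child_prob[OF ct w v n i] pv by simp
qed

lemma child_prob_sum:
  assumes ct: "chain_tree P T" and w: "wfP P" and v: "v \<in> cnodes T" and n: "0 < nch T v"
  shows "(\<Sum>i<nch T v. cprob T (v @ [i])) = cprob T v"
proof -
  have co: "child_ok T v (chL T v)" by (rule child_ok_ex[OF ct v n])
  have cr: "crule T v \<in> P" using node_step_ok[OF ct w v n n] by auto
  have pv: "cprob T v \<noteq> 0" using prob_pos[OF ct w v] by simp
  have len: "length (chL T v) = nch T v" using co by (simp add: child_ok_def)
  have "(\<Sum>i<nch T v. fst (chL T v ! i)) = sum_list (map fst (chL T v))"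
    using len by (simp add: sum_list_sum_nth atLeast0LessThan)
  also have "\<dots> = sum_mset (image_mset fst (mset (chL T v)))"
    by (metis mset_map sum_mset_sum_list)
  also have "\<dots> = 1" using co wfP_sum[OF w cr] by (simp add: child_ok_def)
  finally have s1: "(\<Sum>i<nch T v. fst (chL T v ! i)) = 1" .
  have "(\<Sum>i<nch T v. cprob T (v @ [i])) = (\<Sum>i<nch T v. cprob T v * fst (chL T v ! i))"
    using child_prob(1)[OF ct w v n _ pv] by simp
  also have "\<dots> = cprob T v" using s1 by (simp add: sum_distrib_left[symmetric])
  finally show ?thesis .
qed

lemma tree_potential:
  assumes ct: "chain_tree P T" and w: "wfP P"
    and Pot0: "\<And>v. 0 \<le> Pot v" and inc0: "\<And>v. 0 \<le> inc v"
    and step: "\<And>v i. v \<in> cnodes T \<Longrightarrow> 0 < nch T v \<Longrightarrow> i < nch T v \<Longrightarrow>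
        Pot (v @ [i]) + (if dec v then 1 else 0) \<le> Pot v + inc v"
  shows "(\<Sum>v\<in>upto_lvl T D. if 0 < nch T v \<and> dec v then cprob T v else 0) + (\<Sum>v\<in>lvl T D. cprob T v * Pot v)
    \<le> Pot [] + (\<Sum>v\<in>upto_lvl T D. if 0 < nch T v then cprob T v * inc v else 0)"
proof (induction D)
  case 0
  show ?case using lvl_0[OF ct] chain_tree_D(2)[OF ct] by (simp add: upto_lvl_def)
next
  case (Suc D)
  have per: "(\<Sum>i<nch T v. cprob T (v @ [i]) * Pot (v @ [i])) + (if 0 < nch T v \<and> dec v then cprob T v else 0)
      \<le> cprob T v * Pot v + (if 0 < nch T v then cprob T v * inc v else 0)" if v: "v \<in> lvl T D" for v
  proof (cases "0 < nch T v")
    case False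
    have "0 \<le> cprob T v" using prob_pos[OF ct w] v unfolding lvl_def by (simp add: less_imp_le)
    then show ?thesis using False Pot0[of v] by simp
  next
    case True
    have vc: "v \<in> cnodes T" using v unfolding lvl_def by simp
    have "(\<Sum>i<nch T v. cprob T (v @ [i]) * Pot (v @ [i])) \<le>
        (\<Sum>i<nch T v. cprob T (v @ [i]) * (Pot v + inc v - (if dec v then 1 else 0)))"
    proof (rule sum_mono)
      fix i assume "i \<in> {..<nch T v}"
      then have i: "i < nch T v" by simp
      have "0 < cprob T (v @ [i])" using prob_pos[OF ct w] chain_tree_D(4)[OF ct] vc i by blast
      moreover have "Pot (v @ [i]) \<le> Pot v + inc v - (if dec v then 1 else 0)"
        using step[OF vc True i] by simp
      ultimately show "cprob T (v @ [i]) * Pot (v @ [i]) \<le> cprob T (v @ [i]) * (Pot v + inc v - (if dec v then 1 else 0))"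
        by (intro mult_left_mono) auto
    qed
    also have "\<dots> = (\<Sum>i<nch T v. cprob T (v @ [i])) * (Pot v + inc v - (if dec v then 1 else 0))"
      by (simp add: sum_distrib_right)
    also have "\<dots> = cprob T v * (Pot v + inc v - (if dec v then 1 else 0))"
      using child_prob_sum[OF ct w vc True] by simp
    finally show ?thesis using True by (cases "dec v") (simp_all add: algebra_simps)
  qed
  have "(\<Sum>w\<in>lvl T (Suc D). cprob T w * Pot w) + (\<Sum>v\<in>lvl T D. if 0 < nch T v \<and> dec v then cprob T v else 0)
      = (\<Sum>v\<in>lvl T D. (\<Sum>i<nch T v. cprob T (v @ [i]) * Pot (v @ [i])) + (if 0 < nch T v \<and> dec v then cprob T v else 0))"
    unfolding sum_lvl_Suc[OF ct] by (simp add: sum.distrib)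
  also have "\<dots> \<le> (\<Sum>v\<in>lvl T D. cprob T v * Pot v + (if 0 < nch T v then cprob T v * inc v else 0))"
    using per by (intro sum_mono) auto
  also have "\<dots> = (\<Sum>v\<in>lvl T D. cprob T v * Pot v) + (\<Sum>v\<in>lvl T D. if 0 < nch T v then cprob T v * inc v else 0)"
    by (simp add: sum.distrib)
  finally have lv: "(\<Sum>w\<in>lvl T (Suc D). cprob T w * Pot w) + (\<Sum>v\<in>lvl T D. if 0 < nch T v \<and> dec v then cprob T v else 0)
      \<le> (\<Sum>v\<in>lvl T D. cprob T v * Pot v) + (\<Sum>v\<in>lvl T D. if 0 < nch T v then cprob T v * inc v else 0)" .
  have fu: "finite (upto_lvl T D)" "finite (lvl T D)" using finite_upto_lvl[OF ct] finite_lvl[OF ct] by auto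
  have s1: "(\<Sum>v\<in>upto_lvl T (Suc D). g v) = (\<Sum>v\<in>upto_lvl T D. g v) + (\<Sum>v\<in>lvl T D. g v)" for g :: "nat list \<Rightarrow> real"
    unfolding upto_lvl_Suc(1) by (rule sum.union_disjoint[OF fu(1) fu(2) upto_lvl_Suc(2)])
  show ?case unfolding s1 using Suc.IH lv by linarith
qed




definition Kc :: "('f,'v) adp set \<Rightarrow> nat" where
  "Kc P = Max (insert 0 ((\<lambda>x. card (annpos (snd x))) ` (\<Union>\<alpha>\<in>P. set_mset (rhs \<alpha>))))"

lemma Kc_bound:
  assumes "finite P" "\<alpha> \<in> P" "(p, r) \<in># rhs \<alpha>"
  shows "card (annpos r) \<le> Kc P"
  unfolding Kc_def using assms by (intro Max_ge) force+

definition decT where "decT P T v \<longleftrightarrow> annotated_at (cterm T v) (cpos T v) \<and> (\<forall>d\<in>dp_bot (crule T v). tail P d)"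
definition incT where "incT P K T v = (if annotated_at (cterm T v) (cpos T v) \<and> \<not> (\<forall>d\<in>dp_bot (crule T v). tail P d) then real K * Wmax P K else 0)"

lemma Wmax_ge0: "0 \<le> Wmax P K" unfolding Wmax_def by simp

lemma tree_pot_applied:
  assumes ct: "chain_tree P T" and w: "wfP P"
  shows "(\<Sum>v\<in>upto_lvl T D. if 0 < nch T v \<and> decT P T v then cprob T v else 0)
    \<le> Phi_pot P (Kc P) (cterm T []) + (\<Sum>v\<in>upto_lvl T D. if 0 < nch T v then cprob T v * incT P (Kc P) T v else 0)"
proof -
  have fin: "finite P" using w by (simp add: wfP_def)
  let ?Pot = "\<lambda>v. Phi_pot P (Kc P) (cterm T v)"
  have Pot0: "0 \<le> ?Pot v" for v unfolding Phi_pot_def using Wt_ge0[OF fin] by (intro sum_nonneg) auto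
  have inc0: "0 \<le> incT P (Kc P) T v" for v unfolding incT_def using Wmax_ge0[of P "Kc P"] by simp
  have step: "?Pot (v @ [i]) + (if decT P T v then 1 else 0) \<le> ?Pot v + incT P (Kc P) T v"
    if v: "v \<in> cnodes T" and n: "0 < nch T v" and i: "i < nch T v" for v i
  proof -
    have ok: "step_ok P (cterm T v) (cpos T v) (crule T v) (csub T v) (fst (chL T v ! i)) (snd (chL T v ! i))"
      and ch: "cterm T (v @ [i]) = res (cterm T v) (cpos T v) (crule T v) (csub T v) (snd (chL T v ! i))"
      and cr: "crule T v \<in> P" using node_step_ok[OF ct w v n i] by auto
    have K: "card (annpos (snd (chL T v ! i))) \<le> Kc P"
      using Kc_bound[OF fin cr step_ok_D(5)[OF ok]] .
    show ?thesis using pot_step[OF ok wfP_lhs_Fun[OF w cr] fin K] ch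
      unfolding decT_def incT_def by simp
  qed
  have "(\<Sum>v\<in>upto_lvl T D. if 0 < nch T v \<and> decT P T v then cprob T v else 0) + (\<Sum>v\<in>lvl T D. cprob T v * ?Pot v)
    \<le> ?Pot [] + (\<Sum>v\<in>upto_lvl T D. if 0 < nch T v then cprob T v * incT P (Kc P) T v else 0)"
    by (rule tree_potential[OF ct w Pot0 inc0 step])
  moreover have "0 \<le> (\<Sum>v\<in>lvl T D. cprob T v * ?Pot v)"
    using prob_pos[OF ct w] Pot0 unfolding lvl_def by (intro sum_nonneg) (auto intro: mult_nonneg_nonneg less_imp_le)
  ultimately show ?thesis by linarith
qed

lemma sum_cover:
  fixes f :: "'a \<Rightarrow> ennreal"
  assumes "finite I" "finite X" "\<forall>x\<in>X. \<exists>J\<in>I. x \<in> C J"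
  shows "sum f X \<le> (\<Sum>J\<in>I. sum f (X \<inter> C J))"
proof -
  have "sum f X \<le> (\<Sum>x\<in>X. \<Sum>J\<in>I. if x \<in> C J then f x else 0)"
  proof (rule sum_mono)
    fix x assume "x \<in> X"
    then obtain J where J: "J \<in> I" "x \<in> C J" using assms(3) by blast
    have "f x = (if x \<in> C J then f x else 0)" using J by simp
    also have "\<dots> \<le> (\<Sum>J\<in>I. if x \<in> C J then f x else 0)"
      by (rule member_le_sum[OF J(1)]) (auto simp: assms(1))
    finally show "f x \<le> (\<Sum>J\<in>I. if x \<in> C J then f x else 0)" .
  qed
  also have "\<dots> = (\<Sum>J\<in>I. \<Sum>x\<in>X. if x \<in> C J then f x else 0)" by (rule sum.swap)
  also have "\<dots> = (\<Sum>J\<in>I. sum f (X \<inter> C J))"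
  proof (rule sum.cong[OF refl])
    fix J show "(\<Sum>x\<in>X. if x \<in> C J then f x else 0) = sum f (X \<inter> C J)"
      using assms(2) by (simp add: sum.inter_restrict)
  qed
  finally show ?thesis .
qed

lemma tJ_root: "cterm (tJ P J T) [] = cterm T []"
  by (simp add: tJ_def)

lemma typeb_sum:
  assumes ct: "chain_tree P T" and w: "wfP P" and root: "cterm T [] = sharp_root t"
    and X: "finite X" "X \<subseteq> counted_nodes S T" "\<forall>v\<in>X. \<not> (\<forall>d\<in>dp_bot (crule T v). tail P d)"
  shows "(\<Sum>v\<in>X. ennreal (cprob T v)) \<le> (\<Sum>J\<in>{J. SCC_prefix P J}. edh (restr P J ` P) (restr P J ` S) t)"
proof -
  have fin: "finite P" using w by (simp add: wfP_def)
  let ?I = "{J. SCC_prefix P J}"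
  let ?C = "\<lambda>J. counted_nodes (restr P J ` S) (tJ P J T)"
  have cov: "\<forall>x\<in>X. \<exists>J\<in>?I. x \<in> ?C J"
  proof
    fix x assume x: "x \<in> X"
    then obtain d where "d \<in> dp_bot (crule T x)" "\<not> tail P d" using X(3) by blast
    then show "\<exists>J\<in>?I. x \<in> ?C J" using typeb_counted[OF ct w _ ] X(2) x by blast
  qed
  have "(\<Sum>v\<in>X. ennreal (cprob T v)) \<le> (\<Sum>J\<in>?I. \<Sum>v\<in>X \<inter> ?C J. ennreal (cprob T v))"
    by (rule sum_cover[OF finite_SCC_prefixes[OF fin] X(1) cov])
  also have "\<dots> \<le> (\<Sum>J\<in>?I. edh (restr P J ` P) (restr P J ` S) t)"
  proof (rule sum_mono)
    fix J assume "J \<in> ?I"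
    have "(\<Sum>v\<in>X \<inter> ?C J. ennreal (cprob T v)) = (\<Sum>v\<in>X \<inter> ?C J. ennreal (cprob (tJ P J T) v))"
      by (simp add: tJ_def)
    also have "\<dots> \<le> edl (restr P J ` S) (tJ P J T)" using X(1) by (intro sum_le_edl) auto
    also have "\<dots> \<le> edh (restr P J ` P) (restr P J ` S) t"
      using tJ_chain[OF ct] root tJ_root[of P J T] by (intro edl_le_edh) auto
    finally show "(\<Sum>v\<in>X \<inter> ?C J. ennreal (cprob T v)) \<le> edh (restr P J ` P) (restr P J ` S) t" .
  qed
  finally show ?thesis .
qed

lemma basic_annpos:
  assumes "basic P t" shows "annpos (sharp_root t) \<subseteq> {[]}"
proof
  fix q assume q: "q \<in> annpos (sharp_root t)"
  obtain f ts where t: "t = Fun f False ts" "\<forall>u\<in>set ts. unannotated u" using assms unfolding basic_def by blast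
  show "q \<in> {[]}"
  proof (cases q)
    case Nil then show ?thesis by simp
  next
    case (Cons i q')
    then have "i < length ts" "annotated_at (ts ! i) q'" using q t unfolding annpos_def by auto
    moreover have "flat (ts ! i) = ts ! i" using t(2) \<open>i < length ts\<close> unfolding unannotated_def by simp
    ultimately show ?thesis using flat_not_annotated by metis
  qed
qed

lemma Phi_root_le:
  assumes fin: "finite P" and b: "basic P t"
  shows "Phi_pot P K (sharp_root t) \<le> Wmax P K"
proof -
  have "Phi_pot P K (sharp_root t) \<le> (\<Sum>q\<in>{[]}. Wt P K (flat (subt_at (sharp_root t) q)))"
    unfolding Phi_pot_def using basic_annpos[OF b] Wt_ge0[OF fin] by (intro sum_mono2) auto
  also have "\<dots> \<le> Wmax P K" using Wt_le_Wmax[OF fin] by simp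
  finally show ?thesis .
qed




lemma tree_bound:
  assumes ct: "chain_tree P T" and w: "wfP P" and root: "cterm T [] = sharp_root t" and b: "basic P t"
  shows "edl S T \<le> ennreal (Wmax P (Kc P)) + ennreal (1 + real (Kc P) * Wmax P (Kc P)) *
      (\<Sum>J\<in>{J. SCC_prefix P J}. edh (restr P J ` P) (restr P J ` S) t) +
      ennreal (real (Kc P) * Wmax P (Kc P)) * edh P (P - S) t"
proof -
  have fin: "finite P" using w by (simp add: wfP_def)
  define W where "W = Wmax P (Kc P)"
  define KW where "KW = real (Kc P) * W"
  define B where "B = (\<Sum>J\<in>{J. SCC_prefix P J}. edh (restr P J ` P) (restr P J ` S) t)"
  define E2 where "E2 = edh P (P - S) t"
  have W0: "0 \<le> W" unfolding W_def by (rule Wmax_ge0)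
  have KW0: "0 \<le> KW" unfolding KW_def using W0 by simp
  have pnn: "v \<in> cnodes T \<Longrightarrow> 0 \<le> cprob T v" for v using prob_pos[OF ct w] less_imp_le by blast
  have main: "(\<Sum>v\<in>F. ennreal (cprob T v)) \<le> ennreal W + ennreal (1 + KW) * B + ennreal KW * E2"
    if F: "finite F" "F \<subseteq> counted_nodes S T" for F
  proof -
    define Fc where "Fc = {v \<in> F. decT P T v}"
    define Fb where "Fb = {v \<in> F. \<not> decT P T v}"
    have FcFb: "F = Fc \<union> Fb" "Fc \<inter> Fb = {}" "finite Fc" "finite Fb" unfolding Fc_def Fb_def using F(1) by auto
    have sF: "(\<Sum>v\<in>F. ennreal (cprob T v)) = (\<Sum>v\<in>Fb. ennreal (cprob T v)) + (\<Sum>v\<in>Fc. ennreal (cprob T v))"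
      using FcFb by (simp add: sum.union_disjoint add.commute)
    have Fcnt: "v \<in> F \<Longrightarrow> v \<in> cnodes T \<and> 0 < nch T v \<and> crule T v \<in> S \<and> annotated_at (cterm T v) (cpos T v)" for v
      using F(2) unfolding counted_nodes_def by auto
    have sFb: "(\<Sum>v\<in>Fb. ennreal (cprob T v)) \<le> B"
      unfolding B_def
    proof (rule typeb_sum[OF ct w root FcFb(4)])
      show "Fb \<subseteq> counted_nodes S T" using F(2) unfolding Fb_def by auto
      show "\<forall>v\<in>Fb. \<not> (\<forall>d\<in>dp_bot (crule T v). tail P d)"
        using Fcnt unfolding Fb_def decT_def by auto
    qed
    define D where "D = Suc (Max (insert 0 (length ` F)))"
    have FcD: "Fc \<subseteq> upto_lvl T D"
    proof
      fix v assume "v \<in> Fc"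
      then have "v \<in> F" "v \<in> cnodes T" using Fcnt unfolding Fc_def by auto
      then have "length v \<le> Max (insert 0 (length ` F))" using F(1) by (intro Max_ge) auto
      then show "v \<in> upto_lvl T D" using \<open>v \<in> cnodes T\<close> unfolding upto_lvl_def D_def by auto
    qed
    define I where "I = {v \<in> upto_lvl T D. 0 < nch T v \<and> annotated_at (cterm T v) (cpos T v) \<and> \<not> (\<forall>d\<in>dp_bot (crule T v). tail P d)}"
    have finU: "finite (upto_lvl T D)" by (rule finite_upto_lvl[OF ct])
    have finI: "finite I" unfolding I_def using finU by simp
    have r1: "(\<Sum>v\<in>Fc. cprob T v) \<le> (\<Sum>v\<in>upto_lvl T D. if 0 < nch T v \<and> decT P T v then cprob T v else 0)"
    proof -
      have "(\<Sum>v\<in>Fc. cprob T v) = (\<Sum>v\<in>Fc. if 0 < nch T v \<and> decT P T v then cprob T v else 0)"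
        using Fcnt unfolding Fc_def by (intro sum.cong) auto
      also have "\<dots> \<le> (\<Sum>v\<in>upto_lvl T D. if 0 < nch T v \<and> decT P T v then cprob T v else 0)"
        using FcD finU pnn unfolding upto_lvl_def by (intro sum_mono2) auto
      finally show ?thesis .
    qed
    have r2: "(\<Sum>v\<in>upto_lvl T D. if 0 < nch T v then cprob T v * incT P (Kc P) T v else 0) = KW * (\<Sum>v\<in>I. cprob T v)"
    proof -
      have "(\<Sum>v\<in>upto_lvl T D. if 0 < nch T v then cprob T v * incT P (Kc P) T v else 0)
          = (\<Sum>v\<in>upto_lvl T D. if 0 < nch T v \<and> annotated_at (cterm T v) (cpos T v) \<and> \<not> (\<forall>d\<in>dp_bot (crule T v). tail P d) then KW * cprob T v else 0)"
        by (intro sum.cong) (auto simp: incT_def KW_def W_def)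
      also have "\<dots> = (\<Sum>v\<in>I. KW * cprob T v)"
        unfolding I_def using finU by (simp add: sum.inter_filter)
      finally show ?thesis by (simp add: sum_distrib_left)
    qed
    have r3: "Phi_pot P (Kc P) (cterm T []) \<le> W" unfolding root W_def by (rule Phi_root_le[OF fin b])
    have real_bound: "(\<Sum>v\<in>Fc. cprob T v) \<le> W + KW * (\<Sum>v\<in>I. cprob T v)"
      using r1 tree_pot_applied[OF ct w, of D] r2 r3 by linarith
    have Ipos: "0 \<le> (\<Sum>v\<in>I. cprob T v)" using pnn unfolding I_def upto_lvl_def by (intro sum_nonneg) auto
    have sI: "(\<Sum>v\<in>I. ennreal (cprob T v)) \<le> B + E2"
    proof -
      define I1 where "I1 = {v \<in> I. crule T v \<in> S}"
      define I2 where "I2 = {v \<in> I. crule T v \<notin> S}"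
      have "I = I1 \<union> I2" "I1 \<inter> I2 = {}" "finite I1" "finite I2" unfolding I1_def I2_def using finI by auto
      then have eq: "(\<Sum>v\<in>I. ennreal (cprob T v)) = (\<Sum>v\<in>I1. ennreal (cprob T v)) + (\<Sum>v\<in>I2. ennreal (cprob T v))"
        by (simp add: sum.union_disjoint)
      have c1: "I1 \<subseteq> counted_nodes S T" unfolding I1_def I_def upto_lvl_def counted_nodes_def by auto
      have s1: "(\<Sum>v\<in>I1. ennreal (cprob T v)) \<le> B" unfolding B_def
        by (rule typeb_sum[OF ct w root \<open>finite I1\<close> c1]) (auto simp: I1_def I_def)
      have c2: "I2 \<subseteq> counted_nodes (P - S) T"
      proof
        fix v assume v: "v \<in> I2"
        then have "v \<in> cnodes T" "0 < nch T v" unfolding I2_def I_def upto_lvl_def by auto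
        then have "crule T v \<in> P" using node_step_ok[OF ct w] by blast
        then show "v \<in> counted_nodes (P - S) T" using v unfolding I2_def I_def upto_lvl_def counted_nodes_def by auto
      qed
      have "(\<Sum>v\<in>I2. ennreal (cprob T v)) \<le> edl (P - S) T" by (rule sum_le_edl[OF \<open>finite I2\<close> c2])
      also have "\<dots> \<le> E2" unfolding E2_def using ct root by (rule edl_le_edh)
      finally show ?thesis using eq s1 by (simp add: add_mono)
    qed
    have "(\<Sum>v\<in>Fc. ennreal (cprob T v)) = ennreal (\<Sum>v\<in>Fc. cprob T v)"
      using pnn Fcnt unfolding Fc_def by (intro sum_ennreal) auto
    also have "\<dots> \<le> ennreal (W + KW * (\<Sum>v\<in>I. cprob T v))" using real_bound by (rule ennreal_leI)
    also have "\<dots> = ennreal W + ennreal KW * ennreal (\<Sum>v\<in>I. cprob T v)"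
      using W0 KW0 Ipos by (simp add: ennreal_mult)
    also have "ennreal (\<Sum>v\<in>I. cprob T v) = (\<Sum>v\<in>I. ennreal (cprob T v))"
      using pnn unfolding I_def upto_lvl_def by (intro sum_ennreal[symmetric]) auto
    finally have sFc: "(\<Sum>v\<in>Fc. ennreal (cprob T v)) \<le> ennreal W + ennreal KW * (B + E2)"
      using sI by (meson add_left_mono mult_left_mono order_trans zero_le)
    have "(\<Sum>v\<in>F. ennreal (cprob T v)) \<le> B + (ennreal W + ennreal KW * (B + E2))"
      unfolding sF using sFb sFc by (rule add_mono)
    also have "\<dots> = ennreal W + ennreal (1 + KW) * B + ennreal KW * E2"
    proof -
      have e: "ennreal (1 + KW) = 1 + ennreal KW" using KW0 by (simp add: ennreal_plus)
      show ?thesis unfolding e by (simp add: algebra_simps)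
    qed
    finally show ?thesis .
  qed
  show ?thesis
    unfolding edl_def W_def[symmetric] KW_def[symmetric] B_def[symmetric] E2_def[symmetric]
    using main by (intro SUP_least) auto
qed




lemma edh_bound:
  assumes w: "wfP P" and b: "basic P t"
  shows "edh P S t \<le> ennreal (Wmax P (Kc P)) + ennreal (1 + real (Kc P) * Wmax P (Kc P)) *
      (\<Sum>J\<in>{J. SCC_prefix P J}. edh (restr P J ` P) (restr P J ` S) t) +
      ennreal (real (Kc P) * Wmax P (Kc P)) * edh P (P - S) t"
  unfolding edh_def[of P S]
  by (rule SUP_least) (auto intro: tree_bound[OF _ w _ b])

lemma ifun_bound:
  assumes w: "wfP P"
  shows "ifun P S n \<le> ennreal (Wmax P (Kc P)) + ennreal (1 + real (Kc P) * Wmax P (Kc P)) *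
      (\<Sum>J\<in>{J. SCC_prefix P J}. ifun (restr P J ` P) (restr P J ` S) n) +
      ennreal (real (Kc P) * Wmax P (Kc P)) * ifun P (P - S) n"
  unfolding ifun_def[of P S]
proof (rule SUP_least)
  fix t assume t: "t \<in> {t. basic P t \<and> tsize t \<le> n}"
  then have b: "basic P t" and sz: "tsize t \<le> n" by auto
  have e1: "edh (restr P J ` P) (restr P J ` S) t \<le> ifun (restr P J ` P) (restr P J ` S) n" for J
    unfolding ifun_def using b sz basic_restr[of P J] by (intro SUP_upper) auto
  have e2: "edh P (P - S) t \<le> ifun P (P - S) n"
    unfolding ifun_def using b sz by (intro SUP_upper) auto
  have "edh P S t \<le> ennreal (Wmax P (Kc P)) + ennreal (1 + real (Kc P) * Wmax P (Kc P)) *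
      (\<Sum>J\<in>{J. SCC_prefix P J}. edh (restr P J ` P) (restr P J ` S) t) +
      ennreal (real (Kc P) * Wmax P (Kc P)) * edh P (P - S) t" by (rule edh_bound[OF w b])
  also have "\<dots> \<le> ennreal (Wmax P (Kc P)) + ennreal (1 + real (Kc P) * Wmax P (Kc P)) *
      (\<Sum>J\<in>{J. SCC_prefix P J}. ifun (restr P J ` P) (restr P J ` S) n) +
      ennreal (real (Kc P) * Wmax P (Kc P)) * ifun P (P - S) n"
    using e1 e2 by (intro add_mono mult_left_mono sum_mono order_refl) auto
  finally show "edh P S t \<le> \<dots>" .
qed

lemma mono_scale: "mono (f :: nat \<Rightarrow> ennreal) \<Longrightarrow> mono (\<lambda>n. c * f n)"
  by (auto simp: mono_def intro: mult_left_mono)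

lemma cMax_ge: "finite A \<Longrightarrow> x \<in> A \<Longrightarrow> x \<le> cMax A"
  unfolding cMax_def by (intro Max_ge) auto

lemma main_iota:
  assumes w: "wfP P" and X1: "iota P (P - S) \<le> X"
    and X2: "\<And>J. SCC_prefix P J \<Longrightarrow> iota (restr P J ` P) (restr P J ` S) \<le> X"
  shows "iota P S \<le> X"
proof -
  define c0 where "c0 = Wmax P (Kc P)"
  define c1 where "c1 = 1 + real (Kc P) * Wmax P (Kc P)"
  define c2 where "c2 = real (Kc P) * Wmax P (Kc P)"
  have fin: "finite P" using w by (simp add: wfP_def)
  define g1 where "g1 = (\<lambda>n. ennreal c1 * (\<Sum>J\<in>{J. SCC_prefix P J}. ifun (restr P J ` P) (restr P J ` S) n))"
  define g2 where "g2 = (\<lambda>n. ennreal c2 * ifun P (P - S) n)"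
  define g where "g = (\<lambda>n. ennreal c0 + g1 n + g2 n)"
  have le: "ifun P S n \<le> g n" for n unfolding g_def g1_def g2_def c0_def c1_def c2_def by (rule ifun_bound[OF w])
  have m1: "mono g1" unfolding g1_def by (intro mono_scale mono_sum ifun_mono)
  have m2: "mono g2" unfolding g2_def by (intro mono_scale ifun_mono)
  have m0: "mono (\<lambda>n. ennreal c0)" by (simp add: mono_def)
  have mg: "mono g" unfolding g_def using m0 m1 m2 by (intro mono_add) auto
  have c1p: "0 \<le> c1" "0 \<le> c2" unfolding c1_def c2_def Wmax_def by auto
  have k0: "cls (\<lambda>n. ennreal c0) \<le> X" using cls_const[of c0] cplx_le_simps(9)[of X] by (rule order_trans)
  have k1: "cls g1 \<le> X"
  proof -
    have "cls g1 \<le> cls (\<lambda>n. \<Sum>J\<in>{J. SCC_prefix P J}. ifun (restr P J ` P) (restr P J ` S) n)"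
      unfolding g1_def using c1p by (intro cls_scale mono_sum ifun_mono)
    also have "\<dots> \<le> X"
      using finite_SCC_prefixes[OF fin] X2 ifun_mono by (intro cls_sum) (auto simp: iota_ifun)
    finally show ?thesis .
  qed
  have k2: "cls g2 \<le> X"
  proof -
    have "cls g2 \<le> cls (ifun P (P - S))" unfolding g2_def using c1p by (intro cls_scale ifun_mono)
    also have "\<dots> \<le> X" using X1 by (simp add: iota_ifun)
    finally show ?thesis .
  qed
  have "cls g \<le> X"
  proof -
    have "cls (\<lambda>n. ennreal c0 + g1 n) \<le> X" by (rule cls_add[OF k0 k1 m0 m1])
    moreover have "mono (\<lambda>n. ennreal c0 + g1 n)" using m0 m1 by (intro mono_add)
    ultimately have "cls (\<lambda>n. (ennreal c0 + g1 n) + g2 n) \<le> X" using cls_add k2 m2 by blast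
    then show ?thesis unfolding g_def by simp
  qed
  moreover have "cls (ifun P S) \<le> cls g" by (rule cls_mono[OF le mg])
  ultimately show ?thesis unfolding iota_ifun by simp
qed

theorem mainTheorem6:
  assumes "infinite (UNIV :: 'v set)"
  shows "sound_processor (proc_DG :: ('f::finite, 'v) problem \<Rightarrow> cplx \<times> ('f, 'v) problem set)"
  unfolding sound_processor_def
proof (intro allI impI)
  fix PS :: "('f, 'v) problem"
  assume ap: "adp_problem PS"
  obtain P S where PS: "PS = (P, S)" by (cases PS)
  have w: "wfP P" and SP: "S \<subseteq> P" using ap unfolding PS adp_problem_def wfP_def by auto
  have fin: "finite P" using w by (simp add: wfP_def)
  define Outs where "Outs = {(restr P J ` P, restr P J ` S) | J. SCC_prefix P J}"
  have pd: "proc_DG PS = (Pol 0, Outs)" unfolding PS proc_DG_def Outs_def by simp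
  have finO: "finite Outs"
  proof -
    have "Outs = (\<lambda>J. (restr P J ` P, restr P J ` S)) ` {J. SCC_prefix P J}" unfolding Outs_def by auto
    then show ?thesis using finite_SCC_prefixes[OF fin] by simp
  qed
  show "sound_output PS (proc_DG PS)"
    unfolding sound_output_def pd
  proof (intro allI impI conjI ballI)
    fix T :: "('f,'v) ptree" and v
    assume a: "wf_proof_tree T \<and> v \<in> pnodes T \<and> LA T v = PS"
    then have "iota (fst (LA T v)) (fst (LA T v) - snd (LA T v)) \<le> path_sum T v"
      unfolding wf_proof_tree_def by blast
    then have ps: "iota P (P - S) \<le> path_sum T v" using a PS by simp
    define X where "X = max (max (path_sum T v) (fst (Pol 0, Outs))) (cMax (iota_p ` snd (Pol 0, Outs)))"
    show "iota (fst PS) (snd PS) \<le> X"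
      unfolding PS fst_conv snd_conv
    proof (rule main_iota[OF w])
      show "iota P (P - S) \<le> X" unfolding X_def using ps
        by (meson max.cobounded1 order_trans)
      fix J assume J: "SCC_prefix P J"
      have "(restr P J ` P, restr P J ` S) \<in> Outs" unfolding Outs_def using J by blast
      then have "iota_p (restr P J ` P, restr P J ` S) \<le> cMax (iota_p ` Outs)"
        using finO by (intro cMax_ge) auto
      moreover have "iota_p (restr P J ` P, restr P J ` S) = iota (restr P J ` P) (restr P J ` S)"
        by (simp add: iota_p_def)
      ultimately have "iota (restr P J ` P) (restr P J ` S) \<le> cMax (iota_p ` Outs)" by simp
      then show "iota (restr P J ` P) (restr P J ` S) \<le> X" unfolding X_def snd_conv
        by (meson max.cobounded2 order_trans)
    next
    qed
  next
    fix T :: "('f,'v) ptree" and v Q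
    assume a: "wf_proof_tree T \<and> v \<in> pnodes T \<and> LA T v = PS" and Q: "Q \<in> snd (Pol 0, Outs)"
    then have "iota (fst (LA T v)) (fst (LA T v) - snd (LA T v)) \<le> path_sum T v"
      unfolding wf_proof_tree_def by blast
    then have ps: "iota P (P - S) \<le> path_sum T v" using a PS by simp
    obtain J where QJ: "Q = (restr P J ` P, restr P J ` S)" using Q unfolding Outs_def by auto
    have "iota (fst Q) (fst Q - snd Q) \<le> iota P (P - S)" unfolding QJ by (simp add: iota_restr_le[OF fin])
    then show "iota (fst Q) (fst Q - snd Q) \<le> max (path_sum T v) (fst (Pol 0, Outs))"
      using ps by (simp add: le_max_iff_disj) (metis order_trans)
  qed
qed



end
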